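(* Suppose $\mathcal R_1,\mathcal R_2\subset\mathcal G$ have Property 2. Then the seminorms $\|\cdot\|_{\mathcal R_1,0,0}$, $\|\cdot\|_{\mathcal R_2,0,0}$, $[\cdot]_{\mathcal R_1,0,0}$ and $[\cdot]_{\mathcal R_2,0,0}$ on $U_{\mathrm{per}}$ are equivalent, and their kernel is $U_{\mathrm{iso},0,0}\cap U_{\mathrm{per}}$.
   Context: Euclidean group: $\mathrm E(n)$ consists of pairs $(A|b)$, $A\in\mathrm O(n)$, $b\in\mathbb R^n$, acting by $(A|b)\cdot x=Ax+b$, product $(A_1|b_1)(A_2|b_2)=(A_1A_2|b_1+A_1b_2)$; $\mathrm{rot}(A|b)=A$. Standing setting: $d=d_1+d_2$; $\mathcal S<\mathrm E(d_2)$ is a space group with translation subgroup $\mathcal T_{\mathcal S}$; $A\oplus(B|b)=(\mathrm{diag}(A,B)|(0,b))$; $\mathcal G$ is a discrete subgroup of $\mathrm E(d)$ contained in $\{A\oplus s:A\in\mathrm O(d_1),s\in\mathcal S\}$ projecting onto $\mathcal S$; $\mathcal T\subset\mathcal G$ maps bijectively onto $\mathcal T_{\mathcal S}$. There is $m_0\in\mathbb N$ such that $\mathcal T^N=\{t^N:t\in\mathcal T\}$ is a normal subgroup iff $N\in\mathcal M=m_0\mathbb N$, then isomorphic to $\mathbb Z^{d_2}$ of finite index; $\mathcal C_N$ is a fixed set of representatives of $\mathcal G/\mathcal T^N$. $U_{\mathrm{per}}$: maps $u:\mathcal G\to\mathbb R^d$ that are $\mathcal T^N$-periodic for some $N\in\mathcal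 M$. $x_0\in\mathbb R^d$ with $g\mapsto g\cdot x_0$ injective; $d_{\mathrm{aff}}=\dim\mathrm{aff}(\mathcal G\cdot x_0)$; assumed $\mathcal G\cdot x_0\subset\{0_{d-d_{\mathrm{aff}}}\}\times\mathbb R^{d_{\mathrm{aff}}}$ and $\mathcal G$ acts trivially on $\mathbb R^{d-d_{\mathrm{aff}}}\times\{0\}$. For $\mathcal R\subset\mathcal G$, maps $v:\mathcal R\to\mathbb R^d$: $U_{\mathrm{trans}}(\mathcal R)$: $\exists a\in\mathbb R^d$, $\mathrm{rot}(g)v(g)=a$ on $\mathcal R$; $U_{\mathrm{rot},0,0}(\mathcal R)$: $\exists S\in\mathrm{Skew}(d_1)$ with $\mathrm{rot}(g)v(g)=(S\oplus0_{d_2\times d_2})(g\cdot x_0-x_0)$ on $\mathcal R$; $U_{\mathrm{iso},0,0}(\mathcal R)=U_{\mathrm{trans}}(\mathcal R)+U_{\mathrm{rot},0,0}(\mathcal R)$, and $U_{\mathrm{iso},0,0}:=U_{\mathrm{iso},0,0}(\mathcal G)$. Discrete derivative: $\nabla_{\mathcal R}u(g)(h)=u(gh)-\mathrm{rot}(h)^Tu(g)$. For finite $\mathcal R$ and $\mathcal T^N$-periodic $u$: $\|u\|_{\mathcal R,0,0}=\big(\frac1{|\mathcal C_N|}\sum_{g\in\mathcal C_N}\mathrm{dist}(u(g\,\cdot)|_{\mathcal R},U_{\mathrm{iso},0,0}(\mathcal R))^2\big)^{1/2}$ and $[u]_{\mathcal R,0,0}=\big(\frac1{|\mathcal C_N|}\sum_{g\in\mathcal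 C_N}\mathrm{dist}(\nabla_{\mathcal R}u(g),U_{\mathrm{rot},0,0}(\mathcal R))^2\big)^{1/2}$ (Euclidean distances in $(\mathbb R^d)^{\mathcal R}$). Property 1: $\mathcal R$ finite, $\mathrm{id}\in\mathcal R$, $\mathrm{aff}(\mathcal R\cdot x_0)=\mathrm{aff}(\mathcal G\cdot x_0)$. Property 2: $\mathcal R$ finite, and there are $\mathcal R',\mathcal R''$ with $\mathrm{id}\in\mathcal R'$, $\mathcal R'$ generating $\mathcal G$, $\mathcal R''$ with Property 1, and $\{gh:g\in\mathcal R',h\in\mathcal R''\}\subset\mathcal R$. *)

theory Defs
  imports Complex_Main "Jordan_Normal_Form.Matrix"
begin

text \<open>Vectors in R^n are JNF vectors of dimension n, matrices are JNF matrices.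
  An element (A|b) of E(n) is represented by the pair (A, b).\<close>

type_synonym euc = "real mat \<times> real vec"

definition orth_mat :: "nat \<Rightarrow> real mat set" where
  "orth_mat n = {A. A \<in> carrier_mat n n \<and> A * A\<^sup>T = 1\<^sub>m n}"

definition Euc :: "nat \<Rightarrow> euc set" where
  "Euc n = {(A, b). A \<in> orth_mat n \<and> b \<in> carrier_vec n}"

definition emult :: "euc \<Rightarrow> euc \<Rightarrow> euc" where
  "emult g h = (fst g * fst h, snd g + fst g *\<^sub>v snd h)"

definition eact :: "euc \<Rightarrow> real vec \<Rightarrow> real vec" where
  "eact g x = fst g *\<^sub>v x + snd g"

definition rot :: "euc \<Rightarrow> real mat" where
  "rot g = fst g"

definition eid :: "nat \<Rightarrow> euc" where
  "eid n = (1\<^sub>m n, 0\<^sub>v n)"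

definition einv :: "euc \<Rightarrow> euc" where
  "einv g = ((fst g)\<^sup>T, - ((fst g)\<^sup>T *\<^sub>v snd g))"

primrec epow :: "nat \<Rightarrow> euc \<Rightarrow> nat \<Rightarrow> euc" where
  "epow n g 0 = eid n"
| "epow n g (Suc k) = emult g (epow n g k)"

definition subgroup_E :: "nat \<Rightarrow> euc set \<Rightarrow> bool" where
  "subgroup_E n H \<longleftrightarrow> H \<subseteq> Euc n \<and> eid n \<in> H
     \<and> (\<forall>g\<in>H. \<forall>h\<in>H. emult g h \<in> H) \<and> (\<forall>g\<in>H. einv g \<in> H)"

definition normal_sub_E :: "nat \<Rightarrow> euc set \<Rightarrow> euc set \<Rightarrow> bool" where
  "normal_sub_E n H G \<longleftrightarrow> subgroup_E n H \<and> H \<subseteq> G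
     \<and> (\<forall>g\<in>G. \<forall>h\<in>H. emult (emult g h) (einv g) \<in> H)"

definition esqdist :: "nat \<Rightarrow> euc \<Rightarrow> euc \<Rightarrow> real" where
  "esqdist n g h = (\<Sum>i<n. \<Sum>j<n. (fst g $$ (i, j) - fst h $$ (i, j))\<^sup>2)
                   + (\<Sum>i<n. (snd g $ i - snd h $ i)\<^sup>2)"

text \<open>A subgroup is discrete iff the identity is isolated in it.\<close>
definition discrete_E :: "nat \<Rightarrow> euc set \<Rightarrow> bool" where
  "discrete_E n H \<longleftrightarrow> (\<exists>\<epsilon>>0. \<forall>g\<in>H. g \<noteq> eid n \<longrightarrow> esqdist n g (eid n) \<ge> \<epsilon>)"

inductive_set gen_E :: "nat \<Rightarrow> euc set \<Rightarrow> euc set" for n R where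
  gen_id: "eid n \<in> gen_E n R"
| gen_base: "g \<in> R \<Longrightarrow> g \<in> gen_E n R"
| gen_mult: "g \<in> gen_E n R \<Longrightarrow> h \<in> gen_E n R \<Longrightarrow> emult g h \<in> gen_E n R"
| gen_inv: "g \<in> gen_E n R \<Longrightarrow> einv g \<in> gen_E n R"

definition transl_sub :: "nat \<Rightarrow> euc set \<Rightarrow> euc set" where
  "transl_sub n S = {s \<in> S. fst s = 1\<^sub>m n}"

definition lin_indep_basis :: "nat \<Rightarrow> (nat \<Rightarrow> real vec) \<Rightarrow> bool" where
  "lin_indep_basis n V \<longleftrightarrow> (\<forall>i<n. V i \<in> carrier_vec n)
     \<and> (\<forall>c::nat \<Rightarrow> real. (\<forall>j<n. (\<Sum>i<n. c i * V i $ j) = 0) \<longrightarrow> (\<forall>i<n. c i = 0))"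

definition lattice_gen :: "nat \<Rightarrow> (nat \<Rightarrow> real vec) \<Rightarrow> real vec set" where
  "lattice_gen n V = {vec n (\<lambda>j. \<Sum>i<n. of_int (k i) * V i $ j) | k :: nat \<Rightarrow> int. True}"

definition space_group :: "nat \<Rightarrow> euc set \<Rightarrow> bool" where
  "space_group n S \<longleftrightarrow> subgroup_E n S \<and> discrete_E n S
     \<and> (\<exists>V. lin_indep_basis n V \<and> snd ` transl_sub n S = lattice_gen n V)"

definition osum :: "nat \<Rightarrow> nat \<Rightarrow> real mat \<Rightarrow> euc \<Rightarrow> euc" where
  "osum d1 d2 A s = (four_block_mat A (0\<^sub>m d1 d2) (0\<^sub>m d2 d1) (fst s), 0\<^sub>v d1 @\<^sub>v snd s)"

definition proj2 :: "nat \<Rightarrow> nat \<Rightarrow> euc \<Rightarrow> euc" where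
  "proj2 d1 d2 g = (mat d2 d2 (\<lambda>(i, j). fst g $$ (i + d1, j + d1)), vec d2 (\<lambda>i. snd g $ (i + d1)))"

definition Tpow :: "nat \<Rightarrow> euc set \<Rightarrow> nat \<Rightarrow> euc set" where
  "Tpow n T N = {epow n t N | t. t \<in> T}"

definition aff_hull :: "nat \<Rightarrow> real vec set \<Rightarrow> real vec set" where
  "aff_hull n X = {x \<in> carrier_vec n. \<exists>F c. finite F \<and> F \<subseteq> X \<and> sum c F = 1
      \<and> (\<forall>i<n. x $ i = (\<Sum>y\<in>F. c y * y $ i))}"

definition skew :: "nat \<Rightarrow> real mat set" where
  "skew n = {S. S \<in> carrier_mat n n \<and> S\<^sup>T = - S}"

definition sqn :: "real vec \<Rightarrow> real" where
  "sqn x = x \<bullet> x"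

definition U_trans :: "nat \<Rightarrow> euc set \<Rightarrow> (euc \<Rightarrow> real vec) set" where
  "U_trans d R = {v. (\<forall>g\<in>R. v g \<in> carrier_vec d)
      \<and> (\<exists>a \<in> carrier_vec d. \<forall>g\<in>R. rot g *\<^sub>v v g = a)}"

definition U_rot00 :: "nat \<Rightarrow> nat \<Rightarrow> real vec \<Rightarrow> euc set \<Rightarrow> (euc \<Rightarrow> real vec) set" where
  "U_rot00 d1 d2 x0 R = {v. (\<forall>g\<in>R. v g \<in> carrier_vec (d1 + d2))
      \<and> (\<exists>S \<in> skew d1. \<forall>g\<in>R. rot g *\<^sub>v v g =
           four_block_mat S (0\<^sub>m d1 d2) (0\<^sub>m d2 d1) (0\<^sub>m d2 d2) *\<^sub>v (eact g x0 - x0))}"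

definition U_iso00 :: "nat \<Rightarrow> nat \<Rightarrow> real vec \<Rightarrow> euc set \<Rightarrow> (euc \<Rightarrow> real vec) set" where
  "U_iso00 d1 d2 x0 R = {(\<lambda>g. v1 g + v2 g) | v1 v2.
      v1 \<in> U_trans (d1 + d2) R \<and> v2 \<in> U_rot00 d1 d2 x0 R}"

definition rdist :: "euc set \<Rightarrow> (euc \<Rightarrow> real vec) \<Rightarrow> (euc \<Rightarrow> real vec) set \<Rightarrow> real" where
  "rdist R w V = Inf ((\<lambda>v. sqrt (\<Sum>h\<in>R. sqn (w h - v h))) ` V)"

definition disc_grad :: "euc set \<Rightarrow> (euc \<Rightarrow> real vec) \<Rightarrow> euc \<Rightarrow> euc \<Rightarrow> real vec" where
  "disc_grad R u g h = u (emult g h) - (rot h)\<^sup>T *\<^sub>v u g"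

text \<open>The seminorms, computed with the set of representatives CN of G/T^N.\<close>
definition norm00 :: "nat \<Rightarrow> nat \<Rightarrow> real vec \<Rightarrow> euc set \<Rightarrow> euc set \<Rightarrow> (euc \<Rightarrow> real vec) \<Rightarrow> real" where
  "norm00 d1 d2 x0 R CN u = sqrt (1 / real (card CN) *
     (\<Sum>g\<in>CN. (rdist R (\<lambda>h. u (emult g h)) (U_iso00 d1 d2 x0 R))\<^sup>2))"

definition semi00 :: "nat \<Rightarrow> nat \<Rightarrow> real vec \<Rightarrow> euc set \<Rightarrow> euc set \<Rightarrow> (euc \<Rightarrow> real vec) \<Rightarrow> real" where
  "semi00 d1 d2 x0 R CN u = sqrt (1 / real (card CN) *
     (\<Sum>g\<in>CN. (rdist R (disc_grad R u g) (U_rot00 d1 d2 x0 R))\<^sup>2))"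

definition periodic :: "euc set \<Rightarrow> euc set \<Rightarrow> (euc \<Rightarrow> real vec) \<Rightarrow> bool" where
  "periodic G TN u \<longleftrightarrow> (\<forall>g\<in>G. \<forall>t\<in>TN. u (emult g t) = u g)"

definition property1 :: "nat \<Rightarrow> euc set \<Rightarrow> real vec \<Rightarrow> euc set \<Rightarrow> bool" where
  "property1 d G x0 R \<longleftrightarrow> finite R \<and> R \<subseteq> G \<and> eid d \<in> R
     \<and> aff_hull d ((\<lambda>g. eact g x0) ` R) = aff_hull d ((\<lambda>g. eact g x0) ` G)"

definition property2 :: "nat \<Rightarrow> euc set \<Rightarrow> real vec \<Rightarrow> euc set \<Rightarrow> bool" where
  "property2 d G x0 R \<longleftrightarrow> finite R \<and> R \<subseteq> G \<and>
     (\<exists>R' R''. eid d \<in> R' \<and> R' \<subseteq> G \<and> gen_E d R' = G \<and> property1 d G x0 R''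
        \<and> {emult g h | g h. g \<in> R' \<and> h \<in> R''} \<subseteq> R)"

end

theory Submission
  imports Defs "HOL-Analysis.L2_Norm" "Jordan_Normal_Form.Determinant"
begin


definition nv :: "real vec \<Rightarrow> real" where "nv x = sqrt (sqn x)"

lemma sqn_sum: "sqn x = (\<Sum>i<dim_vec x. (x$i)^2)"
  unfolding sqn_def scalar_prod_def by (simp add: power2_eq_square lessThan_atLeast0)

lemma nv_L2: "nv x = L2_set (\<lambda>i. x$i) {..<dim_vec x}"
  unfolding nv_def L2_set_def sqn_sum ..

lemma nv_nonneg[simp]: "0 \<le> nv x" unfolding nv_L2 by simp

lemma nv_add: assumes "dim_vec x = dim_vec y" shows "nv (x + y) \<le> nv x + nv y"
proof -
  have "nv (x + y) = L2_set (\<lambda>i. x$i + y$i) {..<dim_vec y}"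
    unfolding nv_L2 by (rule L2_set_cong) auto
  also have "\<dots> \<le> nv x + nv y" unfolding nv_L2 using assms L2_set_triangle_ineq by simp
  finally show ?thesis .
qed

lemma nv_uminus[simp]: "nv (- x) = nv x"
  unfolding nv_L2 by (simp add: L2_set_def power2_eq_square)

lemma nv_diff: assumes "dim_vec x = dim_vec y" shows "nv (x - y) \<le> nv x + nv y"
proof -
  have "nv (x - y) = L2_set (\<lambda>i. x$i + (- y)$i) {..<dim_vec y}"
    unfolding nv_L2 by (rule L2_set_cong) auto
  also have "\<dots> \<le> nv x + nv (- y)" unfolding nv_L2 using assms L2_set_triangle_ineq by simp
  finally show ?thesis by simp
qed

lemma L2_set_abs: "L2_set f A = L2_set (\<lambda>i. \<bar>f i\<bar>) A"
  unfolding L2_set_def by simp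

lemma L2_set_scale: "L2_set (\<lambda>i. c * f i) A = \<bar>c\<bar> * L2_set f A"
proof -
  have "L2_set (\<lambda>i. c * f i) A = L2_set (\<lambda>i. \<bar>c\<bar> * \<bar>f i\<bar>) A"
    by (subst L2_set_abs) (simp add: abs_mult)
  also have "\<dots> = \<bar>c\<bar> * L2_set (\<lambda>i. \<bar>f i\<bar>) A" by (simp add: L2_set_right_distrib)
  finally show ?thesis by (simp flip: L2_set_abs)
qed

lemma nv_coord: assumes "i < dim_vec x" shows "\<bar>x$i\<bar> \<le> nv x"
proof -
  have "\<bar>x$i\<bar> \<le> L2_set (\<lambda>i. \<bar>x$i\<bar>) {..<dim_vec x}"
    by (rule member_le_L2_set) (use assms in auto)
  then show ?thesis unfolding nv_L2 by (simp flip: L2_set_abs)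
qed

lemma nv_zero[simp]: "nv (0\<^sub>v n) = 0"
  unfolding nv_L2 by (simp add: L2_set_0')

lemma nv_eq_0: assumes "nv x = 0" shows "x = 0\<^sub>v (dim_vec x)"
proof -
  have "\<forall>i\<in>{..<dim_vec x}. x$i = 0" using assms unfolding nv_L2 by (simp add: L2_set_eq_0_iff)
  then show ?thesis by (intro eq_vecI) auto
qed

lemma L2_set_sum_le: "finite Y \<Longrightarrow> L2_set (\<lambda>i. \<Sum>y\<in>Y. f y i) A \<le> (\<Sum>y\<in>Y. L2_set (f y) A)"
proof (induction Y rule: finite_induct)
  case empty then show ?case by (simp add: L2_set_0')
next
  case (insert y Y)
  have "L2_set (\<lambda>i. \<Sum>y\<in>insert y Y. f y i) A = L2_set (\<lambda>i. f y i + (\<Sum>y\<in>Y. f y i)) A"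
    using insert by simp
  also have "\<dots> \<le> L2_set (f y) A + L2_set (\<lambda>i. \<Sum>y\<in>Y. f y i) A" by (rule L2_set_triangle_ineq)
  also have "\<dots> \<le> L2_set (f y) A + (\<Sum>y\<in>Y. L2_set (f y) A)" using insert by simp
  finally show ?case using insert by simp
qed

lemma orth_D: assumes "A \<in> orth_mat n"
  shows "A \<in> carrier_mat n n" "A * A\<^sup>T = 1\<^sub>m n" "A\<^sup>T * A = 1\<^sub>m n"
proof -
  show A: "A \<in> carrier_mat n n" and 1: "A * A\<^sup>T = 1\<^sub>m n" using assms unfolding orth_mat_def by auto
  show "A\<^sup>T * A = 1\<^sub>m n" using mat_mult_left_right_inverse[OF A _ 1] A by auto
qed

lemma nv_orth: assumes A: "A \<in> carrier_mat n n" and AA: "A\<^sup>T * A = 1\<^sub>m n" and x: "x \<in> carrier_vec n"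
  shows "nv (A *\<^sub>v x) = nv x"
proof -
  have "sqn (A *\<^sub>v x) = (A *\<^sub>v x) \<bullet> (A *\<^sub>v x)" unfolding sqn_def ..
  also have "\<dots> = (A\<^sup>T *\<^sub>v (A *\<^sub>v x)) \<bullet> x"
    using transpose_vec_mult_scalar[OF A x, of "A *\<^sub>v x"] A x by auto
  also have "A\<^sup>T *\<^sub>v (A *\<^sub>v x) = x" using A x AA
    by (metis assoc_mult_mat_vec carrier_matI index_transpose_mat(2,3) carrier_matD one_mult_mat_vec)
  finally show ?thesis unfolding nv_def sqn_def by simp
qed

lemma orth_transpose: assumes "A \<in> orth_mat n" shows "A\<^sup>T \<in> orth_mat n"
  using orth_D[OF assms] unfolding orth_mat_def by auto




lemma Euc_D: assumes "g \<in> Euc n"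
  shows "fst g \<in> carrier_mat n n" "snd g \<in> carrier_vec n" "fst g * (fst g)\<^sup>T = 1\<^sub>m n"
    "(fst g)\<^sup>T * fst g = 1\<^sub>m n" "fst g \<in> orth_mat n"
  using assms orth_D[of "fst g" n] unfolding Euc_def by auto

lemma rot_carrier: "g \<in> Euc n \<Longrightarrow> rot g \<in> carrier_mat n n"
  unfolding rot_def by (rule Euc_D(1))

lemma orth_mult: assumes "A \<in> orth_mat n" "B \<in> orth_mat n" shows "A * B \<in> orth_mat n"
proof -
  have A: "A \<in> carrier_mat n n" "A * A\<^sup>T = 1\<^sub>m n" and B: "B \<in> carrier_mat n n" "B * B\<^sup>T = 1\<^sub>m n"
    using orth_D[OF assms(1)] orth_D[OF assms(2)] by auto
  have At: "A\<^sup>T \<in> carrier_mat n n" and Bt: "B\<^sup>T \<in> carrier_mat n n" using A B by auto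
  have "(A * B) * (A * B)\<^sup>T = (A * B) * (B\<^sup>T * A\<^sup>T)"
    using A B by (simp add: transpose_mult)
  also have "\<dots> = A * ((B * B\<^sup>T) * A\<^sup>T)"
    using A(1) B(1) At Bt by (simp add: assoc_mult_mat[of _ n n _ n _ n])
  also have "\<dots> = 1\<^sub>m n" using A B At by simp
  finally show ?thesis using A B unfolding orth_mat_def by auto
qed

lemma emult_Euc: assumes "g \<in> Euc n" "h \<in> Euc n" shows "emult g h \<in> Euc n"
proof -
  have "fst g * fst h \<in> orth_mat n" using orth_mult[OF Euc_D(5)[OF assms(1)] Euc_D(5)[OF assms(2)]] .
  moreover have "snd g + fst g *\<^sub>v snd h \<in> carrier_vec n" using Euc_D[OF assms(1)] Euc_D[OF assms(2)] by simp
  ultimately show ?thesis unfolding Euc_def emult_def by simp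
qed

lemma eid_Euc: "eid n \<in> Euc n"
  unfolding Euc_def eid_def orth_mat_def by auto

lemma einv_Euc: assumes "g \<in> Euc n" shows "einv g \<in> Euc n"
proof -
  have "(fst g)\<^sup>T \<in> orth_mat n" by (rule orth_transpose[OF Euc_D(5)[OF assms]])
  moreover have "- ((fst g)\<^sup>T *\<^sub>v snd g) \<in> carrier_vec n" using Euc_D(1,2)[OF assms] by simp
  ultimately show ?thesis unfolding Euc_def einv_def by simp
qed

lemma mult_vec_uminus: assumes "(A::real mat) \<in> carrier_mat nr nc" "v \<in> carrier_vec nc"
  shows "A *\<^sub>v (- v) = - (A *\<^sub>v v)"
proof (intro eq_vecI)
  fix i assume "i < dim_vec (- (A *\<^sub>v v))"
  then have i: "i < nr" using assms by auto
  have "dim_vec (row A i) = dim_vec v" using assms by auto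
  then show "(A *\<^sub>v - v) $ i = (- (A *\<^sub>v v)) $ i" using i assms by auto
qed (use assms in auto)

lemma mat_cancel: assumes "(A::real mat) \<in> carrier_mat n n" "B \<in> carrier_mat n n" "A * B = 1\<^sub>m n" "x \<in> carrier_vec n"
  shows "A *\<^sub>v (B *\<^sub>v x) = x"
proof -
  have "A *\<^sub>v (B *\<^sub>v x) = (A * B) *\<^sub>v x" by (rule assoc_mult_mat_vec[symmetric]) (use assms in auto)
  also have "\<dots> = 1\<^sub>m n *\<^sub>v x" by (simp only: assms(3))
  also have "\<dots> = x" using assms(4) by simp
  finally show ?thesis .
qed

lemma emult_assoc: assumes "a \<in> Euc n" "b \<in> Euc n" "c \<in> Euc n"
  shows "emult (emult a b) c = emult a (emult b c)"
proof -
  obtain A x where a: "a = (A, x)" by force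
  obtain B y where b: "b = (B, y)" by force
  obtain C z where c: "c = (C, z)" by force
  have d: "A \<in> carrier_mat n n" "B \<in> carrier_mat n n" "C \<in> carrier_mat n n"
    "x \<in> carrier_vec n" "y \<in> carrier_vec n" "z \<in> carrier_vec n"
    using Euc_D assms a b c by fastforce+
  have "A * B * C = A * (B * C)" using d by simp
  moreover have "x + A *\<^sub>v y + (A * B) *\<^sub>v z = x + A *\<^sub>v (y + B *\<^sub>v z)"
    using d by (simp add: mult_add_distrib_mat_vec)
  ultimately show ?thesis unfolding a b c emult_def by simp
qed

lemma eid_left[simp]: assumes "g \<in> Euc n" shows "emult (eid n) g = g"
  using Euc_D[OF assms] unfolding emult_def eid_def by (cases g) auto

lemma eid_right[simp]: assumes "g \<in> Euc n" shows "emult g (eid n) = g"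
  using Euc_D[OF assms] unfolding emult_def eid_def by (cases g) auto

lemma einv_right: assumes "g \<in> Euc n" shows "emult g (einv g) = eid n"
proof -
  obtain A x where a: "g = (A, x)" by force
  have d: "A \<in> carrier_mat n n" "x \<in> carrier_vec n" "A * A\<^sup>T = 1\<^sub>m n"
    using Euc_D assms a by fastforce+
  have At: "A\<^sup>T \<in> carrier_mat n n" using d by simp
  have "A *\<^sub>v (- (A\<^sup>T *\<^sub>v x)) = - (A *\<^sub>v (A\<^sup>T *\<^sub>v x))"
    using d At by (intro mult_vec_uminus) auto
  also have "A *\<^sub>v (A\<^sup>T *\<^sub>v x) = x" using d At by (intro mat_cancel) auto
  finally have "A *\<^sub>v (- (A\<^sup>T *\<^sub>v x)) = - x" .
  then show ?thesis unfolding a emult_def einv_def eid_def using d by simp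
qed

lemma einv_left: assumes "g \<in> Euc n" shows "emult (einv g) g = eid n"
proof -
  obtain A x where a: "g = (A, x)" by force
  have d: "A \<in> carrier_mat n n" "x \<in> carrier_vec n" "A\<^sup>T * A = 1\<^sub>m n"
    using Euc_D assms a by fastforce+
  have "- (A\<^sup>T *\<^sub>v x) + A\<^sup>T *\<^sub>v x = 0\<^sub>v n" using d by (intro uminus_l_inv_vec) auto
  then show ?thesis unfolding a emult_def einv_def eid_def using d by simp
qed

lemma einv_einv: assumes "g \<in> Euc n" shows "einv (einv g) = g"
proof -
  obtain A x where a: "g = (A, x)" by force
  have d: "A \<in> carrier_mat n n" "x \<in> carrier_vec n" "A * A\<^sup>T = 1\<^sub>m n"
    using Euc_D assms a by fastforce+
  have At: "A\<^sup>T \<in> carrier_mat n n" using d by simp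
  have "A *\<^sub>v (- (A\<^sup>T *\<^sub>v x)) = - (A *\<^sub>v (A\<^sup>T *\<^sub>v x))"
    using d At by (intro mult_vec_uminus) auto
  also have "A *\<^sub>v (A\<^sup>T *\<^sub>v x) = x" using d At by (intro mat_cancel) auto
  finally have "A *\<^sub>v (- (A\<^sup>T *\<^sub>v x)) = - x" .
  then show ?thesis unfolding a einv_def using d by simp
qed

lemma rot_emult: "rot (emult g h) = rot g * rot h" unfolding rot_def emult_def by simp
lemma rot_einv: "rot (einv g) = (rot g)\<^sup>T" unfolding rot_def einv_def by simp
lemma rot_eid: "rot (eid n) = 1\<^sub>m n" unfolding rot_def eid_def by simp

lemma eact_carrier: "g \<in> Euc n \<Longrightarrow> x \<in> carrier_vec n \<Longrightarrow> eact g x \<in> carrier_vec n"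
  unfolding eact_def using Euc_D(1,2)[of g n] by simp

lemma eact_diff: assumes "g \<in> Euc n" "x \<in> carrier_vec n" "y \<in> carrier_vec n"
  shows "eact g y - eact g x = rot g *\<^sub>v (y - x)"
proof -
  have d: "fst g \<in> carrier_mat n n" "snd g \<in> carrier_vec n" using Euc_D assms by auto
  have e: "fst g *\<^sub>v (y - x) = fst g *\<^sub>v y - fst g *\<^sub>v x"
    using d assms by (intro mult_minus_distrib_mat_vec) auto
  have c: "fst g *\<^sub>v y \<in> carrier_vec n" "fst g *\<^sub>v x \<in> carrier_vec n" using d assms by auto
  show ?thesis unfolding eact_def rot_def e using c d
    by (intro eq_vecI) auto
qed

lemma eact_emult: assumes "g \<in> Euc n" "h \<in> Euc n" "x \<in> carrier_vec n"
  shows "eact (emult g h) x = eact g (eact h x)"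
proof -
  have d: "fst g \<in> carrier_mat n n" "snd g \<in> carrier_vec n" "fst h \<in> carrier_mat n n" "snd h \<in> carrier_vec n"
    using Euc_D assms by auto
  have e1: "(fst g * fst h) *\<^sub>v x = fst g *\<^sub>v (fst h *\<^sub>v x)" using d assms by simp
  have e2: "fst g *\<^sub>v (fst h *\<^sub>v x + snd h) = fst g *\<^sub>v (fst h *\<^sub>v x) + fst g *\<^sub>v snd h"
    using d assms by (intro mult_add_distrib_mat_vec) auto
  have c: "fst g *\<^sub>v (fst h *\<^sub>v x) \<in> carrier_vec n" "fst g *\<^sub>v snd h \<in> carrier_vec n" using d assms by auto
  show ?thesis unfolding eact_def emult_def fst_conv snd_conv e1 e2 using c d
    by (intro eq_vecI) auto
qed

lemma eact_eid: "x \<in> carrier_vec n \<Longrightarrow> eact (eid n) x = x"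
  unfolding eact_def eid_def by simp




locale setting =
  fixes d1 d2 d daff m0 :: nat and S G T :: "euc set" and x0 :: "real vec"
    and C :: "nat \<Rightarrow> euc set"
  assumes d_def: "d = d1 + d2"
    and S_sg: "space_group d2 S"
    and G_sub: "subgroup_E d G"
    and G_form: "G \<subseteq> {osum d1 d2 A s | A s. A \<in> orth_mat d1 \<and> s \<in> S}"
    and M_char: "\<forall>N\<ge>1. normal_sub_E d (Tpow d T N) G \<longleftrightarrow> m0 dvd N"
    and C_rep: "\<forall>N\<ge>1. m0 dvd N \<longrightarrow> C N \<subseteq> G \<and> finite (C N)
                  \<and> (\<forall>g\<in>G. \<exists>!c\<in>C N. \<exists>t\<in>Tpow d T N. g = emult c t)"
    and x0_dim: "x0 \<in> carrier_vec d"
    and x0_inj: "inj_on (\<lambda>g. eact g x0) G"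
    and daff_le: "daff \<le> d"
    and aff_coord: "aff_hull d ((\<lambda>g. eact g x0) ` G) = {x \<in> carrier_vec d. \<forall>i < d - daff. x $ i = 0}"
    and triv_act: "\<forall>g\<in>G. \<forall>x\<in>carrier_vec d. (\<forall>i. d - daff \<le> i \<and> i < d \<longrightarrow> x $ i = 0)
                      \<longrightarrow> rot g *\<^sub>v x = x"
begin

definition DD :: "real vec set" where "DD = {z \<in> carrier_vec d. \<forall>i < d - daff. z$i = 0}"

definition pt :: "euc \<Rightarrow> real vec" where "pt g = eact g x0"

lemma G_Euc: "g \<in> G \<Longrightarrow> g \<in> Euc d" using G_sub unfolding subgroup_E_def by auto
lemma eid_G[simp]: "eid d \<in> G" using G_sub unfolding subgroup_E_def by auto
lemma emult_G[simp]: "g \<in> G \<Longrightarrow> h \<in> G \<Longrightarrow> emult g h \<in> G" using G_sub unfolding subgroup_E_def by auto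
lemma einv_G[simp]: "g \<in> G \<Longrightarrow> einv g \<in> G" using G_sub unfolding subgroup_E_def by auto

lemma rotG: assumes "g \<in> G"
  shows "rot g \<in> carrier_mat d d" "rot g * (rot g)\<^sup>T = 1\<^sub>m d" "(rot g)\<^sup>T * rot g = 1\<^sub>m d"
    "(rot g)\<^sup>T \<in> carrier_mat d d"
  using Euc_D[OF G_Euc[OF assms]] unfolding rot_def by auto

lemma assocG: "a \<in> G \<Longrightarrow> b \<in> G \<Longrightarrow> c \<in> G \<Longrightarrow> emult (emult a b) c = emult a (emult b c)"
  using emult_assoc G_Euc by blast
lemma eid_leftG[simp]: "g \<in> G \<Longrightarrow> emult (eid d) g = g" using G_Euc by simp
lemma eid_rightG[simp]: "g \<in> G \<Longrightarrow> emult g (eid d) = g" using G_Euc by simp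
lemma einv_rightG[simp]: "g \<in> G \<Longrightarrow> emult g (einv g) = eid d" using G_Euc einv_right by blast
lemma einv_leftG[simp]: "g \<in> G \<Longrightarrow> emult (einv g) g = eid d" using G_Euc einv_left by blast
lemma einv_einvG[simp]: "g \<in> G \<Longrightarrow> einv (einv g) = g" using G_Euc einv_einv by blast

lemma pt_carrier: "g \<in> G \<Longrightarrow> pt g \<in> carrier_vec d"
  unfolding pt_def using eact_carrier G_Euc x0_dim by blast

lemma pt_eid[simp]: "pt (eid d) = x0" unfolding pt_def using eact_eid x0_dim by blast

lemma aff_hull_member: assumes "x \<in> X" "x \<in> carrier_vec n" shows "x \<in> aff_hull n X"
  unfolding aff_hull_def using assms by (auto intro!: exI[of _ "{x}"] exI[of _ "\<lambda>_. 1"])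

lemma pt_DD: assumes "g \<in> G" shows "pt g \<in> DD"
proof -
  have "pt g \<in> aff_hull d ((\<lambda>g. eact g x0) ` G)"
    using assms pt_carrier by (intro aff_hull_member) (auto simp: pt_def)
  then show ?thesis unfolding aff_coord DD_def .
qed

lemma x0_DD: "x0 \<in> DD" using pt_DD[of "eid d"] by simp

lemma DD_carrier: "z \<in> DD \<Longrightarrow> z \<in> carrier_vec d" unfolding DD_def by auto

lemma DD_minus: "z \<in> DD \<Longrightarrow> w \<in> DD \<Longrightarrow> z - w \<in> DD" unfolding DD_def by auto
lemma DD_add: "z \<in> DD \<Longrightarrow> w \<in> DD \<Longrightarrow> z + w \<in> DD" unfolding DD_def by auto
lemma DD_uminus: "z \<in> DD \<Longrightarrow> - z \<in> DD" unfolding DD_def by auto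

lemma pt_diff_DD: "g \<in> G \<Longrightarrow> h \<in> G \<Longrightarrow> pt g - pt h \<in> DD"
  using DD_minus pt_DD by blast

lemma rot_col: assumes g: "g \<in> G" and i: "i < d - daff"
  shows "col (rot g) i = unit_vec d i"
proof -
  have "rot g *\<^sub>v unit_vec d i = unit_vec d i"
    using triv_act g i by auto
  moreover have "rot g *\<^sub>v unit_vec d i = col (rot g) i"
    using rotG[OF g] i by (intro eq_vecI) (auto simp: col_def)
  ultimately show ?thesis by simp
qed

lemma rotT_DD: assumes g: "g \<in> G" and z: "z \<in> DD" shows "(rot g)\<^sup>T *\<^sub>v z \<in> DD"
proof -
  have zc: "z \<in> carrier_vec d" using z DD_carrier by auto
  have "((rot g)\<^sup>T *\<^sub>v z) $ i = 0" if i: "i < d - daff" for i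
  proof -
    have "((rot g)\<^sup>T *\<^sub>v z) $ i = row ((rot g)\<^sup>T) i \<bullet> z" using rotG[OF g] i by auto
    also have "row ((rot g)\<^sup>T) i = col (rot g) i" using rotG[OF g] i by auto
    also have "\<dots> = unit_vec d i" using rot_col[OF g i] .
    also have "unit_vec d i \<bullet> z = z $ i" using zc i by auto
    finally show ?thesis using z i unfolding DD_def by auto
  qed
  then show ?thesis unfolding DD_def using rotG[OF g] zc by auto
qed

lemma rot_DD: assumes g: "g \<in> G" and z: "z \<in> DD" shows "rot g *\<^sub>v z \<in> DD"
  using rotT_DD[OF einv_G[OF g] z] unfolding rot_einv by simp

lemma rot_nv: "g \<in> G \<Longrightarrow> x \<in> carrier_vec d \<Longrightarrow> nv (rot g *\<^sub>v x) = nv x"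
  using nv_orth rotG by blast

lemma rotT_nv: assumes "g \<in> G" "x \<in> carrier_vec d" shows "nv ((rot g)\<^sup>T *\<^sub>v x) = nv x"
  using nv_orth[of "(rot g)\<^sup>T" d x] rotG[OF assms(1)] assms(2) by simp

lemma pt_emult: assumes "g \<in> G" "h \<in> G" shows "pt (emult g h) - pt g = rot g *\<^sub>v (pt h - x0)"
proof -
  have "pt (emult g h) = eact g (pt h)" unfolding pt_def using eact_emult G_Euc assms x0_dim by blast
  then show ?thesis using eact_diff[OF G_Euc[OF assms(1)] x0_dim pt_carrier[OF assms(2)]]
    unfolding pt_def by (simp add: eact_eid)
qed

end



lemma mv_expand: assumes "(L::real mat) \<in> carrier_mat n n" "v \<in> carrier_vec n" "i < n"
  shows "(L *\<^sub>v v) $ i = (\<Sum>l<n. L $$ (i, l) * v $ l)"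
  using assms by (auto simp: scalar_prod_def lessThan_atLeast0)

lemma lin_comb:
  assumes L: "(L::real mat) \<in> carrier_mat n n" and z: "z \<in> carrier_vec n"
    and w: "\<And>r. r \<in> R \<Longrightarrow> w r \<in> carrier_vec n"
    and zc: "\<And>i. i < n \<Longrightarrow> z $ i = (\<Sum>r\<in>R. c r * w r $ i)" and i: "i < n"
  shows "(L *\<^sub>v z) $ i = (\<Sum>r\<in>R. c r * (L *\<^sub>v w r) $ i)"
proof -
  have "(L *\<^sub>v z) $ i = (\<Sum>l<n. L $$ (i, l) * z $ l)" by (rule mv_expand[OF L z i])
  also have "\<dots> = (\<Sum>l<n. \<Sum>r\<in>R. c r * (L $$ (i, l) * w r $ l))"
    by (intro sum.cong refl) (simp add: zc sum_distrib_left mult.left_commute)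
  also have "\<dots> = (\<Sum>r\<in>R. c r * (\<Sum>l<n. L $$ (i, l) * w r $ l))"
    by (subst sum.swap) (simp add: sum_distrib_left)
  also have "\<dots> = (\<Sum>r\<in>R. c r * (L *\<^sub>v w r) $ i)"
    by (intro sum.cong refl) (simp add: mv_expand[OF L w i])
  finally show ?thesis .
qed

lemma nv_lin_comb:
  assumes fin: "finite R" and L: "(L::real mat) \<in> carrier_mat n n" and z: "z \<in> carrier_vec n"
    and w: "\<And>r. r \<in> R \<Longrightarrow> w r \<in> carrier_vec n"
    and zc: "\<And>i. i < n \<Longrightarrow> z $ i = (\<Sum>r\<in>R. c r * w r $ i)"
  shows "nv (L *\<^sub>v z) \<le> (\<Sum>r\<in>R. \<bar>c r\<bar> * nv (L *\<^sub>v w r))"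
proof -
  have e: "(L *\<^sub>v z) $ i = (\<Sum>r\<in>R. c r * (L *\<^sub>v w r) $ i)" if "i \<in> {..<n}" for i
    by (rule lin_comb[OF L z w zc]) (use that in auto)
  have dz: "dim_vec (L *\<^sub>v z) = n" using L by simp
  have "nv (L *\<^sub>v z) = L2_set (\<lambda>i. \<Sum>r\<in>R. c r * (L *\<^sub>v w r) $ i) {..<n}"
    unfolding nv_L2 dz using e by (rule L2_set_cong[OF refl])
  also have "\<dots> \<le> (\<Sum>r\<in>R. L2_set (\<lambda>i. c r * (L *\<^sub>v w r) $ i) {..<n})"
    by (rule L2_set_sum_le[OF fin])
  also have "\<dots> = (\<Sum>r\<in>R. \<bar>c r\<bar> * nv (L *\<^sub>v w r))"
    unfolding nv_L2 L2_set_scale using L by (intro sum.cong refl) auto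
  finally show ?thesis .
qed

context setting begin

definition spanprop :: "euc set \<Rightarrow> real \<Rightarrow> bool" where
  "spanprop R \<Lambda> \<longleftrightarrow> 0 \<le> \<Lambda> \<and> (\<forall>z\<in>DD. \<exists>c. (\<forall>i<d. z $ i = (\<Sum>r\<in>R. c r * (pt r - x0) $ i))
      \<and> (\<Sum>r\<in>R. \<bar>c r\<bar>) \<le> \<Lambda> * nv z)"

lemma pt_inj: "inj_on pt G" using x0_inj unfolding pt_def[abs_def] .

lemma sum_pt:
  assumes R: "R \<subseteq> G" "finite R" and F: "F \<subseteq> pt ` R"
  shows "(\<Sum>r\<in>R. if pt r \<in> F then \<phi> (pt r) else 0) = (\<Sum>y\<in>F. \<phi> y)"
proof -
  have "(\<Sum>r\<in>R. if pt r \<in> F then \<phi> (pt r) else 0) = (\<Sum>r\<in>{r\<in>R. pt r \<in> F}. \<phi> (pt r))"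
    using R by (simp add: sum.inter_filter)
  also have "\<dots> = (\<Sum>y\<in>pt ` {r\<in>R. pt r \<in> F}. \<phi> y)"
  proof (rule sum.reindex[symmetric, unfolded comp_def])
    show "inj_on pt {r \<in> R. pt r \<in> F}"
      by (rule inj_on_subset[OF pt_inj]) (use R in auto)
  qed
  also have "pt ` {r\<in>R. pt r \<in> F} = F" using F by auto
  finally show ?thesis .
qed

lemma unit_comb:
  assumes P1: "property1 d G x0 R" and j: "d - daff \<le> j" "j < d"
  shows "\<exists>c. \<forall>i<d. unit_vec d j $ i = (\<Sum>r\<in>R. c r * (pt r - x0) $ i)"
proof -
  have R: "finite R" "R \<subseteq> G" and aff: "aff_hull d (pt ` R) = DD"
    using P1 unfolding property1_def pt_def[abs_def] DD_def aff_coord[symmetric] by auto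
  have "x0 + unit_vec d j \<in> DD" using x0_DD j unfolding DD_def by auto
  then have "x0 + unit_vec d j \<in> aff_hull d (pt ` R)" using aff by simp
  then obtain F c where F: "finite F" "F \<subseteq> pt ` R" "sum c F = 1"
    and comb: "\<forall>i<d. (x0 + unit_vec d j) $ i = (\<Sum>y\<in>F. c y * y $ i)"
    unfolding aff_hull_def by blast
  define c' where "c' r = (if pt r \<in> F then c (pt r) else 0)" for r
  have s1: "(\<Sum>r\<in>R. c' r) = 1"
    using sum_pt[OF R(2,1) F(2), of c] F(3) unfolding c'_def by simp
  have ptc: "r \<in> R \<Longrightarrow> pt r \<in> carrier_vec d" for r using R(2) pt_carrier by blast
  have "unit_vec d j $ i = (\<Sum>r\<in>R. c' r * (pt r - x0) $ i)" if i: "i < d" for i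
  proof -
    have "(\<Sum>r\<in>R. c' r * (pt r - x0) $ i) = (\<Sum>r\<in>R. c' r * pt r $ i) - (\<Sum>r\<in>R. c' r) * x0 $ i"
      using ptc x0_dim i by (auto simp: sum_subtractf sum_distrib_right algebra_simps intro!: sum.cong)
    also have "(\<Sum>r\<in>R. c' r * pt r $ i) = (\<Sum>r\<in>R. if pt r \<in> F then c (pt r) * pt r $ i else 0)"
      unfolding c'_def by (intro sum.cong refl) simp
    also have "\<dots> = (\<Sum>y\<in>F. c y * y $ i)"
      by (rule sum_pt[OF R(2,1) F(2), of "\<lambda>y. c y * y $ i"])
    also have "\<dots> = x0 $ i + unit_vec d j $ i" using comb i x0_dim by auto
    finally show ?thesis using s1 by simp
  qed
  then show ?thesis by blast
qed

lemma spanprop_exists: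
  assumes P1: "property1 d G x0 R" shows "\<exists>\<Lambda>. spanprop R \<Lambda>"
proof -
  have R: "finite R" "R \<subseteq> G" using P1 unfolding property1_def by auto
  define K where "K = {d - daff..<d}"
  define cc where "cc j = (SOME c. \<forall>i<d. unit_vec d j $ i = (\<Sum>r\<in>R. c r * (pt r - x0) $ i))" for j
  have cc: "\<forall>i<d. unit_vec d j $ i = (\<Sum>r\<in>R. cc j r * (pt r - x0) $ i)" if "j \<in> K" for j
    unfolding cc_def by (rule someI_ex[OF unit_comb[OF P1]]) (use that K_def in auto)
  define \<Lambda> where "\<Lambda> = (\<Sum>r\<in>R. \<Sum>j\<in>K. \<bar>cc j r\<bar>)"
  have "\<exists>c. (\<forall>i<d. z $ i = (\<Sum>r\<in>R. c r * (pt r - x0) $ i)) \<and> (\<Sum>r\<in>R. \<bar>c r\<bar>) \<le> \<Lambda> * nv z"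
    if z: "z \<in> DD" for z
  proof (intro exI conjI allI impI)
    define c where "c r = (\<Sum>j\<in>K. z $ j * cc j r)" for r
    show "z $ i = (\<Sum>r\<in>R. (\<Sum>j\<in>K. z $ j * cc j r) * (pt r - x0) $ i)" if i: "i < d" for i
    proof -
      have "z $ i = (\<Sum>j\<in>K. z $ j * unit_vec d j $ i)"
      proof (cases "i \<in> K")
        case True
        then show ?thesis using i by (simp add: K_def if_distrib cong: if_cong)
      next
        case False
        then have "z $ i = 0" using z i unfolding DD_def K_def by auto
        moreover have "(\<Sum>j\<in>K. z $ j * unit_vec d j $ i) = 0"
          using False i K_def by (intro sum.neutral) auto
        ultimately show ?thesis by simp
      qed
      also have "\<dots> = (\<Sum>j\<in>K. z $ j * (\<Sum>r\<in>R. cc j r * (pt r - x0) $ i))"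
        using cc i by (intro sum.cong refl) auto
      also have "\<dots> = (\<Sum>r\<in>R. (\<Sum>j\<in>K. z $ j * cc j r) * (pt r - x0) $ i)"
        by (simp add: sum_distrib_left sum_distrib_right ac_simps sum.swap[of _ K])
      finally show ?thesis .
    qed
    have zj: "\<bar>z $ j\<bar> \<le> nv z" if "j \<in> K" for j
      using nv_coord[of j z] that z unfolding K_def DD_def by auto
    have "(\<Sum>r\<in>R. \<bar>\<Sum>j\<in>K. z $ j * cc j r\<bar>) \<le> (\<Sum>r\<in>R. \<Sum>j\<in>K. nv z * \<bar>cc j r\<bar>)"
    proof (intro sum_mono)
      fix r
      have "\<bar>\<Sum>j\<in>K. z $ j * cc j r\<bar> \<le> (\<Sum>j\<in>K. \<bar>z $ j * cc j r\<bar>)" by (rule sum_abs)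
      also have "\<dots> \<le> (\<Sum>j\<in>K. nv z * \<bar>cc j r\<bar>)"
        using zj by (intro sum_mono) (auto simp: abs_mult intro: mult_right_mono)
      finally show "\<bar>\<Sum>j\<in>K. z $ j * cc j r\<bar> \<le> (\<Sum>j\<in>K. nv z * \<bar>cc j r\<bar>)" .
    qed
    also have "\<dots> = \<Lambda> * nv z" unfolding \<Lambda>_def by (simp add: sum_distrib_left sum_distrib_right ac_simps)
    finally show "(\<Sum>r\<in>R. \<bar>\<Sum>j\<in>K. z $ j * cc j r\<bar>) \<le> \<Lambda> * nv z" .
  qed
  moreover have "0 \<le> \<Lambda>" unfolding \<Lambda>_def by (auto intro: sum_nonneg)
  ultimately show ?thesis unfolding spanprop_def by blast
qed

lemma Dbound:
  assumes sp: "spanprop R \<Lambda>" and R: "finite R" "R \<subseteq> G" and L: "L \<in> carrier_mat d d"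
    and b: "\<And>r. r \<in> R \<Longrightarrow> nv (L *\<^sub>v (pt r - x0)) \<le> \<beta>" and \<beta>: "0 \<le> \<beta>"
    and z: "z \<in> DD"
  shows "nv (L *\<^sub>v z) \<le> \<Lambda> * \<beta> * nv z"
proof -
  obtain c where c: "\<forall>i<d. z $ i = (\<Sum>r\<in>R. c r * (pt r - x0) $ i)" and cs: "(\<Sum>r\<in>R. \<bar>c r\<bar>) \<le> \<Lambda> * nv z"
    using sp z unfolding spanprop_def by blast
  have w: "pt r - x0 \<in> carrier_vec d" if "r \<in> R" for r
  proof -
    have "pt r \<in> carrier_vec d" using R(2) pt_carrier that by blast
    then show ?thesis using x0_dim by simp
  qed
  have "nv (L *\<^sub>v z) \<le> (\<Sum>r\<in>R. \<bar>c r\<bar> * nv (L *\<^sub>v (pt r - x0)))"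
    by (rule nv_lin_comb[OF R(1) L DD_carrier[OF z] w]) (use c in auto)
  also have "\<dots> \<le> (\<Sum>r\<in>R. \<bar>c r\<bar> * \<beta>)" using b by (intro sum_mono mult_left_mono) auto
  also have "\<dots> = (\<Sum>r\<in>R. \<bar>c r\<bar>) * \<beta>" by (simp add: sum_distrib_right)
  also have "\<dots> \<le> \<Lambda> * nv z * \<beta>" using cs \<beta> by (rule mult_right_mono)
  finally show ?thesis by (simp add: ac_simps)
qed

end



lemma rdist_le: assumes "v \<in> V" shows "rdist R w V \<le> sqrt (\<Sum>h\<in>R. sqn (w h - v h))"
  unfolding rdist_def
proof (rule cInf_lower)
  show "sqrt (\<Sum>h\<in>R. sqn (w h - v h)) \<in> (\<lambda>v. sqrt (\<Sum>h\<in>R. sqn (w h - v h))) ` V" using assms by auto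
  show "bdd_below ((\<lambda>v. sqrt (\<Sum>h\<in>R. sqn (w h - v h))) ` V)"
    by (rule bdd_belowI[of _ 0]) (auto simp: sqn_sum intro!: sum_nonneg)
qed

lemma rdist_nonneg: assumes "V \<noteq> {}" shows "0 \<le> rdist R w V"
  unfolding rdist_def using assms by (intro cInf_greatest) (auto simp: sqn_sum intro!: sum_nonneg)

lemma rdist_lt: assumes "V \<noteq> {}" "rdist R w V < y"
  shows "\<exists>v\<in>V. sqrt (\<Sum>h\<in>R. sqn (w h - v h)) < y"
  using cInf_lessD[of "(\<lambda>v. sqrt (\<Sum>h\<in>R. sqn (w h - v h))) ` V" y] assms unfolding rdist_def by auto

lemma rdist_cong: assumes "\<And>h. h \<in> R \<Longrightarrow> w h = w' h" shows "rdist R w V = rdist R w' V"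
  unfolding rdist_def using assms by (intro arg_cong[where f=Inf] image_cong refl) (auto intro!: sum.cong)

lemma sqn_nv: "sqn x = (nv x)^2" unfolding nv_def by (simp add: sqn_sum sum_nonneg)

lemma nv_le_sqrt_sum: assumes "finite R" "k \<in> R" shows "nv (f k) \<le> sqrt (\<Sum>h\<in>R. sqn (f h))"
proof -
  have "sqn (f k) \<le> (\<Sum>h\<in>R. sqn (f h))"
    using assms by (intro member_le_sum) (auto simp: sqn_nv)
  then show ?thesis unfolding nv_def by simp
qed

lemma mv_minus3: assumes "(M::real mat) \<in> carrier_mat n n" "a \<in> carrier_vec n" "b \<in> carrier_vec n" "c \<in> carrier_vec n"
  shows "M *\<^sub>v (a - b - c) = M *\<^sub>v a - M *\<^sub>v b - M *\<^sub>v c"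
  using assms by (simp add: mult_minus_distrib_mat_vec)

lemma mv3: assumes "(A::real mat) \<in> carrier_mat n n" "B \<in> carrier_mat n n" "C \<in> carrier_mat n n" "v \<in> carrier_vec n"
  shows "(A * B * C) *\<^sub>v v = A *\<^sub>v (B *\<^sub>v (C *\<^sub>v v))"
proof -
  have "(A * B * C) *\<^sub>v v = (A * B) *\<^sub>v (C *\<^sub>v v)"
    by (rule assoc_mult_mat_vec) (use assms in auto)
  also have "\<dots> = A *\<^sub>v (B *\<^sub>v (C *\<^sub>v v))"
    by (rule assoc_mult_mat_vec) (use assms in auto)
  finally show ?thesis .
qed

lemma mv_zero: assumes "(A::real mat) \<in> carrier_mat nr n" shows "A *\<^sub>v 0\<^sub>v n = 0\<^sub>v nr"
proof (rule eq_vecI)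
  fix i assume "i < dim_vec (0\<^sub>v nr :: real vec)"
  then show "(A *\<^sub>v 0\<^sub>v n) $ i = 0\<^sub>v nr $ i" using assms
    by (simp add: scalar_prod_def)
qed (use assms in auto)

context setting begin

definition blk :: "real mat \<Rightarrow> real mat" where
  "blk X = four_block_mat X (0\<^sub>m d1 d2) (0\<^sub>m d2 d1) (0\<^sub>m d2 d2)"

lemma skew_carrier: "X \<in> skew d1 \<Longrightarrow> X \<in> carrier_mat d1 d1" unfolding skew_def by auto

lemma blk_carrier: "X \<in> carrier_mat d1 d1 \<Longrightarrow> blk X \<in> carrier_mat d d"
  unfolding blk_def d_def by auto

lemma blk_skew_carrier: "X \<in> skew d1 \<Longrightarrow> blk X \<in> carrier_mat d d"
  using blk_carrier skew_carrier by blast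

lemma zero_skew: "0\<^sub>m d1 d1 \<in> skew d1" unfolding skew_def by auto

lemma blk_zero_mv: assumes "v \<in> carrier_vec d" shows "blk (0\<^sub>m d1 d1) *\<^sub>v v = 0\<^sub>v d"
proof -
  have "blk (0\<^sub>m d1 d1) = 0\<^sub>m d d" unfolding blk_def d_def by (rule four_block_zero_mat)
  then show ?thesis using assms by auto
qed

definition okR :: "euc set \<Rightarrow> bool" where "okR R \<longleftrightarrow> finite R \<and> R \<subseteq> G"

definition uG :: "(euc \<Rightarrow> real vec) \<Rightarrow> bool" where "uG u \<longleftrightarrow> (\<forall>x\<in>G. u x \<in> carrier_vec d)"

lemma Urot_ne: assumes "okR R" shows "U_rot00 d1 d2 x0 R \<noteq> {}"
proof -
  have "(\<lambda>_. 0\<^sub>v d) \<in> U_rot00 d1 d2 x0 R"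
    unfolding U_rot00_def
  proof (intro CollectI conjI bexI[of _ "0\<^sub>m d1 d1"] ballI)
    fix g assume g: "g \<in> R"
    then have gG: "g \<in> G" using assms unfolding okR_def by auto
    have "eact g x0 - x0 \<in> carrier_vec d" using pt_carrier[OF gG] x0_dim unfolding pt_def by simp
    then show "rot g *\<^sub>v 0\<^sub>v d = four_block_mat (0\<^sub>m d1 d1) (0\<^sub>m d1 d2) (0\<^sub>m d2 d1) (0\<^sub>m d2 d2) *\<^sub>v (eact g x0 - x0)"
      using blk_zero_mv rotG[OF gG] unfolding blk_def by auto
  qed (auto simp: zero_skew d_def)
  then show ?thesis by blast
qed

lemma Utrans_zero: assumes "okR R" shows "(\<lambda>_. 0\<^sub>v d) \<in> U_trans d R"
  unfolding U_trans_def
proof (intro CollectI conjI ballI bexI[of _ "0\<^sub>v d"])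
  fix g assume "g \<in> R"
  then have "g \<in> G" using assms unfolding okR_def by auto
  then show "rot g *\<^sub>v 0\<^sub>v d = 0\<^sub>v d" using rotG(1)[of g] mv_zero by blast
qed auto

lemma Uiso_ne: assumes "okR R" shows "U_iso00 d1 d2 x0 R \<noteq> {}"
proof -
  obtain v2 where "v2 \<in> U_rot00 d1 d2 x0 R" using Urot_ne[OF assms] by blast
  then have "(\<lambda>g. 0\<^sub>v d + v2 g) \<in> U_iso00 d1 d2 x0 R"
    unfolding U_iso00_def using Utrans_zero[OF assms] d_def by auto
  then show ?thesis by blast
qed

definition Erd :: "euc set \<Rightarrow> (euc \<Rightarrow> real vec) \<Rightarrow> euc \<Rightarrow> real" where
  "Erd R u g = rdist R (disc_grad R u g) (U_rot00 d1 d2 x0 R)"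

definition Nrd :: "euc set \<Rightarrow> (euc \<Rightarrow> real vec) \<Rightarrow> euc \<Rightarrow> real" where
  "Nrd R u g = rdist R (\<lambda>h. u (emult g h)) (U_iso00 d1 d2 x0 R)"

lemma Erd_nonneg: "okR R \<Longrightarrow> 0 \<le> Erd R u g" unfolding Erd_def using rdist_nonneg Urot_ne by blast
lemma Nrd_nonneg: "okR R \<Longrightarrow> 0 \<le> Nrd R u g" unfolding Nrd_def using rdist_nonneg Uiso_ne by blast

definition fitP :: "euc set \<Rightarrow> (euc \<Rightarrow> real vec) \<Rightarrow> real \<Rightarrow> euc \<Rightarrow> real mat \<Rightarrow> bool" where
  "fitP R u \<epsilon> g X \<longleftrightarrow> X \<in> skew d1 \<and>
     (\<forall>k\<in>R. nv (rot k *\<^sub>v u (emult g k) - u g - blk X *\<^sub>v (pt k - x0)) \<le> Erd R u g + \<epsilon>)"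

lemma fit_exists:
  assumes R: "okR R" and u: "uG u" and g: "g \<in> G" and \<epsilon>: "0 < \<epsilon>"
  shows "\<exists>X. fitP R u \<epsilon> g X"
proof -
  have RG: "finite R" "R \<subseteq> G" using R unfolding okR_def by auto
  define w where "w = disc_grad R u g"
  have "Erd R u g < Erd R u g + \<epsilon>" using \<epsilon> by simp
  then obtain v where v: "v \<in> U_rot00 d1 d2 x0 R" and vl: "sqrt (\<Sum>h\<in>R. sqn (w h - v h)) < Erd R u g + \<epsilon>"
    using rdist_lt[OF Urot_ne[OF R]] unfolding Erd_def w_def by blast
  from v obtain X where X: "X \<in> skew d1" and vc: "\<forall>k\<in>R. v k \<in> carrier_vec d"
    and vX: "\<forall>k\<in>R. rot k *\<^sub>v v k = blk X *\<^sub>v (pt k - x0)"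
    unfolding U_rot00_def blk_def pt_def d_def by auto
  have "nv (rot k *\<^sub>v u (emult g k) - u g - blk X *\<^sub>v (pt k - x0)) \<le> Erd R u g + \<epsilon>" if k: "k \<in> R" for k
  proof -
    have kG: "k \<in> G" using k RG by auto
    have c1: "u (emult g k) \<in> carrier_vec d" "u g \<in> carrier_vec d" using u g kG unfolding uG_def by auto
    have c2: "(rot k)\<^sup>T *\<^sub>v u g \<in> carrier_vec d" using rotG[OF kG] c1 by auto
    have "rot k *\<^sub>v (w k - v k) = rot k *\<^sub>v u (emult g k) - rot k *\<^sub>v ((rot k)\<^sup>T *\<^sub>v u g) - rot k *\<^sub>v v k"
      unfolding w_def disc_grad_def using mv_minus3[OF rotG(1)[OF kG] c1(1) c2 vc[rule_format, OF k]] .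
    also have "rot k *\<^sub>v ((rot k)\<^sup>T *\<^sub>v u g) = u g" using rotG[OF kG] c1 by (intro mat_cancel) auto
    finally have "rot k *\<^sub>v u (emult g k) - u g - blk X *\<^sub>v (pt k - x0) = rot k *\<^sub>v (w k - v k)"
      using vX k by simp
    moreover have "w k - v k \<in> carrier_vec d" using c1 c2 vc k unfolding w_def disc_grad_def by auto
    ultimately have "nv (rot k *\<^sub>v u (emult g k) - u g - blk X *\<^sub>v (pt k - x0)) = nv (w k - v k)"
      using rot_nv[OF kG] by simp
    also have "\<dots> \<le> sqrt (\<Sum>h\<in>R. sqn (w h - v h))" using nv_le_sqrt_sum[OF RG(1) k] .
    finally show ?thesis using vl by simp
  qed
  then show ?thesis unfolding fitP_def using X by blast
qed

definition fitS :: "euc set \<Rightarrow> (euc \<Rightarrow> real vec) \<Rightarrow> real \<Rightarrow> euc \<Rightarrow> real mat" where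
  "fitS R u \<epsilon> g = (SOME X. fitP R u \<epsilon> g X)"

lemma fitS: "okR R \<Longrightarrow> uG u \<Longrightarrow> g \<in> G \<Longrightarrow> 0 < \<epsilon> \<Longrightarrow> fitP R u \<epsilon> g (fitS R u \<epsilon> g)"
  unfolding fitS_def using fit_exists by (rule someI_ex)

definition AA :: "euc set \<Rightarrow> (euc \<Rightarrow> real vec) \<Rightarrow> real \<Rightarrow> euc \<Rightarrow> real mat" where
  "AA R u \<epsilon> g = rot g * blk (fitS R u \<epsilon> g) * (rot g)\<^sup>T"

definition Psi :: "(euc \<Rightarrow> real vec) \<Rightarrow> euc \<Rightarrow> real vec" where
  "Psi u x = rot x *\<^sub>v u x"

definition err :: "euc set \<Rightarrow> (euc \<Rightarrow> real vec) \<Rightarrow> real \<Rightarrow> euc \<Rightarrow> euc \<Rightarrow> real vec" where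
  "err R u \<epsilon> g y = Psi u y - Psi u g - AA R u \<epsilon> g *\<^sub>v (pt y - pt g)"

definition eta :: "euc set \<Rightarrow> (euc \<Rightarrow> real vec) \<Rightarrow> real \<Rightarrow> euc \<Rightarrow> real" where
  "eta R u \<epsilon> g = Erd R u g + \<epsilon>"

lemma eta_nonneg: "okR R \<Longrightarrow> 0 < \<epsilon> \<Longrightarrow> 0 \<le> eta R u \<epsilon> g"
  unfolding eta_def using Erd_nonneg[of R u g] by simp

lemma AA_carrier: "okR R \<Longrightarrow> uG u \<Longrightarrow> g \<in> G \<Longrightarrow> 0 < \<epsilon> \<Longrightarrow> AA R u \<epsilon> g \<in> carrier_mat d d"
  unfolding AA_def using fitS[of R u g \<epsilon>] rotG[of g] blk_skew_carrier unfolding fitP_def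
  by (meson mult_carrier_mat)

lemma Psi_carrier: "uG u \<Longrightarrow> x \<in> G \<Longrightarrow> Psi u x \<in> carrier_vec d"
  unfolding Psi_def uG_def using rotG(1)[of x] by auto

lemma err_carrier: "okR R \<Longrightarrow> uG u \<Longrightarrow> g \<in> G \<Longrightarrow> y \<in> G \<Longrightarrow> 0 < \<epsilon> \<Longrightarrow> err R u \<epsilon> g y \<in> carrier_vec d"
  unfolding err_def using Psi_carrier[of u y] Psi_carrier[of u g] AA_carrier[of R u g \<epsilon>] pt_carrier[of y] pt_carrier[of g]
  by auto

lemma err_eq:
  assumes R: "okR R" and u: "uG u" and g: "g \<in> G" and h: "h \<in> G" and \<epsilon>: "0 < \<epsilon>"
  shows "err R u \<epsilon> g (emult g h) = rot g *\<^sub>v (rot h *\<^sub>v u (emult g h) - u g - blk (fitS R u \<epsilon> g) *\<^sub>v (pt h - x0))"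
proof -
  define X where "X = blk (fitS R u \<epsilon> g)"
  have X: "X \<in> carrier_mat d d" unfolding X_def using fitS[OF R u g \<epsilon>] blk_skew_carrier unfolding fitP_def by auto
  have c: "u (emult g h) \<in> carrier_vec d" "u g \<in> carrier_vec d" using u g h unfolding uG_def by auto
  have ph: "pt h - x0 \<in> carrier_vec d" using pt_carrier[OF h] x0_dim by simp
  note rg = rotG[OF g] and rh = rotG[OF h]
  have e1: "Psi u (emult g h) = rot g *\<^sub>v (rot h *\<^sub>v u (emult g h))"
    unfolding Psi_def rot_emult using rg rh c by simp
  have e2: "AA R u \<epsilon> g *\<^sub>v (pt (emult g h) - pt g) = rot g *\<^sub>v (X *\<^sub>v (pt h - x0))"
  proof -
    have "AA R u \<epsilon> g *\<^sub>v (pt (emult g h) - pt g) = (rot g * X * (rot g)\<^sup>T) *\<^sub>v (rot g *\<^sub>v (pt h - x0))"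
      unfolding AA_def X_def pt_emult[OF g h] ..
    also have "\<dots> = rot g *\<^sub>v (X *\<^sub>v ((rot g)\<^sup>T *\<^sub>v (rot g *\<^sub>v (pt h - x0))))"
      using rg X ph by (intro mv3) auto
    also have "(rot g)\<^sup>T *\<^sub>v (rot g *\<^sub>v (pt h - x0)) = pt h - x0"
      using rg ph by (intro mat_cancel) auto
    finally show ?thesis .
  qed
  have "rot g *\<^sub>v (rot h *\<^sub>v u (emult g h) - u g - X *\<^sub>v (pt h - x0))
      = rot g *\<^sub>v (rot h *\<^sub>v u (emult g h)) - rot g *\<^sub>v u g - rot g *\<^sub>v (X *\<^sub>v (pt h - x0))"
    using rg rh c X ph by (intro mv_minus3) auto
  then show ?thesis unfolding err_def e1 e2 unfolding X_def Psi_def by simp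
qed

lemma err_patch:
  assumes R: "okR R" and u: "uG u" and g: "g \<in> G" and k: "k \<in> R" and \<epsilon>: "0 < \<epsilon>"
  shows "nv (err R u \<epsilon> g (emult g k)) \<le> eta R u \<epsilon> g"
proof -
  have kG: "k \<in> G" using R k unfolding okR_def by auto
  have c: "u (emult g k) \<in> carrier_vec d" "u g \<in> carrier_vec d" using u g kG unfolding uG_def by auto
  have X: "blk (fitS R u \<epsilon> g) \<in> carrier_mat d d" using fitS[OF R u g \<epsilon>] blk_skew_carrier unfolding fitP_def by auto
  have "nv (err R u \<epsilon> g (emult g k)) = nv (rot k *\<^sub>v u (emult g k) - u g - blk (fitS R u \<epsilon> g) *\<^sub>v (pt k - x0))"
    unfolding err_eq[OF R u g kG \<epsilon>] using rotG[OF kG] c X pt_carrier[OF kG] x0_dim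
    by (intro rot_nv[OF g]) auto
  also have "\<dots> \<le> eta R u \<epsilon> g" using fitS[OF R u g \<epsilon>] k unfolding fitP_def eta_def by auto
  finally show ?thesis .
qed

end



lemma mat_minus_mv: assumes "(A::real mat) \<in> carrier_mat n n" "B \<in> carrier_mat n n" "v \<in> carrier_vec n"
  shows "(A - B) *\<^sub>v v = A *\<^sub>v v - B *\<^sub>v v"
proof (rule eq_vecI)
  fix i assume "i < dim_vec (A *\<^sub>v v - B *\<^sub>v v)"
  then have i: "i < n" using assms by simp
  have AB: "A - B \<in> carrier_mat n n" using assms(2) by (rule minus_carrier_mat)
  show "((A - B) *\<^sub>v v) $ i = (A *\<^sub>v v - B *\<^sub>v v) $ i"
    using mv_expand[OF AB assms(3) i] mv_expand[OF assms(1,3) i] mv_expand[OF assms(2,3) i] i assms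
    by (simp add: sum_subtractf algebra_simps)
qed (use assms in auto)

lemma vid1:
  assumes c: "a \<in> carrier_vec n" "b \<in> carrier_vec n" "c \<in> carrier_vec n" "y \<in> carrier_vec n"
    "pg \<in> carrier_vec n" "pg' \<in> carrier_vec n" and m: "(P1::real mat) \<in> carrier_mat n n" "P2 \<in> carrier_mat n n"
  shows "(P2 - P1) *\<^sub>v (y - pg') = (a - b - P1 *\<^sub>v (y - pg)) - (a - c - P2 *\<^sub>v (y - pg')) - (c - b - P1 *\<^sub>v (pg' - pg))"
proof -
  have e: "(P2 - P1) *\<^sub>v (y - pg') = P2 *\<^sub>v y - P2 *\<^sub>v pg' - (P1 *\<^sub>v y - P1 *\<^sub>v pg')"
    using c m by (simp add: mat_minus_mv mult_minus_distrib_mat_vec)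
  have "P1 *\<^sub>v (y - pg) = P1 *\<^sub>v y - P1 *\<^sub>v pg" "P2 *\<^sub>v (y - pg') = P2 *\<^sub>v y - P2 *\<^sub>v pg'"
    "P1 *\<^sub>v (pg' - pg) = P1 *\<^sub>v pg' - P1 *\<^sub>v pg"
    using c m by (simp_all add: mult_minus_distrib_mat_vec)
  then show ?thesis unfolding e using c m by (intro eq_vecI) auto
qed

lemma vid2:
  assumes c: "a \<in> carrier_vec n" "b \<in> carrier_vec n" "c \<in> carrier_vec n" "y \<in> carrier_vec n"
    "pg \<in> carrier_vec n" "pc \<in> carrier_vec n" and m: "(Ag::real mat) \<in> carrier_mat n n" "Ac \<in> carrier_mat n n"
  shows "a - b - Ag *\<^sub>v (y - pg) = (a - c - Ac *\<^sub>v (y - pc)) + (c - b - Ag *\<^sub>v (pc - pg)) + (Ac - Ag) *\<^sub>v (y - pc)"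
proof -
  have e: "(Ac - Ag) *\<^sub>v (y - pc) = Ac *\<^sub>v y - Ac *\<^sub>v pc - (Ag *\<^sub>v y - Ag *\<^sub>v pc)"
    using c m by (simp add: mat_minus_mv mult_minus_distrib_mat_vec)
  have "Ag *\<^sub>v (y - pg) = Ag *\<^sub>v y - Ag *\<^sub>v pg" "Ac *\<^sub>v (y - pc) = Ac *\<^sub>v y - Ac *\<^sub>v pc"
    "Ag *\<^sub>v (pc - pg) = Ag *\<^sub>v pc - Ag *\<^sub>v pg"
    using c m by (simp_all add: mult_minus_distrib_mat_vec)
  then show ?thesis unfolding e using c m by (intro eq_vecI) auto
qed

lemma vid3:
  assumes c: "b \<in> carrier_vec n" "c \<in> carrier_vec n"
    "pg \<in> carrier_vec n" "pc \<in> carrier_vec n" and m: "(Ag::real mat) \<in> carrier_mat n n" "Ac \<in> carrier_mat n n"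
  shows "c - b - Ag *\<^sub>v (pc - pg) = - (b - c - Ac *\<^sub>v (pg - pc)) + (Ac - Ag) *\<^sub>v (pc - pg)"
proof -
  have e: "(Ac - Ag) *\<^sub>v (pc - pg) = Ac *\<^sub>v pc - Ac *\<^sub>v pg - (Ag *\<^sub>v pc - Ag *\<^sub>v pg)"
    using c m by (simp add: mat_minus_mv mult_minus_distrib_mat_vec)
  have "Ag *\<^sub>v (pc - pg) = Ag *\<^sub>v pc - Ag *\<^sub>v pg" "Ac *\<^sub>v (pg - pc) = Ac *\<^sub>v pg - Ac *\<^sub>v pc"
    using c m by (simp_all add: mult_minus_distrib_mat_vec)
  then show ?thesis unfolding e using c m by (intro eq_vecI) auto
qed

lemma nv_add3: assumes "x \<in> carrier_vec n" "y \<in> carrier_vec n" "z \<in> carrier_vec n"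
  shows "nv (x + y + z) \<le> nv x + nv y + nv z"
proof -
  have "nv (x + y + z) \<le> nv (x + y) + nv z" using assms by (intro nv_add) auto
  also have "nv (x + y) \<le> nv x + nv y" using assms by (intro nv_add) auto
  finally show ?thesis by simp
qed

lemma nv_diff3: assumes "x \<in> carrier_vec n" "y \<in> carrier_vec n" "z \<in> carrier_vec n"
  shows "nv (x - y - z) \<le> nv x + nv y + nv z"
proof -
  have "nv (x - y - z) \<le> nv (x - y) + nv z" using assms by (intro nv_diff) auto
  also have "nv (x - y) \<le> nv x + nv y" using assms by (intro nv_diff) auto
  finally show ?thesis by simp
qed

lemma vec_swap_minus: "x \<in> carrier_vec n \<Longrightarrow> y \<in> carrier_vec n \<Longrightarrow> (x::real vec) - y = - (y - x)"
  by (intro eq_vecI) auto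

context setting begin

definition DBd :: "real mat \<Rightarrow> real \<Rightarrow> bool" where
  "DBd M \<beta> \<longleftrightarrow> (\<forall>z\<in>DD. nv (M *\<^sub>v z) \<le> \<beta> * nv z)"

definition sl :: "euc set \<Rightarrow> (euc \<Rightarrow> real vec) \<Rightarrow> real \<Rightarrow> euc \<Rightarrow> euc list \<Rightarrow> real" where
  "sl R u \<epsilon> g P = sum_list (map (\<lambda>p. eta R u \<epsilon> (emult g p)) P)"

lemma sl_nonneg: "okR R \<Longrightarrow> 0 < \<epsilon> \<Longrightarrow> 0 \<le> sl R u \<epsilon> g P"
  unfolding sl_def by (intro sum_list_nonneg) (auto intro: eta_nonneg)

definition Qp :: "euc set \<Rightarrow> euc \<Rightarrow> bool" where
  "Qp R h \<longleftrightarrow> (\<exists>Cc\<ge>0. \<exists>P. set P \<subseteq> G \<and> (\<forall>u \<epsilon>. uG u \<longrightarrow> 0 < \<epsilon> \<longrightarrow> (\<forall>g\<in>G.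
      DBd (AA R u \<epsilon> (emult g h) - AA R u \<epsilon> g) (Cc * sl R u \<epsilon> g P)
      \<and> nv (err R u \<epsilon> g (emult g h)) \<le> Cc * sl R u \<epsilon> g P)))"

lemma Qp_eid: assumes R: "okR R" shows "Qp R (eid d)"
  unfolding Qp_def
proof (intro exI[of _ 0] exI[of _ "[]"] conjI allI impI ballI)
  fix u and \<epsilon> :: real and g assume u: "uG u" and \<epsilon>: "0 < \<epsilon>" and g: "g \<in> G"
  have A: "AA R u \<epsilon> g \<in> carrier_mat d d" using AA_carrier[OF R u g \<epsilon>] .
  show "DBd (AA R u \<epsilon> (emult g (eid d)) - AA R u \<epsilon> g) (0 * sl R u \<epsilon> g [])"
    unfolding DBd_def
  proof
    fix z assume z: "z \<in> DD"
    have "(AA R u \<epsilon> g - AA R u \<epsilon> g) *\<^sub>v z = 0\<^sub>v d"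
      using A DD_carrier[OF z] by (intro eq_vecI) (auto simp: mat_minus_mv)
    then show "nv ((AA R u \<epsilon> (emult g (eid d)) - AA R u \<epsilon> g) *\<^sub>v z) \<le> 0 * sl R u \<epsilon> g [] * nv z"
      using g by simp
  qed
  have "err R u \<epsilon> g g = 0\<^sub>v d"
    unfolding err_def using Psi_carrier[OF u g] A pt_carrier[OF g]
    by (intro eq_vecI) (auto simp: mult_minus_distrib_mat_vec)
  then show "nv (err R u \<epsilon> g (emult g (eid d))) \<le> 0 * sl R u \<epsilon> g []" using g by simp
qed auto

lemma DBdD: "DBd M \<beta> \<Longrightarrow> z \<in> DD \<Longrightarrow> nv (M *\<^sub>v z) \<le> \<beta> * nv z"
  unfolding DBd_def by auto

end



context setting begin

lemma Qp_base:
  assumes R: "okR R" and r: "r \<in> G" and rk: "\<And>k. k \<in> Rpp \<Longrightarrow> emult r k \<in> R"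
    and kR: "\<And>k. k \<in> Rpp \<Longrightarrow> k \<in> R" and rR: "r \<in> R"
    and sp: "spanprop Rpp \<Lambda>" and Rpp: "finite Rpp" "Rpp \<subseteq> G"
  shows "Qp R r"
  unfolding Qp_def
proof (intro exI[of _ "2 * \<Lambda> + 1"] exI[of _ "[eid d, r]"] conjI allI impI ballI)
  have L0: "0 \<le> \<Lambda>" using sp unfolding spanprop_def by auto
  then show "0 \<le> 2 * \<Lambda> + 1" by simp
  show "set [eid d, r] \<subseteq> G" using r by auto
  fix u and \<epsilon> :: real and g assume u: "uG u" and \<epsilon>: "0 < \<epsilon>" and g: "g \<in> G"
  define g' where "g' = emult g r"
  have g': "g' \<in> G" unfolding g'_def using g r by simp
  define A1 where "A1 = AA R u \<epsilon> g"
  define A2 where "A2 = AA R u \<epsilon> g'"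
  have A1: "A1 \<in> carrier_mat d d" unfolding A1_def using AA_carrier[OF R u g \<epsilon>] .
  have A2: "A2 \<in> carrier_mat d d" unfolding A2_def using AA_carrier[OF R u g' \<epsilon>] .
  define a where "a = eta R u \<epsilon> g"
  define b where "b = eta R u \<epsilon> g'"
  have a0: "0 \<le> a" and b0: "0 \<le> b" unfolding a_def b_def using eta_nonneg[OF R \<epsilon>] by auto
  have slv: "sl R u \<epsilon> g [eid d, r] = a + b" unfolding sl_def a_def b_def g'_def using g by simp
  have key: "nv ((A2 - A1) *\<^sub>v (rot g' *\<^sub>v (pt k - x0))) \<le> 2 * a + b" if k: "k \<in> Rpp" for k
  proof -
    have kG: "k \<in> G" using k Rpp by auto
    define y where "y = emult g' k"
    have yG: "y \<in> G" unfolding y_def using g' kG by simp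
    have y2: "emult g (emult r k) = y" unfolding y_def g'_def using assocG g r kG by simp
    have e1: "nv (err R u \<epsilon> g y) \<le> a"
      using err_patch[OF R u g rk[OF k] \<epsilon>] unfolding y2 a_def .
    have e2: "nv (err R u \<epsilon> g' y) \<le> b"
      using err_patch[OF R u g' kR[OF k] \<epsilon>] unfolding y_def b_def .
    have e3: "nv (err R u \<epsilon> g g') \<le> a"
      using err_patch[OF R u g rR \<epsilon>] unfolding g'_def a_def .
    have "(A2 - A1) *\<^sub>v (pt y - pt g') = err R u \<epsilon> g y - err R u \<epsilon> g' y - err R u \<epsilon> g g'"
      unfolding err_def A1_def[symmetric] A2_def[symmetric]
      by (rule vid1) (use Psi_carrier[OF u] pt_carrier g g' yG A1 A2 in auto)
    moreover have "pt y - pt g' = rot g' *\<^sub>v (pt k - x0)" unfolding y_def by (rule pt_emult[OF g' kG])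
    ultimately have "(A2 - A1) *\<^sub>v (rot g' *\<^sub>v (pt k - x0)) = err R u \<epsilon> g y - err R u \<epsilon> g' y - err R u \<epsilon> g g'"
      by simp
    moreover have "nv (err R u \<epsilon> g y - err R u \<epsilon> g' y - err R u \<epsilon> g g') \<le> a + b + a"
      using nv_diff3[OF err_carrier[OF R u g yG \<epsilon>] err_carrier[OF R u g' yG \<epsilon>] err_carrier[OF R u g g' \<epsilon>]]
        e1 e2 e3 by simp
    ultimately show ?thesis by simp
  qed
  define L where "L = (A2 - A1) * rot g'"
  have L: "L \<in> carrier_mat d d" unfolding L_def using A1 A2 rotG[OF g'] by auto
  have Lb: "nv (L *\<^sub>v (pt k - x0)) \<le> 2 * a + b" if k: "k \<in> Rpp" for k
  proof -
    have "L *\<^sub>v (pt k - x0) = (A2 - A1) *\<^sub>v (rot g' *\<^sub>v (pt k - x0))"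
      unfolding L_def using A1 A2 rotG[OF g'] pt_carrier[of k] k Rpp x0_dim
      by (intro assoc_mult_mat_vec) auto
    then show ?thesis using key[OF k] by simp
  qed
  show "DBd (AA R u \<epsilon> (emult g r) - AA R u \<epsilon> g) ((2 * \<Lambda> + 1) * sl R u \<epsilon> g [eid d, r])"
    unfolding DBd_def slv A1_def[symmetric] g'_def[symmetric] A2_def[symmetric]
  proof
    fix z assume z: "z \<in> DD"
    define z' where "z' = (rot g')\<^sup>T *\<^sub>v z"
    have z': "z' \<in> DD" unfolding z'_def using rotT_DD[OF g' z] .
    have zc: "z \<in> carrier_vec d" using DD_carrier[OF z] .
    have "L *\<^sub>v z' = (A2 - A1) *\<^sub>v (rot g' *\<^sub>v z')"
      unfolding L_def using A1 A2 rotG[OF g'] DD_carrier[OF z'] by (intro assoc_mult_mat_vec) auto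
    also have "rot g' *\<^sub>v z' = z" unfolding z'_def using rotG[OF g'] zc by (intro mat_cancel) auto
    finally have Lz: "L *\<^sub>v z' = (A2 - A1) *\<^sub>v z" .
    have nz: "nv z' = nv z" unfolding z'_def using rotT_nv[OF g' zc] .
    have "nv ((A2 - A1) *\<^sub>v z) \<le> \<Lambda> * (2 * a + b) * nv z"
      using Dbound[OF sp Rpp L Lb _ z'] a0 b0 unfolding Lz nz by simp
    also have "\<dots> \<le> (2 * \<Lambda> + 1) * (a + b) * nv z"
    proof (rule mult_right_mono)
      have "\<Lambda> * (2 * a + b) \<le> \<Lambda> * (2 * a + 2 * b)" using L0 b0 by (intro mult_left_mono) auto
      also have "\<dots> \<le> (2 * \<Lambda> + 1) * (a + b)" using a0 b0 by (simp add: algebra_simps)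
      finally show "\<Lambda> * (2 * a + b) \<le> (2 * \<Lambda> + 1) * (a + b)" .
    qed simp
    finally show "nv ((A2 - A1) *\<^sub>v z) \<le> (2 * \<Lambda> + 1) * (a + b) * nv z" .
  qed
  have "nv (err R u \<epsilon> g (emult g r)) \<le> a" using err_patch[OF R u g rR \<epsilon>] unfolding a_def .
  also have "a \<le> (2 * \<Lambda> + 1) * (a + b)" using a0 b0 L0
    by (simp add: algebra_simps)
  finally show "nv (err R u \<epsilon> g (emult g r)) \<le> (2 * \<Lambda> + 1) * sl R u \<epsilon> g [eid d, r]"
    unfolding slv .
qed

end



context setting begin

lemma Qp_mult:
  assumes R: "okR R" and h1: "h1 \<in> G" and h2: "h2 \<in> G" and Q1: "Qp R h1" and Q2: "Qp R h2"
  shows "Qp R (emult h1 h2)"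
proof -
  obtain C1 P1 where C1: "0 \<le> C1" "set P1 \<subseteq> G" and Q1': "\<And>u \<epsilon> g. uG u \<Longrightarrow> 0 < \<epsilon> \<Longrightarrow> g \<in> G \<Longrightarrow>
      DBd (AA R u \<epsilon> (emult g h1) - AA R u \<epsilon> g) (C1 * sl R u \<epsilon> g P1)
      \<and> nv (err R u \<epsilon> g (emult g h1)) \<le> C1 * sl R u \<epsilon> g P1"
    using Q1 unfolding Qp_def by blast
  obtain C2 P2 where C2: "0 \<le> C2" "set P2 \<subseteq> G" and Q2': "\<And>u \<epsilon> g. uG u \<Longrightarrow> 0 < \<epsilon> \<Longrightarrow> g \<in> G \<Longrightarrow>
      DBd (AA R u \<epsilon> (emult g h2) - AA R u \<epsilon> g) (C2 * sl R u \<epsilon> g P2)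
      \<and> nv (err R u \<epsilon> g (emult g h2)) \<le> C2 * sl R u \<epsilon> g P2"
    using Q2 unfolding Qp_def by blast
  define \<rho> where "\<rho> = nv (pt h2 - x0)"
  have \<rho>0: "0 \<le> \<rho>" unfolding \<rho>_def by simp
  show ?thesis unfolding Qp_def
  proof (intro exI[of _ "C1 * (1 + \<rho>) + C2"] exI[of _ "P1 @ map (emult h1) P2"] conjI allI impI ballI)
    show "0 \<le> C1 * (1 + \<rho>) + C2" using C1 C2 \<rho>0 by simp
    show "set (P1 @ map (emult h1) P2) \<subseteq> G" using C1 C2 h1 by auto
    fix u and \<epsilon> :: real and g assume u: "uG u" and \<epsilon>: "0 < \<epsilon>" and g: "g \<in> G"
    define c where "c = emult g h1"
    have c: "c \<in> G" unfolding c_def using g h1 by simp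
    have y: "emult g (emult h1 h2) = emult c h2" unfolding c_def using assocG g h1 h2 by simp
    have yG: "emult c h2 \<in> G" using c h2 by simp
    define s1 where "s1 = sl R u \<epsilon> g P1"
    define s2 where "s2 = sl R u \<epsilon> c P2"
    have s0: "0 \<le> s1" "0 \<le> s2" unfolding s1_def s2_def using sl_nonneg[OF R \<epsilon>] by auto
    have slv: "sl R u \<epsilon> g (P1 @ map (emult h1) P2) = s1 + s2"
    proof -
      have "sum_list (map (\<lambda>p. eta R u \<epsilon> (emult g (emult h1 p))) P2) = sum_list (map (\<lambda>p. eta R u \<epsilon> (emult c p)) P2)"
        by (rule arg_cong[where f=sum_list], rule map_cong[OF refl]) (use C2(2) g h1 in \<open>auto simp: assocG c_def\<close>)
      then show ?thesis unfolding sl_def s1_def s2_def by (simp add: comp_def)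
    qed
    obtain D1: "DBd (AA R u \<epsilon> c - AA R u \<epsilon> g) (C1 * s1)" and E1: "nv (err R u \<epsilon> g c) \<le> C1 * s1"
      using Q1'[OF u \<epsilon> g] unfolding c_def s1_def by blast
    obtain D2: "DBd (AA R u \<epsilon> (emult c h2) - AA R u \<epsilon> c) (C2 * s2)"
      and E2: "nv (err R u \<epsilon> c (emult c h2)) \<le> C2 * s2"
      using Q2'[OF u \<epsilon> c] unfolding s2_def by blast
    have Ag: "AA R u \<epsilon> g \<in> carrier_mat d d" using AA_carrier[OF R u g \<epsilon>] .
    have Ac: "AA R u \<epsilon> c \<in> carrier_mat d d" using AA_carrier[OF R u c \<epsilon>] .
    have Ay: "AA R u \<epsilon> (emult c h2) \<in> carrier_mat d d" using AA_carrier[OF R u yG \<epsilon>] .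
    show "DBd (AA R u \<epsilon> (emult g (emult h1 h2)) - AA R u \<epsilon> g) ((C1 * (1 + \<rho>) + C2) * sl R u \<epsilon> g (P1 @ map (emult h1) P2))"
      unfolding DBd_def y slv
    proof
      fix z assume z: "z \<in> DD"
      have zc: "z \<in> carrier_vec d" using DD_carrier[OF z] .
      have "(AA R u \<epsilon> (emult c h2) - AA R u \<epsilon> g) *\<^sub>v z
          = (AA R u \<epsilon> (emult c h2) - AA R u \<epsilon> c) *\<^sub>v z + (AA R u \<epsilon> c - AA R u \<epsilon> g) *\<^sub>v z"
        using Ag Ac Ay zc by (intro eq_vecI) (auto simp: mat_minus_mv)
      then have "nv ((AA R u \<epsilon> (emult c h2) - AA R u \<epsilon> g) *\<^sub>v z)
          \<le> nv ((AA R u \<epsilon> (emult c h2) - AA R u \<epsilon> c) *\<^sub>v z) + nv ((AA R u \<epsilon> c - AA R u \<epsilon> g) *\<^sub>v z)"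
        using Ag Ac Ay zc by (simp add: nv_add)
      also have "\<dots> \<le> C2 * s2 * nv z + C1 * s1 * nv z" using DBdD[OF D1 z] DBdD[OF D2 z] by simp
      also have "\<dots> \<le> (C1 * (1 + \<rho>) + C2) * (s1 + s2) * nv z"
      proof -
        have "0 \<le> C1 * \<rho> * s1 * nv z" "0 \<le> C1 * s2 * nv z" "0 \<le> C1 * \<rho> * s2 * nv z" "0 \<le> C2 * s1 * nv z"
          using C1 C2 \<rho>0 s0 by simp_all
        then show ?thesis by (simp add: algebra_simps)
      qed
      finally show "nv ((AA R u \<epsilon> (emult c h2) - AA R u \<epsilon> g) *\<^sub>v z) \<le> (C1 * (1 + \<rho>) + C2) * (s1 + s2) * nv z" .
    qed
    have pyc: "pt (emult c h2) - pt c \<in> DD" using pt_diff_DD[OF yG c] .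
    have npyc: "nv (pt (emult c h2) - pt c) = \<rho>"
      unfolding pt_emult[OF c h2] \<rho>_def using pt_carrier[OF h2] x0_dim by (intro rot_nv[OF c]) auto
    have c3: "(AA R u \<epsilon> c - AA R u \<epsilon> g) *\<^sub>v (pt (emult c h2) - pt c) \<in> carrier_vec d"
      by (rule mult_mat_vec_carrier[OF minus_carrier_mat[OF Ag] DD_carrier[OF pyc]])
    have "err R u \<epsilon> g (emult c h2) = err R u \<epsilon> c (emult c h2) + err R u \<epsilon> g c
        + (AA R u \<epsilon> c - AA R u \<epsilon> g) *\<^sub>v (pt (emult c h2) - pt c)"
      unfolding err_def
      by (rule vid2) (use Psi_carrier[OF u] pt_carrier g c yG Ag Ac in auto)
    then have "nv (err R u \<epsilon> g (emult c h2)) \<le> nv (err R u \<epsilon> c (emult c h2)) + nv (err R u \<epsilon> g c)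
        + nv ((AA R u \<epsilon> c - AA R u \<epsilon> g) *\<^sub>v (pt (emult c h2) - pt c))"
      using nv_add3[OF err_carrier[OF R u c yG \<epsilon>] err_carrier[OF R u g c \<epsilon>] c3] by simp
    also have "\<dots> \<le> C2 * s2 + C1 * s1 + C1 * s1 * \<rho>"
      using E1 E2 DBdD[OF D1 pyc] unfolding npyc by simp
    also have "\<dots> \<le> (C1 * (1 + \<rho>) + C2) * (s1 + s2)"
    proof -
      have "0 \<le> C1 * s2" "0 \<le> C1 * \<rho> * s2" "0 \<le> C2 * s1"
        using C1 C2 \<rho>0 s0 by simp_all
      then show ?thesis by (simp add: algebra_simps)
    qed
    finally show "nv (err R u \<epsilon> g (emult g (emult h1 h2))) \<le> (C1 * (1 + \<rho>) + C2) * sl R u \<epsilon> g (P1 @ map (emult h1) P2)"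
      unfolding y slv .
  qed
qed

lemma Qp_inv:
  assumes R: "okR R" and h: "h \<in> G" and Q: "Qp R h"
  shows "Qp R (einv h)"
proof -
  obtain C0 P0 where C0: "0 \<le> C0" "set P0 \<subseteq> G" and Q': "\<And>u \<epsilon> g. uG u \<Longrightarrow> 0 < \<epsilon> \<Longrightarrow> g \<in> G \<Longrightarrow>
      DBd (AA R u \<epsilon> (emult g h) - AA R u \<epsilon> g) (C0 * sl R u \<epsilon> g P0)
      \<and> nv (err R u \<epsilon> g (emult g h)) \<le> C0 * sl R u \<epsilon> g P0"
    using Q unfolding Qp_def by blast
  define \<rho> where "\<rho> = nv (pt h - x0)"
  have \<rho>0: "0 \<le> \<rho>" unfolding \<rho>_def by simp
  show ?thesis unfolding Qp_def
  proof (intro exI[of _ "C0 * (1 + \<rho>)"] exI[of _ "map (emult (einv h)) P0"] conjI allI impI ballI)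
    show "0 \<le> C0 * (1 + \<rho>)" using C0 \<rho>0 by simp
    show "set (map (emult (einv h)) P0) \<subseteq> G" using C0 h by auto
    fix u and \<epsilon> :: real and g assume u: "uG u" and \<epsilon>: "0 < \<epsilon>" and g: "g \<in> G"
    define g' where "g' = emult g (einv h)"
    have g': "g' \<in> G" unfolding g'_def using g h by simp
    have gg: "emult g' h = g" unfolding g'_def using assocG[of g "einv h" h] g h by simp
    define s where "s = sl R u \<epsilon> g' P0"
    have s0: "0 \<le> s" unfolding s_def using sl_nonneg[OF R \<epsilon>] by auto
    have slv: "sl R u \<epsilon> g (map (emult (einv h)) P0) = s"
    proof -
      have "sum_list (map (\<lambda>p. eta R u \<epsilon> (emult g (emult (einv h) p))) P0) = sum_list (map (\<lambda>p. eta R u \<epsilon> (emult g' p)) P0)"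
        by (rule arg_cong[where f=sum_list], rule map_cong[OF refl]) (use C0(2) g h in \<open>auto simp: assocG g'_def\<close>)
      then show ?thesis unfolding sl_def s_def by (simp add: comp_def)
    qed
    obtain D: "DBd (AA R u \<epsilon> g - AA R u \<epsilon> g') (C0 * s)" and E: "nv (err R u \<epsilon> g' g) \<le> C0 * s"
      using Q'[OF u \<epsilon> g'] unfolding gg s_def by blast
    have Ag: "AA R u \<epsilon> g \<in> carrier_mat d d" using AA_carrier[OF R u g \<epsilon>] .
    have Ag': "AA R u \<epsilon> g' \<in> carrier_mat d d" using AA_carrier[OF R u g' \<epsilon>] .
    have D': "DBd (AA R u \<epsilon> g' - AA R u \<epsilon> g) (C0 * s)"
      unfolding DBd_def
    proof
      fix z assume z: "z \<in> DD"
      have zc: "z \<in> carrier_vec d" using DD_carrier[OF z] .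
      have "(AA R u \<epsilon> g' - AA R u \<epsilon> g) *\<^sub>v z = - ((AA R u \<epsilon> g - AA R u \<epsilon> g') *\<^sub>v z)"
        using Ag Ag' zc by (intro eq_vecI) (auto simp: mat_minus_mv)
      then show "nv ((AA R u \<epsilon> g' - AA R u \<epsilon> g) *\<^sub>v z) \<le> C0 * s * nv z"
        using DBdD[OF D z] by simp
    qed
    show "DBd (AA R u \<epsilon> (emult g (einv h)) - AA R u \<epsilon> g) (C0 * (1 + \<rho>) * sl R u \<epsilon> g (map (emult (einv h)) P0))"
      unfolding g'_def[symmetric] slv DBd_def
    proof
      fix z assume z: "z \<in> DD"
      have "nv ((AA R u \<epsilon> g' - AA R u \<epsilon> g) *\<^sub>v z) \<le> C0 * s * nv z" using DBdD[OF D' z] .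
      also have "\<dots> \<le> C0 * (1 + \<rho>) * s * nv z"
        using C0 \<rho>0 s0 by (intro mult_right_mono) (auto simp: algebra_simps)
      finally show "nv ((AA R u \<epsilon> g' - AA R u \<epsilon> g) *\<^sub>v z) \<le> C0 * (1 + \<rho>) * s * nv z" .
    qed
    have pgg: "pt g' - pt g \<in> DD" using pt_diff_DD[OF g' g] .
    have npgg: "nv (pt g' - pt g) = \<rho>"
    proof -
      have "pt g' - pt g = - (pt g - pt g')" by (rule vec_swap_minus[OF pt_carrier[OF g'] pt_carrier[OF g]])
      moreover have "pt g - pt g' = rot g' *\<^sub>v (pt h - x0)" using pt_emult[OF g' h] unfolding gg .
      moreover have "nv (rot g' *\<^sub>v (pt h - x0)) = \<rho>"
        unfolding \<rho>_def using pt_carrier[OF h] x0_dim by (intro rot_nv[OF g']) auto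
      ultimately show ?thesis by simp
    qed
    have "err R u \<epsilon> g g' = - err R u \<epsilon> g' g + (AA R u \<epsilon> g' - AA R u \<epsilon> g) *\<^sub>v (pt g' - pt g)"
      unfolding err_def
      by (rule vid3) (use Psi_carrier[OF u] pt_carrier g g' Ag Ag' in auto)
    then have "nv (err R u \<epsilon> g g') \<le> nv (err R u \<epsilon> g' g) + nv ((AA R u \<epsilon> g' - AA R u \<epsilon> g) *\<^sub>v (pt g' - pt g))"
      using nv_add[of "- err R u \<epsilon> g' g"] err_carrier[OF R u g' g \<epsilon>] Ag Ag' DD_carrier[OF pgg] by simp
    also have "\<dots> \<le> C0 * s + C0 * s * \<rho>" using E DBdD[OF D pgg] DBdD[OF D' pgg] unfolding npgg by simp
    also have "\<dots> = C0 * (1 + \<rho>) * s" by (simp add: algebra_simps)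
    finally show "nv (err R u \<epsilon> g (emult g (einv h))) \<le> C0 * (1 + \<rho>) * sl R u \<epsilon> g (map (emult (einv h)) P0)"
      unfolding g'_def[symmetric] slv .
  qed
qed

lemma Qp_all:
  assumes R: "okR R" and Rp: "Rp \<subseteq> G" "gen_E d Rp = G" and base: "\<And>r. r \<in> Rp \<Longrightarrow> Qp R r"
    and h: "h \<in> G"
  shows "Qp R h"
proof -
  have "h \<in> gen_E d Rp \<Longrightarrow> Qp R h" for h
  proof (induction rule: gen_E.induct)
    case gen_id then show ?case using Qp_eid[OF R] .
  next
    case (gen_base g) then show ?case using base by blast
  next
    case (gen_mult g h) then show ?case using Qp_mult[OF R] Rp(2) by blast
  next
    case (gen_inv g) then show ?case using Qp_inv[OF R] Rp(2) by blast
  qed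
  then show ?thesis using h Rp(2) by blast
qed

end



lemma le_eps: assumes "\<And>\<epsilon>. 0 < \<epsilon> \<Longrightarrow> (x::real) \<le> a + K * \<epsilon>" shows "x \<le> a"
proof (rule field_le_epsilon)
  fix e :: real assume e: "0 < e"
  define \<epsilon> where "\<epsilon> = e / (\<bar>K\<bar> + 1)"
  have \<epsilon>: "0 < \<epsilon>" unfolding \<epsilon>_def using e by simp
  have "K * \<epsilon> \<le> \<bar>K\<bar> * \<epsilon>" using \<epsilon> by (intro mult_right_mono) auto
  also have "\<dots> \<le> e" unfolding \<epsilon>_def using e by (simp add: field_simps)
  finally show "x \<le> a + e" using assms[OF \<epsilon>] by simp
qed

context setting begin

lemma Qfin:
  assumes R: "okR R" and QA: "\<And>h. h \<in> G \<Longrightarrow> Qp R h" and H: "finite H" "H \<subseteq> G"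
  shows "\<exists>Cc\<ge>0. \<exists>P. set P \<subseteq> G \<and> (\<forall>u \<epsilon>. uG u \<longrightarrow> 0 < \<epsilon> \<longrightarrow> (\<forall>g\<in>G. \<forall>h\<in>H.
      nv (err R u \<epsilon> g (emult g h)) \<le> Cc * sl R u \<epsilon> g P))"
  using H
proof (induction H rule: finite_induct)
  case empty then show ?case by (intro exI[of _ 0] conjI exI[of _ "[]"]) auto
next
  case (insert h H)
  obtain C1 P1 where C1: "0 \<le> C1" "set P1 \<subseteq> G" and B1: "\<And>u \<epsilon> g h'. uG u \<Longrightarrow> 0 < \<epsilon> \<Longrightarrow> g \<in> G \<Longrightarrow> h' \<in> H \<Longrightarrow>
      nv (err R u \<epsilon> g (emult g h')) \<le> C1 * sl R u \<epsilon> g P1"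
    using insert by blast
  obtain C2 P2 where C2: "0 \<le> C2" "set P2 \<subseteq> G" and B2: "\<And>u \<epsilon> g. uG u \<Longrightarrow> 0 < \<epsilon> \<Longrightarrow> g \<in> G \<Longrightarrow>
      nv (err R u \<epsilon> g (emult g h)) \<le> C2 * sl R u \<epsilon> g P2"
    using QA[of h] insert.prems unfolding Qp_def by blast
  show ?case
  proof (intro exI[of _ "C1 + C2"] exI[of _ "P1 @ P2"] conjI allI impI ballI)
    show "0 \<le> C1 + C2" using C1 C2 by simp
    show "set (P1 @ P2) \<subseteq> G" using C1 C2 by simp
    fix u and \<epsilon> :: real and g h' assume u: "uG u" and \<epsilon>: "0 < \<epsilon>" and g: "g \<in> G" and h': "h' \<in> insert h H"
    have s: "sl R u \<epsilon> g (P1 @ P2) = sl R u \<epsilon> g P1 + sl R u \<epsilon> g P2" unfolding sl_def by simp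
    have s0: "0 \<le> sl R u \<epsilon> g P1" "0 \<le> sl R u \<epsilon> g P2" using sl_nonneg[OF R \<epsilon>] by auto
    have m1: "C1 * sl R u \<epsilon> g P1 \<le> (C1 + C2) * sl R u \<epsilon> g (P1 @ P2)"
      unfolding s using C1 C2 s0 by (simp add: algebra_simps)
    have m2: "C2 * sl R u \<epsilon> g P2 \<le> (C1 + C2) * sl R u \<epsilon> g (P1 @ P2)"
      unfolding s using C1 C2 s0 by (simp add: algebra_simps)
    show "nv (err R u \<epsilon> g (emult g h')) \<le> (C1 + C2) * sl R u \<epsilon> g (P1 @ P2)"
    proof (cases "h' = h")
      case True then show ?thesis using B2[OF u \<epsilon> g] m2 by simp
    next
      case False then have "h' \<in> H" using h' by simp
      then show ?thesis using B1[OF u \<epsilon> g] m1 by fastforce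
    qed
  qed
qed

lemma Nrd_le_err:
  assumes R: "okR R" and H: "okR H" and u: "uG u" and g: "g \<in> G" and \<epsilon>: "0 < \<epsilon>"
  shows "Nrd H u g \<le> sqrt (\<Sum>h\<in>H. (nv (err R u \<epsilon> g (emult g h)))\<^sup>2)"
proof -
  define X where "X = fitS R u \<epsilon> g"
  have Xs: "X \<in> skew d1" using fitS[OF R u g \<epsilon>] unfolding X_def fitP_def by auto
  have Xc: "blk X \<in> carrier_mat d d" using blk_skew_carrier[OF Xs] .
  have HG: "h \<in> H \<Longrightarrow> h \<in> G" for h using H unfolding okR_def by auto
  have ug: "u g \<in> carrier_vec d" using u g unfolding uG_def by auto
  define v1 where "v1 h = (rot h)\<^sup>T *\<^sub>v u g" for h
  define v2 where "v2 h = (rot h)\<^sup>T *\<^sub>v (blk X *\<^sub>v (pt h - x0))" for h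
  have ph: "pt h - x0 \<in> carrier_vec d" if h: "h \<in> H" for h using pt_carrier[OF HG[OF h]] x0_dim by simp
  have v1c: "v1 h \<in> carrier_vec d" if h: "h \<in> H" for h unfolding v1_def using rotG[OF HG[OF h]] ug by auto
  have v2c: "v2 h \<in> carrier_vec d" if h: "h \<in> H" for h unfolding v2_def using rotG[OF HG[OF h]] Xc ph[OF h] by auto
  have rv1: "rot h *\<^sub>v v1 h = u g" if h: "h \<in> H" for h
    unfolding v1_def using rotG[OF HG[OF h]] ug by (intro mat_cancel) auto
  have rv2: "rot h *\<^sub>v v2 h = blk X *\<^sub>v (pt h - x0)" if h: "h \<in> H" for h
    unfolding v2_def using rotG[OF HG[OF h]] Xc ph[OF h] by (intro mat_cancel) auto
  have v1U: "v1 \<in> U_trans (d1 + d2) H"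
    unfolding U_trans_def d_def[symmetric] using v1c rv1 ug by auto
  have v2U: "v2 \<in> U_rot00 d1 d2 x0 H"
    unfolding U_rot00_def d_def[symmetric] using v2c rv2 Xs unfolding blk_def pt_def by auto
  have vU: "(\<lambda>h. v1 h + v2 h) \<in> U_iso00 d1 d2 x0 H" unfolding U_iso00_def using v1U v2U by auto
  have "Nrd H u g \<le> sqrt (\<Sum>h\<in>H. sqn (u (emult g h) - (v1 h + v2 h)))"
    unfolding Nrd_def using rdist_le[OF vU] by simp
  also have "(\<Sum>h\<in>H. sqn (u (emult g h) - (v1 h + v2 h))) = (\<Sum>h\<in>H. (nv (err R u \<epsilon> g (emult g h)))\<^sup>2)"
  proof (intro sum.cong refl)
    fix h assume h: "h \<in> H"
    have hG: "h \<in> G" using HG[OF h] .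
    have ugh: "u (emult g h) \<in> carrier_vec d" using u g hG unfolding uG_def by auto
    have "rot h *\<^sub>v (u (emult g h) - (v1 h + v2 h)) = rot h *\<^sub>v (u (emult g h) - v1 h - v2 h)"
      using ugh v1c[OF h] v2c[OF h] by (metis minus_add_minus_vec)
    also have "\<dots> = rot h *\<^sub>v u (emult g h) - rot h *\<^sub>v v1 h - rot h *\<^sub>v v2 h"
      using rotG[OF hG] ugh v1c[OF h] v2c[OF h] by (intro mv_minus3) auto
    also have "\<dots> = rot h *\<^sub>v u (emult g h) - u g - blk X *\<^sub>v (pt h - x0)" using rv1[OF h] rv2[OF h] by simp
    finally have e: "rot h *\<^sub>v (u (emult g h) - (v1 h + v2 h)) = rot h *\<^sub>v u (emult g h) - u g - blk X *\<^sub>v (pt h - x0)" .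
    have c: "u (emult g h) - (v1 h + v2 h) \<in> carrier_vec d" using ugh v1c[OF h] v2c[OF h] by auto
    have c2: "rot h *\<^sub>v u (emult g h) - u g - blk X *\<^sub>v (pt h - x0) \<in> carrier_vec d"
      using rotG[OF hG] ugh ug Xc ph[OF h] by auto
    have "nv (u (emult g h) - (v1 h + v2 h)) = nv (rot h *\<^sub>v (u (emult g h) - (v1 h + v2 h)))"
      using rot_nv[OF hG c] by simp
    also have "\<dots> = nv (rot g *\<^sub>v (rot h *\<^sub>v u (emult g h) - u g - blk X *\<^sub>v (pt h - x0)))"
      unfolding e using rot_nv[OF g c2] by simp
    also have "\<dots> = nv (err R u \<epsilon> g (emult g h))" unfolding err_eq[OF R u g hG \<epsilon>] X_def ..
    finally show "sqn (u (emult g h) - (v1 h + v2 h)) = (nv (err R u \<epsilon> g (emult g h)))\<^sup>2"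
      unfolding sqn_nv by simp
  qed
  finally show ?thesis .
qed

end



lemma sq_sum_le: "((a::real) + b)\<^sup>2 \<le> 2 * a\<^sup>2 + 2 * b\<^sup>2"
proof -
  have "0 \<le> (a - b)\<^sup>2" by simp
  then show ?thesis unfolding power2_eq_square by (simp add: algebra_simps)
qed

lemma vid4: assumes "(x::real vec) \<in> carrier_vec n" "b \<in> carrier_vec n" "c \<in> carrier_vec n" "y \<in> carrier_vec n"
  shows "x - b - y = (x - (c + y)) - (b - c)"
  using assms by (intro eq_vecI) auto

context setting begin

lemma Erd_le_Nrd_eps:
  assumes R: "okR R" and e: "eid d \<in> R" and u: "uG u" and g: "g \<in> G" and \<epsilon>: "0 < \<epsilon>"
  shows "Erd R u g \<le> sqrt (2 * (1 + real (card R))) * (Nrd R u g + \<epsilon>)"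
proof -
  have RG: "finite R" "R \<subseteq> G" using R unfolding okR_def by auto
  have "Nrd R u g < Nrd R u g + \<epsilon>" using \<epsilon> by simp
  then obtain w where w: "w \<in> U_iso00 d1 d2 x0 R" and wl: "sqrt (\<Sum>h\<in>R. sqn (u (emult g h) - w h)) < Nrd R u g + \<epsilon>"
    using rdist_lt[OF Uiso_ne[OF R]] unfolding Nrd_def by blast
  from w obtain v1 v2 where wv: "w = (\<lambda>h. v1 h + v2 h)" and v1: "v1 \<in> U_trans (d1 + d2) R"
    and v2: "v2 \<in> U_rot00 d1 d2 x0 R" unfolding U_iso00_def by blast
  from v1 obtain a where a: "a \<in> carrier_vec d" and v1c: "\<forall>k\<in>R. v1 k \<in> carrier_vec d"
    and v1a: "\<forall>k\<in>R. rot k *\<^sub>v v1 k = a" unfolding U_trans_def d_def by auto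
  from v2 obtain X where X: "X \<in> skew d1" and v2c: "\<forall>k\<in>R. v2 k \<in> carrier_vec d"
    and v2X: "\<forall>k\<in>R. rot k *\<^sub>v v2 k = blk X *\<^sub>v (pt k - x0)"
    unfolding U_rot00_def blk_def pt_def d_def by auto
  have ug: "u g \<in> carrier_vec d" using u g unfolding uG_def by auto
  have v2e: "v2 (eid d) = 0\<^sub>v d"
  proof -
    have "rot (eid d) *\<^sub>v v2 (eid d) = blk X *\<^sub>v (x0 - x0)" using v2X e by simp
    also have "x0 - x0 = 0\<^sub>v d" using x0_dim by (intro eq_vecI) auto
    also have "blk X *\<^sub>v 0\<^sub>v d = 0\<^sub>v d" using blk_skew_carrier[OF X] by (rule mv_zero)
    finally show ?thesis using v2c e unfolding rot_eid by simp
  qed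
  have v1e: "v1 (eid d) = a"
  proof -
    have "rot (eid d) *\<^sub>v v1 (eid d) = a" using v1a e by blast
    moreover have "v1 (eid d) \<in> carrier_vec d" using v1c e by blast
    ultimately show ?thesis unfolding rot_eid by simp
  qed
  define \<delta> where "\<delta> k = u (emult g k) - w k" for k
  have \<delta>c: "\<delta> k \<in> carrier_vec d" if k: "k \<in> R" for k
  proof -
    have "u (emult g k) \<in> carrier_vec d" using u g k RG unfolding uG_def by auto
    then show ?thesis unfolding \<delta>_def wv using v1c v2c k by auto
  qed
  have \<delta>e: "\<delta> (eid d) = u g - a" unfolding \<delta>_def wv v2e v1e using g a by simp
  have key: "disc_grad R u g k - v2 k = \<delta> k - (rot k)\<^sup>T *\<^sub>v \<delta> (eid d)" if k: "k \<in> R" for k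
  proof -
    have kG: "k \<in> G" using k RG by auto
    have ugk: "u (emult g k) \<in> carrier_vec d" using u g kG unfolding uG_def by auto
    have v1k: "v1 k = (rot k)\<^sup>T *\<^sub>v a"
    proof -
      have "v1 k = (rot k)\<^sup>T *\<^sub>v (rot k *\<^sub>v v1 k)" using rotG[OF kG] v1c k by (intro mat_cancel[symmetric]) auto
      then show ?thesis using v1a k by simp
    qed
    have m: "(rot k)\<^sup>T *\<^sub>v (u g - a) = (rot k)\<^sup>T *\<^sub>v u g - (rot k)\<^sup>T *\<^sub>v a"
      using rotG[OF kG] ug a by (intro mult_minus_distrib_mat_vec) auto
    show ?thesis unfolding disc_grad_def \<delta>e m unfolding \<delta>_def wv v1k
      by (rule vid4) (use ugk ug a rotG[OF kG] v2c k in auto)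
  qed
  have E1: "Erd R u g \<le> sqrt (\<Sum>k\<in>R. sqn (disc_grad R u g k - v2 k))"
    unfolding Erd_def using rdist_le[OF v2] .
  have E2: "sqn (disc_grad R u g k - v2 k) \<le> 2 * (nv (\<delta> k))\<^sup>2 + 2 * (nv (\<delta> (eid d)))\<^sup>2" if k: "k \<in> R" for k
  proof -
    have kG: "k \<in> G" using k RG by auto
    have "nv (disc_grad R u g k - v2 k) \<le> nv (\<delta> k) + nv ((rot k)\<^sup>T *\<^sub>v \<delta> (eid d))"
      unfolding key[OF k] using \<delta>c[OF k] \<delta>c[OF e] rotG[OF kG] by (intro nv_diff) auto
    also have "nv ((rot k)\<^sup>T *\<^sub>v \<delta> (eid d)) = nv (\<delta> (eid d))" using rotT_nv[OF kG \<delta>c[OF e]] .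
    finally have "nv (disc_grad R u g k - v2 k) \<le> nv (\<delta> k) + nv (\<delta> (eid d))" .
    then have "(nv (disc_grad R u g k - v2 k))\<^sup>2 \<le> (nv (\<delta> k) + nv (\<delta> (eid d)))\<^sup>2"
      by (intro power_mono) auto
    also have "\<dots> \<le> 2 * (nv (\<delta> k))\<^sup>2 + 2 * (nv (\<delta> (eid d)))\<^sup>2"
      by (rule sq_sum_le)
    finally show ?thesis unfolding sqn_nv .
  qed
  define Q where "Q = (\<Sum>k\<in>R. (nv (\<delta> k))\<^sup>2)"
  have E3: "(\<Sum>k\<in>R. sqn (disc_grad R u g k - v2 k)) \<le> 2 * Q + 2 * real (card R) * (nv (\<delta> (eid d)))\<^sup>2"
  proof -
    have "(\<Sum>k\<in>R. sqn (disc_grad R u g k - v2 k)) \<le> (\<Sum>k\<in>R. 2 * (nv (\<delta> k))\<^sup>2 + 2 * (nv (\<delta> (eid d)))\<^sup>2)"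
      using E2 by (rule sum_mono)
    also have "\<dots> = 2 * Q + 2 * real (card R) * (nv (\<delta> (eid d)))\<^sup>2"
      unfolding Q_def sum.distrib sum_distrib_left[symmetric] by simp
    finally show ?thesis .
  qed
  have E4: "(nv (\<delta> (eid d)))\<^sup>2 \<le> Q" unfolding Q_def using RG e by (intro member_le_sum) auto
  have E5: "2 * Q + 2 * real (card R) * (nv (\<delta> (eid d)))\<^sup>2 \<le> 2 * (1 + real (card R)) * Q"
  proof -
    have "2 * real (card R) * (nv (\<delta> (eid d)))\<^sup>2 \<le> 2 * real (card R) * Q"
      using E4 by (intro mult_left_mono) auto
    then show ?thesis by (simp add: algebra_simps)
  qed
  have E6: "sqrt (\<Sum>k\<in>R. sqn (disc_grad R u g k - v2 k)) \<le> sqrt (2 * (1 + real (card R))) * sqrt Q"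
    unfolding real_sqrt_mult[symmetric] using E3 E5 by (intro real_sqrt_le_mono) linarith
  have E7: "sqrt Q = sqrt (\<Sum>h\<in>R. sqn (u (emult g h) - w h))"
    unfolding Q_def \<delta>_def sqn_nv ..
  have E8: "sqrt (2 * (1 + real (card R))) * sqrt Q \<le> sqrt (2 * (1 + real (card R))) * (Nrd R u g + \<epsilon>)"
    unfolding E7 using wl by (intro mult_left_mono) auto
  show ?thesis using E1 E6 E8 by linarith
qed

lemma Erd_le_Nrd:
  assumes R: "okR R" and e: "eid d \<in> R" and u: "uG u" and g: "g \<in> G"
  shows "Erd R u g \<le> sqrt (2 * (1 + real (card R))) * Nrd R u g"
  by (rule le_eps[of _ _ "sqrt (2 * (1 + real (card R)))"])
     (use Erd_le_Nrd_eps[OF R e u g] in \<open>simp add: algebra_simps\<close>)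

end



context setting begin

definition TN :: "nat \<Rightarrow> euc set" where "TN N = Tpow d T N"

definition goodN :: "nat \<Rightarrow> bool" where "goodN N \<longleftrightarrow> 1 \<le> N \<and> m0 dvd N"

lemma normalN: "goodN N \<Longrightarrow> normal_sub_E d (TN N) G"
  using M_char unfolding goodN_def TN_def by auto

lemma TN_G: "goodN N \<Longrightarrow> t \<in> TN N \<Longrightarrow> t \<in> G"
  using normalN unfolding normal_sub_E_def by auto
lemma TN_eid: "goodN N \<Longrightarrow> eid d \<in> TN N"
  using normalN unfolding normal_sub_E_def subgroup_E_def by auto
lemma TN_inv: "goodN N \<Longrightarrow> t \<in> TN N \<Longrightarrow> einv t \<in> TN N"
  using normalN unfolding normal_sub_E_def subgroup_E_def by auto
lemma TN_conj: "goodN N \<Longrightarrow> g \<in> G \<Longrightarrow> t \<in> TN N \<Longrightarrow> emult (emult g t) (einv g) \<in> TN N"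
  using normalN unfolding normal_sub_E_def by auto

lemma CN: assumes "goodN N"
  shows "C N \<subseteq> G" "finite (C N)" "\<And>g. g \<in> G \<Longrightarrow> \<exists>!c\<in>C N. \<exists>t\<in>TN N. g = emult c t"
  using C_rep assms unfolding goodN_def TN_def by auto

lemma solve_right: assumes "x \<in> G" "p \<in> G" "emult x p = y" shows "x = emult y (einv p)"
proof -
  have "emult y (einv p) = emult x (emult p (einv p))" using assms assocG[of x p "einv p"] by simp
  then show ?thesis using assms by simp
qed

lemma per_shift:
  assumes N: "goodN N" and per: "periodic G (TN N) u" and g: "g \<in> G" and t: "t \<in> TN N" and k: "k \<in> G"
  shows "u (emult (emult g t) k) = u (emult g k)"
proof -
  have tG: "t \<in> G" using TN_G[OF N t] .
  define t' where "t' = emult (emult (einv k) t) k"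
  have t': "t' \<in> TN N" unfolding t'_def using TN_conj[OF N einv_G[OF k] t] k by simp
  have t'G: "t' \<in> G" using TN_G[OF N t'] .
  have "emult (emult g k) t' = emult g (emult k t')" using assocG g k t'G by simp
  also have "emult k t' = emult (emult k (emult (einv k) t)) k"
    unfolding t'_def using assocG k tG by simp
  also have "emult k (emult (einv k) t) = t" using assocG[of k "einv k" t] k tG by simp
  also have "emult g (emult t k) = emult (emult g t) k" using assocG g tG k by simp
  finally have e: "emult (emult g k) t' = emult (emult g t) k" .
  have "u (emult (emult g k) t') = u (emult g k)" using per g k t' unfolding periodic_def by simp
  then show ?thesis using e by simp
qed

lemma Erd_per:
  assumes N: "goodN N" and per: "periodic G (TN N) u" and R: "okR R" and g: "g \<in> G" and t: "t \<in> TN N"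
  shows "Erd R u (emult g t) = Erd R u g"
  unfolding Erd_def
proof (rule rdist_cong)
  fix h assume h: "h \<in> R"
  have hG: "h \<in> G" using h R unfolding okR_def by auto
  have "u (emult g t) = u g" using per g t unfolding periodic_def by simp
  then show "disc_grad R u (emult g t) h = disc_grad R u g h"
    unfolding disc_grad_def using per_shift[OF N per g t hG] by simp
qed

lemma Nrd_per:
  assumes N: "goodN N" and per: "periodic G (TN N) u" and R: "okR R" and g: "g \<in> G" and t: "t \<in> TN N"
  shows "Nrd R u (emult g t) = Nrd R u g"
  unfolding Nrd_def
proof (rule rdist_cong)
  fix h assume h: "h \<in> R"
  have hG: "h \<in> G" using h R unfolding okR_def by auto
  show "u (emult (emult g t) h) = u (emult g h)" using per_shift[OF N per g t hG] .
qed

definition rep :: "nat \<Rightarrow> euc \<Rightarrow> euc" where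
  "rep N x = (THE c. c \<in> C N \<and> (\<exists>t\<in>TN N. x = emult c t))"

lemma rep: assumes N: "goodN N" and x: "x \<in> G"
  shows "rep N x \<in> C N" "\<exists>t\<in>TN N. x = emult (rep N x) t"
proof -
  have "rep N x \<in> C N \<and> (\<exists>t\<in>TN N. x = emult (rep N x) t)"
    unfolding rep_def by (rule theI') (use CN(3)[OF N x] in auto)
  then show "rep N x \<in> C N" "\<exists>t\<in>TN N. x = emult (rep N x) t" by auto
qed

lemma rep_unique: assumes N: "goodN N" and x: "x \<in> G" and c: "c \<in> C N" and t: "t \<in> TN N" and e: "x = emult c t"
  shows "rep N x = c"
  unfolding rep_def by (rule the1_equality) (use CN(3)[OF N x] c t e in auto)

lemma sum_shift:
  assumes N: "goodN N" and f: "\<And>g t. g \<in> G \<Longrightarrow> t \<in> TN N \<Longrightarrow> f (emult g t) = f g" and p: "p \<in> G"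
  shows "(\<Sum>g\<in>C N. f (emult g p)) = (\<Sum>g\<in>C N. f g)"
proof -
  note CN = CN[OF N]
  define \<sigma> where "\<sigma> g = rep N (emult g p)" for g
  have \<sigma>C: "\<sigma> g \<in> C N" if g: "g \<in> C N" for g
  proof -
    have "emult g p \<in> G" using g CN(1) p by auto
    then show ?thesis unfolding \<sigma>_def by (rule rep(1)[OF N])
  qed
  have fs: "f (emult g p) = f (\<sigma> g)" if g: "g \<in> C N" for g
  proof -
    have gp: "emult g p \<in> G" using g CN(1) p by auto
    obtain t where t: "t \<in> TN N" and e: "emult g p = emult (\<sigma> g) t" using rep(2)[OF N gp] unfolding \<sigma>_def by blast
    have "\<sigma> g \<in> G" using \<sigma>C[OF g] CN(1) by auto
    then show ?thesis unfolding e by (rule f[OF _ t])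
  qed
  have inj: "inj_on \<sigma> (C N)"
  proof (rule inj_onI)
    fix g1 g2 assume g1: "g1 \<in> C N" and g2: "g2 \<in> C N" and eq: "\<sigma> g1 = \<sigma> g2"
    define c where "c = \<sigma> g1"
    have cG: "c \<in> G" unfolding c_def using \<sigma>C[OF g1] CN(1) by auto
    define q where "q = emult c (einv p)"
    have qG: "q \<in> G" unfolding q_def using cG p by simp
    have main: "\<exists>s\<in>TN N. q = emult gi s" if gi: "gi \<in> C N" and ci: "\<sigma> gi = c" for gi
    proof -
      have giG: "gi \<in> G" using gi CN(1) by auto
      have gp: "emult gi p \<in> G" using giG p by simp
      obtain t where t: "t \<in> TN N" and e: "emult gi p = emult c t"
        using rep(2)[OF N gp] ci unfolding \<sigma>_def by blast
      have tG: "t \<in> G" using TN_G[OF N t] .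
      have g_eq: "gi = emult (emult c t) (einv p)" using solve_right[OF giG p e] .
      define s where "s = emult (emult p t) (einv p)"
      have s: "s \<in> TN N" unfolding s_def using TN_conj[OF N p t] .
      have sG: "s \<in> G" using TN_G[OF N s] .
      have "emult q s = emult c (emult (einv p) s)" unfolding q_def using assocG cG p sG by simp
      also have "emult (einv p) s = emult (emult (einv p) (emult p t)) (einv p)"
        unfolding s_def using assocG p tG by simp
      also have "emult (einv p) (emult p t) = t" using assocG[of "einv p" p t] p tG by simp
      also have "emult c (emult t (einv p)) = emult (emult c t) (einv p)" using assocG cG tG p by simp
      finally have "emult q s = gi" using g_eq by simp
      then have "q = emult gi (einv s)" using solve_right[OF qG sG] by simp
      then show ?thesis using TN_inv[OF N s] by blast
    qed
    have "\<exists>!c'\<in>C N. \<exists>t\<in>TN N. q = emult c' t" using CN(3)[OF qG] .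
    moreover have "\<exists>s\<in>TN N. q = emult g1 s" using main[OF g1] unfolding c_def by simp
    moreover have "\<exists>s\<in>TN N. q = emult g2 s" using main[OF g2] eq unfolding c_def by simp
    ultimately show "g1 = g2" using g1 g2 by blast
  qed
  have img: "\<sigma> ` C N = C N" using endo_inj_surj[OF CN(2) _ inj] \<sigma>C by blast
  have "(\<Sum>g\<in>C N. f (emult g p)) = (\<Sum>g\<in>C N. f (\<sigma> g))" using fs by (rule sum.cong[OF refl])
  also have "\<dots> = (\<Sum>g\<in>\<sigma> ` C N. f g)" using sum.reindex[OF inj, of f] by simp
  also have "\<dots> = (\<Sum>g\<in>C N. f g)" unfolding img ..
  finally show ?thesis .
qed

lemma sum_rep:
  assumes N: "goodN N" and f: "\<And>g t. g \<in> G \<Longrightarrow> t \<in> TN N \<Longrightarrow> f (emult g t) = f g"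
    and z: "\<And>c. c \<in> C N \<Longrightarrow> f c = 0" and g: "g \<in> G"
  shows "f g = 0"
proof -
  obtain t where t: "t \<in> TN N" and e: "g = emult (rep N g) t" using rep(2)[OF N g] by blast
  have "f g = f (rep N g)" using f[OF _ t, of "rep N g"] rep(1)[OF N g] CN(1)[OF N] e by auto
  then show ?thesis using z rep(1)[OF N g] by simp
qed

end



lemma cs_sum: assumes "finite I" shows "(\<Sum>i\<in>I. a i)\<^sup>2 \<le> real (card I) * (\<Sum>i\<in>I. (a i)\<^sup>2)"
proof -
  have "\<bar>\<Sum>i\<in>I. a i\<bar> \<le> (\<Sum>i\<in>I. \<bar>a i\<bar> * \<bar>1\<bar>)" by (simp add: sum_abs)
  also have "\<dots> \<le> L2_set a I * L2_set (\<lambda>_. 1) I" by (rule L2_set_mult_ineq)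
  also have "L2_set (\<lambda>_. 1) I = sqrt (real (card I))" by (simp add: L2_set_constant)
  finally have "\<bar>\<Sum>i\<in>I. a i\<bar> \<le> L2_set a I * sqrt (real (card I))" .
  then have "\<bar>\<Sum>i\<in>I. a i\<bar>\<^sup>2 \<le> (L2_set a I * sqrt (real (card I)))\<^sup>2"
    by (intro power_mono) auto
  also have "\<dots> = (\<Sum>i\<in>I. (a i)\<^sup>2) * real (card I)"
    unfolding power_mult_distrib L2_set_def by (simp add: sum_nonneg)
  finally show ?thesis by (simp add: ac_simps)
qed

lemma cs_list: "(sum_list (map f P))\<^sup>2 \<le> real (length P) * sum_list (map (\<lambda>p. (f p)\<^sup>2) P)"
proof -
  have e1: "sum_list (map f P) = (\<Sum>i\<in>{0..<length P}. f (P ! i))"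
    by (simp add: sum_list_sum_nth)
  have e2: "sum_list (map (\<lambda>p. (f p)\<^sup>2) P) = (\<Sum>i\<in>{0..<length P}. (f (P ! i))\<^sup>2)"
    by (simp add: sum_list_sum_nth)
  show ?thesis unfolding e1 e2 using cs_sum[of "{0..<length P}" "\<lambda>i. f (P ! i)"] by simp
qed

lemma sum_sum_list_swap: "(\<Sum>g\<in>A. sum_list (map (F g) P)) = sum_list (map (\<lambda>p. \<Sum>g\<in>A. F g p) P)"
  by (induction P) (auto simp: sum.distrib)

lemma le_eps2: assumes K: "0 \<le> K" and h: "\<And>\<epsilon>. 0 < \<epsilon> \<Longrightarrow> \<epsilon> \<le> 1 \<Longrightarrow> (x::real) \<le> a + K * \<epsilon>" shows "x \<le> a"
proof (rule le_eps[of x a K])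
  fix \<epsilon> :: real assume e: "0 < \<epsilon>"
  have "x \<le> a + K * min \<epsilon> 1" using h[of "min \<epsilon> 1"] e by simp
  also have "\<dots> \<le> a + K * \<epsilon>" using K e by (intro add_left_mono mult_left_mono) auto
  finally show "x \<le> a + K * \<epsilon>" .
qed

lemma sq_le_of_le_sqrt: assumes "0 \<le> (x::real)" "x \<le> sqrt y" "0 \<le> y" shows "x\<^sup>2 \<le> y"
proof -
  have "x\<^sup>2 \<le> (sqrt y)\<^sup>2" using assms by (intro power_mono) auto
  then show ?thesis using assms by simp
qed

context setting begin

lemma P2_facts:
  assumes P2: "property2 d G x0 R"
  shows "okR R" "eid d \<in> R" "\<And>h. h \<in> G \<Longrightarrow> Qp R h"
proof -
  obtain Rp Rpp where R: "finite R" "R \<subseteq> G" and Rp: "eid d \<in> Rp" "Rp \<subseteq> G" "gen_E d Rp = G"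
    and P1: "property1 d G x0 Rpp" and inc: "{emult g h | g h. g \<in> Rp \<and> h \<in> Rpp} \<subseteq> R"
    using P2 unfolding property2_def by blast
  have Rpp: "finite Rpp" "Rpp \<subseteq> G" "eid d \<in> Rpp" using P1 unfolding property1_def by auto
  show okR: "okR R" unfolding okR_def using R by auto
  have inc': "g \<in> Rp \<Longrightarrow> h \<in> Rpp \<Longrightarrow> emult g h \<in> R" for g h using inc by blast
  show "eid d \<in> R" using inc'[OF Rp(1) Rpp(3)] by simp
  obtain \<Lambda> where sp: "spanprop Rpp \<Lambda>" using spanprop_exists[OF P1] by blast
  have base: "Qp R r" if r: "r \<in> Rp" for r
  proof (rule Qp_base[OF okR _ _ _ _ sp Rpp(1,2)])
    show rG: "r \<in> G" using r Rp by auto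
    show "\<And>k. k \<in> Rpp \<Longrightarrow> emult r k \<in> R" using inc' r by blast
    show "\<And>k. k \<in> Rpp \<Longrightarrow> k \<in> R" using inc'[OF Rp(1)] Rpp by fastforce
    show "r \<in> R" using inc'[OF r Rpp(3)] rG by simp
  qed
  show "\<And>h. h \<in> G \<Longrightarrow> Qp R h" using Qp_all[OF okR Rp(2,3) base] by blast
qed

lemma main_ineq:
  assumes P2: "property2 d G x0 R" and H: "okR H"
  shows "\<exists>K\<ge>0. \<forall>u N. uG u \<longrightarrow> goodN N \<longrightarrow> periodic G (TN N) u \<longrightarrow>
     (\<Sum>g\<in>C N. (Nrd H u g)\<^sup>2) \<le> K * (\<Sum>g\<in>C N. (Erd R u g)\<^sup>2)"
proof -
  note PF = P2_facts[OF P2]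
  have HG: "finite H" "H \<subseteq> G" using H unfolding okR_def by auto
  obtain Cc P where Cc: "0 \<le> Cc" "set P \<subseteq> G" and B: "\<And>u \<epsilon> g h. uG u \<Longrightarrow> 0 < \<epsilon> \<Longrightarrow> g \<in> G \<Longrightarrow> h \<in> H \<Longrightarrow>
      nv (err R u \<epsilon> g (emult g h)) \<le> Cc * sl R u \<epsilon> g P"
    using Qfin[OF PF(1) PF(3) HG] by blast
  define m where "m = real (card H)"
  define n where "n = real (length P)"
  define K where "K = 2 * m * Cc\<^sup>2 * n\<^sup>2"
  have m0: "0 \<le> m" and n0: "0 \<le> n" unfolding m_def n_def by auto
  have K0: "0 \<le> K" unfolding K_def using m0 n0 by simp
  show ?thesis
  proof (intro exI[of _ K] conjI allI impI K0)
    fix u N assume u: "uG u" and N: "goodN N" and per: "periodic G (TN N) u"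
    have CNG: "C N \<subseteq> G" "finite (C N)" using CN[OF N] by auto
    define cn where "cn = real (card (C N))"
    define ES where "ES = (\<Sum>g\<in>C N. (Erd R u g)\<^sup>2)"
    show "(\<Sum>g\<in>C N. (Nrd H u g)\<^sup>2) \<le> K * ES"
    proof (rule le_eps2[of "2 * m * Cc\<^sup>2 * n\<^sup>2 * cn"])
      show "0 \<le> 2 * m * Cc\<^sup>2 * n\<^sup>2 * cn" using m0 n0 unfolding cn_def by simp
      fix \<epsilon> :: real assume e0: "0 < \<epsilon>" and e1: "\<epsilon> \<le> 1"
      have pw: "(Nrd H u g)\<^sup>2 \<le> m * Cc\<^sup>2 * n * sum_list (map (\<lambda>p. 2 * (Erd R u (emult g p))\<^sup>2 + 2 * \<epsilon>) P)"
        if g: "g \<in> G" for g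
      proof -
        have "(Nrd H u g)\<^sup>2 \<le> (\<Sum>h\<in>H. (nv (err R u \<epsilon> g (emult g h)))\<^sup>2)"
          by (rule sq_le_of_le_sqrt[OF Nrd_nonneg[OF H] Nrd_le_err[OF PF(1) H u g e0]]) (auto intro: sum_nonneg)
        also have "\<dots> \<le> (\<Sum>h\<in>H. (Cc * sl R u \<epsilon> g P)\<^sup>2)"
          using B[OF u e0 g] by (intro sum_mono power_mono) auto
        also have "\<dots> = m * (Cc * sl R u \<epsilon> g P)\<^sup>2" unfolding m_def by simp
        also have "(Cc * sl R u \<epsilon> g P)\<^sup>2 = Cc\<^sup>2 * (sl R u \<epsilon> g P)\<^sup>2" by (simp add: power_mult_distrib)
        also have "(sl R u \<epsilon> g P)\<^sup>2 \<le> n * sum_list (map (\<lambda>p. (eta R u \<epsilon> (emult g p))\<^sup>2) P)"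
          unfolding sl_def n_def by (rule cs_list)
        also have "sum_list (map (\<lambda>p. (eta R u \<epsilon> (emult g p))\<^sup>2) P)
            \<le> sum_list (map (\<lambda>p. 2 * (Erd R u (emult g p))\<^sup>2 + 2 * \<epsilon>) P)"
        proof (rule sum_list_mono)
          fix p
          have "(eta R u \<epsilon> (emult g p))\<^sup>2 \<le> 2 * (Erd R u (emult g p))\<^sup>2 + 2 * \<epsilon>\<^sup>2"
            unfolding eta_def by (rule sq_sum_le)
          also have "\<epsilon>\<^sup>2 \<le> \<epsilon>" using e0 e1 by (simp add: power2_eq_square mult_left_le)
          finally show "(eta R u \<epsilon> (emult g p))\<^sup>2 \<le> 2 * (Erd R u (emult g p))\<^sup>2 + 2 * \<epsilon>" by simp
        qed
        finally show ?thesis using m0 n0 by (simp add: mult_left_mono mult.assoc)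
      qed
      have "(\<Sum>g\<in>C N. (Nrd H u g)\<^sup>2)
          \<le> (\<Sum>g\<in>C N. m * Cc\<^sup>2 * n * sum_list (map (\<lambda>p. 2 * (Erd R u (emult g p))\<^sup>2 + 2 * \<epsilon>) P))"
        using pw CNG by (intro sum_mono) auto
      also have "\<dots> = m * Cc\<^sup>2 * n * sum_list (map (\<lambda>p. \<Sum>g\<in>C N. 2 * (Erd R u (emult g p))\<^sup>2 + 2 * \<epsilon>) P)"
        by (simp add: sum_distrib_left[symmetric] sum_sum_list_swap)
      also have "sum_list (map (\<lambda>p. \<Sum>g\<in>C N. 2 * (Erd R u (emult g p))\<^sup>2 + 2 * \<epsilon>) P)
          = sum_list (map (\<lambda>p. 2 * ES + 2 * \<epsilon> * cn) P)"
      proof (rule arg_cong[where f=sum_list], rule map_cong[OF refl])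
        fix p assume p: "p \<in> set P"
        have pG: "p \<in> G" using p Cc by auto
        have "(\<Sum>g\<in>C N. (Erd R u (emult g p))\<^sup>2) = ES"
          unfolding ES_def
          by (rule sum_shift[OF N _ pG, of "\<lambda>g. (Erd R u g)\<^sup>2"]) (simp add: Erd_per[OF N per PF(1)])
        then show "(\<Sum>g\<in>C N. 2 * (Erd R u (emult g p))\<^sup>2 + 2 * \<epsilon>) = 2 * ES + 2 * \<epsilon> * cn"
          unfolding cn_def by (simp add: sum.distrib sum_distrib_left[symmetric])
      qed
      also have "sum_list (map (\<lambda>p. 2 * ES + 2 * \<epsilon> * cn) P) = n * (2 * ES + 2 * \<epsilon> * cn)"
        unfolding n_def by (simp add: sum_list_triv)
      also have "m * Cc\<^sup>2 * n * (n * (2 * ES + 2 * \<epsilon> * cn)) = K * ES + 2 * m * Cc\<^sup>2 * n\<^sup>2 * cn * \<epsilon>"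
        unfolding K_def by (simp add: algebra_simps power2_eq_square)
      finally show "(\<Sum>g\<in>C N. (Nrd H u g)\<^sup>2) \<le> K * ES + 2 * m * Cc\<^sup>2 * n\<^sup>2 * cn * \<epsilon>" .
    qed
  qed
qed

end



lemma eq_eps: assumes "\<And>\<epsilon>. 0 < \<epsilon> \<Longrightarrow> \<bar>(a::real) - b\<bar> \<le> K * \<epsilon>" shows "a = b"
proof -
  have "\<bar>a - b\<bar> \<le> 0 + K * \<epsilon>" if "0 < \<epsilon>" for \<epsilon> using assms[OF that] by simp
  then have "\<bar>a - b\<bar> \<le> 0" by (rule le_eps)
  then show ?thesis by simp
qed

context setting begin

definition Fv :: "(euc \<Rightarrow> real vec) \<Rightarrow> euc \<Rightarrow> real vec" where
  "Fv u h = rot h *\<^sub>v u h - u (eid d)"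

definition Me :: "euc set \<Rightarrow> (euc \<Rightarrow> real vec) \<Rightarrow> real \<Rightarrow> real mat" where
  "Me R u \<epsilon> = blk (fitS R u \<epsilon> (eid d))"

lemma Fv_carrier: "uG u \<Longrightarrow> h \<in> G \<Longrightarrow> Fv u h \<in> carrier_vec d"
  unfolding Fv_def uG_def using rotG(1)[of h] by auto

lemma Me_skew: "okR R \<Longrightarrow> uG u \<Longrightarrow> 0 < \<epsilon> \<Longrightarrow> fitS R u \<epsilon> (eid d) \<in> skew d1"
  using fitS[of R u "eid d" \<epsilon>] unfolding fitP_def by auto

lemma Me_carrier: "okR R \<Longrightarrow> uG u \<Longrightarrow> 0 < \<epsilon> \<Longrightarrow> Me R u \<epsilon> \<in> carrier_mat d d"
  unfolding Me_def using Me_skew blk_skew_carrier by blast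

lemma exact_bound:
  assumes P2: "property2 d G x0 R" and u: "uG u" and Z: "\<And>g. g \<in> G \<Longrightarrow> Erd R u g = 0" and h: "h \<in> G"
  shows "\<exists>Kh\<ge>0. \<forall>\<epsilon>>0. nv (Fv u h - Me R u \<epsilon> *\<^sub>v (pt h - x0)) \<le> Kh * \<epsilon>"
proof -
  note PF = P2_facts[OF P2]
  obtain Cc P where Cc: "0 \<le> Cc" "set P \<subseteq> G" and B: "\<And>\<epsilon>. 0 < \<epsilon> \<Longrightarrow>
      nv (err R u \<epsilon> (eid d) (emult (eid d) h)) \<le> Cc * sl R u \<epsilon> (eid d) P"
    using PF(3)[OF h] u unfolding Qp_def by fastforce
  show ?thesis
  proof (intro exI[of _ "Cc * real (length P)"] conjI allI impI)
    show "0 \<le> Cc * real (length P)" using Cc by simp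
    fix \<epsilon> :: real assume e: "0 < \<epsilon>"
    have "sl R u \<epsilon> (eid d) P = sum_list (map (\<lambda>p. \<epsilon>) P)"
      unfolding sl_def eta_def
      by (rule arg_cong[where f=sum_list], rule map_cong[OF refl]) (use Cc Z in auto)
    also have "\<dots> = real (length P) * \<epsilon>" by (simp add: sum_list_triv)
    finally have slv: "sl R u \<epsilon> (eid d) P = real (length P) * \<epsilon>" .
    have ex: "rot h *\<^sub>v u h - u (eid d) - blk (fitS R u \<epsilon> (eid d)) *\<^sub>v (pt h - x0) \<in> carrier_vec d"
      using Fv_carrier[OF u h] Me_carrier[OF PF(1) u e] pt_carrier[OF h] x0_dim
      unfolding Fv_def Me_def by auto
    have "err R u \<epsilon> (eid d) (emult (eid d) h)
        = rot h *\<^sub>v u h - u (eid d) - blk (fitS R u \<epsilon> (eid d)) *\<^sub>v (pt h - x0)"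
      using err_eq[OF PF(1) u eid_G h e] ex h unfolding rot_eid by simp
    then show "nv (Fv u h - Me R u \<epsilon> *\<^sub>v (pt h - x0)) \<le> Cc * real (length P) * \<epsilon>"
      using B[OF e] unfolding slv Fv_def Me_def by (simp add: mult.assoc)
  qed
qed

end



context setting begin

lemma blk_index: assumes X: "X \<in> carrier_mat d1 d1" and i: "i < d" and j: "j < d"
  shows "blk X $$ (i, j) = (if i < d1 \<and> j < d1 then X $$ (i, j) else 0)"
  using X i j unfolding blk_def d_def by (auto simp: index_mat_four_block)

lemma mv_DD: assumes A: "(A::real mat) \<in> carrier_mat d d" and z: "z \<in> DD" and i: "i < d"
  shows "(A *\<^sub>v z) $ i = (\<Sum>l\<in>{d - daff..<d}. A $$ (i, l) * z $ l)"
proof -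
  have zc: "z \<in> carrier_vec d" using DD_carrier[OF z] .
  have "(A *\<^sub>v z) $ i = (\<Sum>l<d. A $$ (i, l) * z $ l)" using mv_expand[OF A zc i] .
  also have "\<dots> = (\<Sum>l\<in>{d - daff..<d}. A $$ (i, l) * z $ l)"
  proof (rule sum.mono_neutral_right)
    show "\<forall>l\<in>{..<d} - {d - daff..<d}. A $$ (i, l) * z $ l = 0" using z unfolding DD_def by auto
  qed auto
  finally show ?thesis .
qed

lemma skew_entry: assumes "X \<in> skew d1" "i < d1" "j < d1" shows "X $$ (j, i) = - X $$ (i, j)"
proof -
  have c: "X \<in> carrier_mat d1 d1" and t: "X\<^sup>T = - X" using assms unfolding skew_def by auto
  have "X\<^sup>T $$ (i, j) = (- X) $$ (i, j)" using t by simp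
  then show ?thesis using c assms by simp
qed

lemma exact_fit:
  assumes P2: "property2 d G x0 R" and u: "uG u" and Z: "\<And>g. g \<in> G \<Longrightarrow> Erd R u g = 0"
  shows "\<exists>S0\<in>skew d1. \<forall>h\<in>G. Fv u h = blk S0 *\<^sub>v (pt h - x0)"
proof -
  note PF = P2_facts[OF P2]
  obtain Rpp where P1: "property1 d G x0 Rpp" using P2 unfolding property2_def by blast
  have Rpp: "finite Rpp" "Rpp \<subseteq> G" using P1 unfolding property1_def by auto
  define Kb where "Kb h = (SOME Kh. 0 \<le> Kh \<and> (\<forall>\<epsilon>>0. nv (Fv u h - Me R u \<epsilon> *\<^sub>v (pt h - x0)) \<le> Kh * \<epsilon>))" for h
  have Kb: "0 \<le> Kb h \<and> (\<forall>\<epsilon>>0. nv (Fv u h - Me R u \<epsilon> *\<^sub>v (pt h - x0)) \<le> Kb h * \<epsilon>)" if h: "h \<in> G" for h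
    unfolding Kb_def by (rule someI_ex) (use exact_bound[OF P2 u Z h] in auto)
  define J where "J = {d - daff..<d}"
  define cc where "cc j = (SOME c. \<forall>i<d. unit_vec d j $ i = (\<Sum>r\<in>Rpp. c r * (pt r - x0) $ i))" for j
  have cc: "\<forall>i<d. unit_vec d j $ i = (\<Sum>r\<in>Rpp. cc j r * (pt r - x0) $ i)" if "j \<in> J" for j
    unfolding cc_def by (rule someI_ex[OF unit_comb[OF P1]]) (use that J_def in auto)
  define m where "m j = vec d (\<lambda>i. \<Sum>r\<in>Rpp. cc j r * Fv u r $ i)" for j
  define K0 where "K0 = (\<Sum>r\<in>Rpp. Kb r)"
  define Cj where "Cj j = (\<Sum>r\<in>Rpp. \<bar>cc j r\<bar>)" for j
  have K0: "0 \<le> K0" and KbK0: "r \<in> Rpp \<Longrightarrow> Kb r \<le> K0" for r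
    unfolding K0_def using Kb Rpp by (auto intro!: sum_nonneg member_le_sum)
  have Cj0: "0 \<le> Cj j" for j unfolding Cj_def by (auto intro: sum_nonneg)
  have wc: "pt r - x0 \<in> carrier_vec d" if "r \<in> Rpp" for r
  proof -
    have "pt r \<in> carrier_vec d" using pt_carrier Rpp that by blast
    then show ?thesis using x0_dim by simp
  qed
  have claimA: "\<bar>Me R u \<epsilon> $$ (i, j) - m j $ i\<bar> \<le> Cj j * K0 * \<epsilon>" if j: "j \<in> J" and i: "i < d" and e: "0 < \<epsilon>" for i j \<epsilon>
  proof -
    have Mc: "Me R u \<epsilon> \<in> carrier_mat d d" using Me_carrier[OF PF(1) u e] .
    have jd: "j < d" using j unfolding J_def by auto
    have "Me R u \<epsilon> $$ (i, j) = (Me R u \<epsilon> *\<^sub>v unit_vec d j) $ i"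
      using Mc i jd by simp
    also have "\<dots> = (\<Sum>r\<in>Rpp. cc j r * (Me R u \<epsilon> *\<^sub>v (pt r - x0)) $ i)"
      by (rule lin_comb[OF Mc _ wc]) (use cc[OF j] jd i in auto)
    finally have e1: "Me R u \<epsilon> $$ (i, j) = (\<Sum>r\<in>Rpp. cc j r * (Me R u \<epsilon> *\<^sub>v (pt r - x0)) $ i)" .
    have e2: "m j $ i = (\<Sum>r\<in>Rpp. cc j r * Fv u r $ i)" unfolding m_def using i by simp
    have "\<bar>Me R u \<epsilon> $$ (i, j) - m j $ i\<bar> = \<bar>\<Sum>r\<in>Rpp. cc j r * ((Me R u \<epsilon> *\<^sub>v (pt r - x0)) $ i - Fv u r $ i)\<bar>"
      unfolding e1 e2 by (simp add: sum_subtractf right_diff_distrib)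
    also have "\<dots> \<le> (\<Sum>r\<in>Rpp. \<bar>cc j r\<bar> * \<bar>(Me R u \<epsilon> *\<^sub>v (pt r - x0)) $ i - Fv u r $ i\<bar>)"
      by (rule order_trans[OF sum_abs]) (simp add: abs_mult)
    also have "\<dots> \<le> (\<Sum>r\<in>Rpp. \<bar>cc j r\<bar> * (K0 * \<epsilon>))"
    proof (intro sum_mono mult_left_mono)
      fix r assume r: "r \<in> Rpp"
      have rG: "r \<in> G" using r Rpp by auto
      have vc: "Fv u r - Me R u \<epsilon> *\<^sub>v (pt r - x0) \<in> carrier_vec d"
        using Fv_carrier[OF u rG] Mc wc[OF r] by auto
      have "\<bar>(Me R u \<epsilon> *\<^sub>v (pt r - x0)) $ i - Fv u r $ i\<bar> = \<bar>(Fv u r - Me R u \<epsilon> *\<^sub>v (pt r - x0)) $ i\<bar>"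
        using Fv_carrier[OF u rG] Mc wc[OF r] i by simp
      also have "\<dots> \<le> nv (Fv u r - Me R u \<epsilon> *\<^sub>v (pt r - x0))"
      proof (rule nv_coord)
        show "i < dim_vec (Fv u r - Me R u \<epsilon> *\<^sub>v (pt r - x0))" using vc i by (simp only: carrier_vec_def mem_Collect_eq)
      qed
      also have "\<dots> \<le> Kb r * \<epsilon>" using Kb[OF rG] e by auto
      also have "\<dots> \<le> K0 * \<epsilon>" using KbK0[OF r] e by (intro mult_right_mono) auto
      finally show "\<bar>(Me R u \<epsilon> *\<^sub>v (pt r - x0)) $ i - Fv u r $ i\<bar> \<le> K0 * \<epsilon>" .
    qed auto
    also have "\<dots> = Cj j * K0 * \<epsilon>" unfolding Cj_def by (simp add: sum_distrib_right mult.assoc)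
    finally show ?thesis .
  qed
  have claim_a: "m j $ i = 0" if j: "j \<in> J" and i: "i < d" and o: "d1 \<le> i \<or> d1 \<le> j" for i j
  proof (rule sym, rule eq_eps[of _ _ "Cj j * K0"])
    fix \<epsilon> :: real assume e: "0 < \<epsilon>"
    have jd: "j < d" using j unfolding J_def by auto
    have "Me R u \<epsilon> $$ (i, j) = 0"
      unfolding Me_def using blk_index[OF skew_carrier[OF Me_skew[OF PF(1) u e]] i jd] o by auto
    then show "\<bar>0 - m j $ i\<bar> \<le> Cj j * K0 * \<epsilon>" using claimA[OF j i e] by simp
  qed
  have claim_b: "m j $ i = - (m i $ j)" if i: "i \<in> J" "i < d1" and j: "j \<in> J" "j < d1" for i j
  proof (rule eq_eps[of _ _ "Cj j * K0 + Cj i * K0"])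
    fix \<epsilon> :: real assume e: "0 < \<epsilon>"
    have id: "i < d" and jd: "j < d" using i j unfolding J_def by auto
    define X where "X = fitS R u \<epsilon> (eid d)"
    have X: "X \<in> skew d1" unfolding X_def using Me_skew[OF PF(1) u e] .
    have Mij: "Me R u \<epsilon> $$ (i, j) = X $$ (i, j)" and Mji: "Me R u \<epsilon> $$ (j, i) = X $$ (j, i)"
      unfolding Me_def X_def[symmetric] using blk_index[OF skew_carrier[OF X]] id jd i j by auto
    have sk: "X $$ (j, i) = - X $$ (i, j)" using skew_entry[OF X i(2) j(2)] .
    have "\<bar>m j $ i - - (m i $ j)\<bar> \<le> \<bar>Me R u \<epsilon> $$ (i, j) - m j $ i\<bar> + \<bar>Me R u \<epsilon> $$ (j, i) - m i $ j\<bar>"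
      using Mij Mji sk by linarith
    also have "\<dots> \<le> Cj j * K0 * \<epsilon> + Cj i * K0 * \<epsilon>" using claimA[OF j(1) id e] claimA[OF i(1) jd e] by simp
    finally show "\<bar>m j $ i - - (m i $ j)\<bar> \<le> (Cj j * K0 + Cj i * K0) * \<epsilon>" by (simp add: algebra_simps)
  qed
  define k where "k = d - daff"
  define S0 where "S0 = mat d1 d1 (\<lambda>(i, j). if k \<le> j then m j $ i else if k \<le> i then - (m i $ j) else 0)"
  have S0c: "S0 \<in> carrier_mat d1 d1" unfolding S0_def by simp
  have dd: "d1 \<le> d" unfolding d_def by simp
  have S0s: "S0 \<in> skew d1"
    unfolding skew_def
  proof (intro CollectI conjI S0c eq_matI)
    fix i j assume i: "i < dim_row (- S0)" and j: "j < dim_col (- S0)"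
    then have i1: "i < d1" and j1: "j < d1" using S0c by auto
    have iJ: "k \<le> i \<Longrightarrow> i \<in> J" and jJ: "k \<le> j \<Longrightarrow> j \<in> J" using i1 j1 dd unfolding J_def k_def by auto
    show "S0\<^sup>T $$ (i, j) = (- S0) $$ (i, j)"
      using i1 j1 claim_b[OF iJ _ jJ] unfolding S0_def by auto
  qed (use S0c in auto)
  have blkS0: "blk S0 $$ (i, l) = m l $ i" if i: "i < d" and l: "l \<in> J" for i l
  proof -
    have ld: "l < d" and lk: "k \<le> l" using l unfolding J_def k_def by auto
    show ?thesis
    proof (cases "i < d1 \<and> l < d1")
      case True then show ?thesis using blk_index[OF S0c i ld] lk unfolding S0_def by simp
    next
      case False then show ?thesis using blk_index[OF S0c i ld] claim_a[OF l i] by auto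
    qed
  qed
  have "Fv u h = blk S0 *\<^sub>v (pt h - x0)" if h: "h \<in> G" for h
  proof -
    define z where "z = pt h - x0"
    have z: "z \<in> DD" unfolding z_def using pt_diff_DD[OF h eid_G] by simp
    have zc: "z \<in> carrier_vec d" using DD_carrier[OF z] .
    have Bc: "blk S0 \<in> carrier_mat d d" using blk_carrier[OF S0c] .
    show ?thesis unfolding z_def[symmetric]
    proof (rule eq_vecI)
      fix i assume "i < dim_vec (blk S0 *\<^sub>v z)"
      then have i: "i < d" using Bc by simp
      show "Fv u h $ i = (blk S0 *\<^sub>v z) $ i"
      proof (rule eq_eps[of _ _ "Kb h + (\<Sum>l\<in>J. Cj l * K0 * \<bar>z $ l\<bar>)"])
        fix \<epsilon> :: real assume e: "0 < \<epsilon>"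
        have Mc: "Me R u \<epsilon> \<in> carrier_mat d d" using Me_carrier[OF PF(1) u e] .
        have vc: "Fv u h - Me R u \<epsilon> *\<^sub>v z \<in> carrier_vec d" using Fv_carrier[OF u h] Mc zc by auto
        have t1: "\<bar>Fv u h $ i - (Me R u \<epsilon> *\<^sub>v z) $ i\<bar> \<le> Kb h * \<epsilon>"
        proof -
          have "\<bar>Fv u h $ i - (Me R u \<epsilon> *\<^sub>v z) $ i\<bar> = \<bar>(Fv u h - Me R u \<epsilon> *\<^sub>v z) $ i\<bar>"
            using Fv_carrier[OF u h] Mc zc i by simp
          also have "\<dots> \<le> nv (Fv u h - Me R u \<epsilon> *\<^sub>v z)"
          proof (rule nv_coord)
            show "i < dim_vec (Fv u h - Me R u \<epsilon> *\<^sub>v z)" using vc i by (simp only: carrier_vec_def mem_Collect_eq)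
          qed
          also have "\<dots> \<le> Kb h * \<epsilon>" using Kb[OF h] e unfolding z_def by auto
          finally show ?thesis .
        qed
        have t2: "\<bar>(Me R u \<epsilon> *\<^sub>v z) $ i - (blk S0 *\<^sub>v z) $ i\<bar> \<le> (\<Sum>l\<in>J. Cj l * K0 * \<bar>z $ l\<bar>) * \<epsilon>"
        proof -
          have "(Me R u \<epsilon> *\<^sub>v z) $ i - (blk S0 *\<^sub>v z) $ i = (\<Sum>l\<in>J. (Me R u \<epsilon> $$ (i, l) - m l $ i) * z $ l)"
            unfolding mv_DD[OF Mc z i] mv_DD[OF Bc z i] J_def[symmetric]
            by (simp add: sum_subtractf left_diff_distrib blkS0[OF i])
          then have "\<bar>(Me R u \<epsilon> *\<^sub>v z) $ i - (blk S0 *\<^sub>v z) $ i\<bar> \<le> (\<Sum>l\<in>J. \<bar>Me R u \<epsilon> $$ (i, l) - m l $ i\<bar> * \<bar>z $ l\<bar>)"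
            by (simp add: order_trans[OF sum_abs] abs_mult)
          also have "\<dots> \<le> (\<Sum>l\<in>J. Cj l * K0 * \<epsilon> * \<bar>z $ l\<bar>)"
            using claimA[OF _ i e] by (intro sum_mono mult_right_mono) auto
          also have "\<dots> = (\<Sum>l\<in>J. Cj l * K0 * \<bar>z $ l\<bar>) * \<epsilon>" unfolding sum_distrib_right by (simp add: ac_simps)
          finally show ?thesis .
        qed
        show "\<bar>Fv u h $ i - (blk S0 *\<^sub>v z) $ i\<bar> \<le> (Kb h + (\<Sum>l\<in>J. Cj l * K0 * \<bar>z $ l\<bar>)) * \<epsilon>"
          using t1 t2 by (simp add: algebra_simps)
      qed
    qed (use Bc Fv_carrier[OF u h] in auto)
  qed
  then show ?thesis using S0s by blast
qed

end



context setting begin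

lemma S_Euc: "s \<in> S \<Longrightarrow> s \<in> Euc d2"
  using S_sg unfolding space_group_def subgroup_E_def by auto

lemma conj_blk:
  assumes g: "g \<in> G" and X: "X \<in> skew d1"
  shows "\<exists>Y\<in>skew d1. (rot g)\<^sup>T * blk X * rot g = blk Y"
proof -
  obtain A s where A: "A \<in> orth_mat d1" and s: "s \<in> S" and gA: "g = osum d1 d2 A s"
    using G_form g by blast
  have Ac: "A \<in> carrier_mat d1 d1" using orth_D(1)[OF A] .
  have Bc: "fst s \<in> carrier_mat d2 d2" using Euc_D(1)[OF S_Euc[OF s]] .
  have Xc: "X \<in> carrier_mat d1 d1" using skew_carrier[OF X] .
  define B where "B = fst s"
  have Bc': "B \<in> carrier_mat d2 d2" unfolding B_def using Bc .
  have rg: "rot g = four_block_mat A (0\<^sub>m d1 d2) (0\<^sub>m d2 d1) B" unfolding gA osum_def rot_def B_def by simp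
  have rgT: "(rot g)\<^sup>T = four_block_mat A\<^sup>T (0\<^sub>m d1 d2) (0\<^sub>m d2 d1) B\<^sup>T"
    unfolding rg using transpose_four_block_mat[OF Ac zero_carrier_mat zero_carrier_mat Bc'] Ac Bc' by simp
  have m1: "(rot g)\<^sup>T * blk X = four_block_mat (A\<^sup>T * X) (0\<^sub>m d1 d2) (0\<^sub>m d2 d1) (0\<^sub>m d2 d2)"
    unfolding rgT blk_def using Ac Bc' Xc
    by (subst mult_four_block_mat[of _ d1 d1 _ d2 _ d2 _ _ d1 _ d2]) auto
  have m2: "(rot g)\<^sup>T * blk X * rot g = four_block_mat (A\<^sup>T * X * A) (0\<^sub>m d1 d2) (0\<^sub>m d2 d1) (0\<^sub>m d2 d2)"
    unfolding m1 unfolding rg using Ac Bc' Xc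
    by (subst mult_four_block_mat[of _ d1 d1 _ d2 _ d2 _ _ d1 _ d2]) auto
  have Ys: "A\<^sup>T * X * A \<in> skew d1"
  proof -
    have c: "A\<^sup>T * X * A \<in> carrier_mat d1 d1" using Ac Xc by auto
    have t: "X\<^sup>T = - X" using X unfolding skew_def by auto
    have At: "A\<^sup>T \<in> carrier_mat d1 d1" and Xt: "X\<^sup>T \<in> carrier_mat d1 d1" using Ac Xc by auto
    have XA: "X * A \<in> carrier_mat d1 d1" using Ac Xc by auto
    have "(A\<^sup>T * X * A)\<^sup>T = (A\<^sup>T * (X * A))\<^sup>T" using At Xc Ac by (simp add: assoc_mult_mat[of _ d1 d1 _ d1 _ d1])
    also have "\<dots> = (X * A)\<^sup>T * A\<^sup>T\<^sup>T" by (rule transpose_mult[OF At XA])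
    also have "(X * A)\<^sup>T = A\<^sup>T * X\<^sup>T" by (rule transpose_mult[OF Xc Ac])
    also have "A\<^sup>T * X\<^sup>T * A\<^sup>T\<^sup>T = A\<^sup>T * (X\<^sup>T * A)" using At Xt Ac by (simp add: assoc_mult_mat[of _ d1 d1 _ d1 _ d1])
    finally have "(A\<^sup>T * X * A)\<^sup>T = A\<^sup>T * (X\<^sup>T * A)" .
    also have "\<dots> = - (A\<^sup>T * X * A)" unfolding t using Ac Xc by (simp add: assoc_mult_mat[of _ d1 d1 _ d1 _ d1])
    finally show ?thesis unfolding skew_def using c by auto
  qed
  show ?thesis using m2 Ys unfolding blk_def by blast
qed

lemma Uiso_Erd0:
  assumes uU: "u \<in> U_iso00 d1 d2 x0 G" and R: "okR R" and g: "g \<in> G"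
  shows "Erd R u g = 0"
proof -
  obtain v1 v2 where uv: "u = (\<lambda>x. v1 x + v2 x)" and v1: "v1 \<in> U_trans (d1 + d2) G" and v2: "v2 \<in> U_rot00 d1 d2 x0 G"
    using uU unfolding U_iso00_def by blast
  from v1 obtain a where a: "a \<in> carrier_vec d" and v1c: "\<forall>x\<in>G. v1 x \<in> carrier_vec d"
    and v1a: "\<forall>x\<in>G. rot x *\<^sub>v v1 x = a" unfolding U_trans_def d_def by auto
  from v2 obtain X where X: "X \<in> skew d1" and v2c: "\<forall>x\<in>G. v2 x \<in> carrier_vec d"
    and v2X: "\<forall>x\<in>G. rot x *\<^sub>v v2 x = blk X *\<^sub>v (pt x - x0)"
    unfolding U_rot00_def blk_def pt_def d_def by auto
  have Xc: "blk X \<in> carrier_mat d d" using blk_skew_carrier[OF X] .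
  have uc: "x \<in> G \<Longrightarrow> u x \<in> carrier_vec d" for x unfolding uv using v1c v2c by auto
  have P: "rot x *\<^sub>v u x = a + blk X *\<^sub>v (pt x - x0)" if x: "x \<in> G" for x
    unfolding uv using v1a v2X x rotG(1)[OF x] v1c v2c by (simp add: mult_add_distrib_mat_vec)
  obtain Y where Y: "Y \<in> skew d1" and YX: "(rot g)\<^sup>T * blk X * rot g = blk Y" using conj_blk[OF g X] by blast
  define w where "w = disc_grad R u g"
  have "w \<in> U_rot00 d1 d2 x0 R"
    unfolding U_rot00_def
  proof (intro CollectI conjI bexI[OF _ Y] ballI)
    fix k assume k: "k \<in> R"
    have kG: "k \<in> G" using k R unfolding okR_def by auto
    have gk: "emult g k \<in> G" using g kG by simp
    have ugk: "u (emult g k) \<in> carrier_vec d" using uc[OF gk] .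
    have ug: "u g \<in> carrier_vec d" using uc[OF g] .
    note rg = rotG[OF g] and rk = rotG[OF kG]
    show "w k \<in> carrier_vec (d1 + d2)" unfolding w_def disc_grad_def d_def[symmetric] using ugk ug rk by auto
  next
    fix k assume k: "k \<in> R"
    have kG: "k \<in> G" using k R unfolding okR_def by auto
    have gk: "emult g k \<in> G" using g kG by simp
    have ugk: "u (emult g k) \<in> carrier_vec d" using uc[OF gk] .
    have ug: "u g \<in> carrier_vec d" using uc[OF g] .
    note rg = rotG[OF g] and rk = rotG[OF kG]
    have "rot k *\<^sub>v w k = rot k *\<^sub>v u (emult g k) - rot k *\<^sub>v ((rot k)\<^sup>T *\<^sub>v u g)"
      unfolding w_def disc_grad_def using rk ugk ug by (intro mult_minus_distrib_mat_vec) auto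
    also have "rot k *\<^sub>v ((rot k)\<^sup>T *\<^sub>v u g) = u g" using rk ug by (intro mat_cancel) auto
    also have "rot k *\<^sub>v u (emult g k) = (rot g)\<^sup>T *\<^sub>v (rot (emult g k) *\<^sub>v u (emult g k))"
    proof -
      have "rot (emult g k) *\<^sub>v u (emult g k) = rot g *\<^sub>v (rot k *\<^sub>v u (emult g k))"
        unfolding rot_emult using rg rk ugk by simp
      then show ?thesis using rg rk ugk by (simp add: mat_cancel)
    qed
    also have "u g = (rot g)\<^sup>T *\<^sub>v (rot g *\<^sub>v u g)" using rg ug by (simp add: mat_cancel)
    also have "(rot g)\<^sup>T *\<^sub>v (rot (emult g k) *\<^sub>v u (emult g k)) - (rot g)\<^sup>T *\<^sub>v (rot g *\<^sub>v u g)
        = (rot g)\<^sup>T *\<^sub>v (rot (emult g k) *\<^sub>v u (emult g k) - rot g *\<^sub>v u g)"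
      using rg rotG(1)[OF gk] ugk ug by (intro mult_minus_distrib_mat_vec[symmetric]) auto
    also have "rot (emult g k) *\<^sub>v u (emult g k) - rot g *\<^sub>v u g = blk X *\<^sub>v (pt (emult g k) - pt g)"
    proof -
      have "rot (emult g k) *\<^sub>v u (emult g k) - rot g *\<^sub>v u g
          = (a + blk X *\<^sub>v (pt (emult g k) - x0)) - (a + blk X *\<^sub>v (pt g - x0))"
        unfolding P[OF gk] P[OF g] ..
      also have "\<dots> = blk X *\<^sub>v (pt (emult g k) - x0) - blk X *\<^sub>v (pt g - x0)"
        using a Xc pt_carrier[OF gk] pt_carrier[OF g] x0_dim by (intro eq_vecI) auto
      also have "\<dots> = blk X *\<^sub>v (pt (emult g k) - x0 - (pt g - x0))"
        using Xc pt_carrier[OF gk] pt_carrier[OF g] x0_dim by (intro mult_minus_distrib_mat_vec[symmetric]) auto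
      also have "pt (emult g k) - x0 - (pt g - x0) = pt (emult g k) - pt g"
        using pt_carrier[OF gk] pt_carrier[OF g] x0_dim by (intro eq_vecI) auto
      finally show ?thesis .
    qed
    also have "pt (emult g k) - pt g = rot g *\<^sub>v (pt k - x0)" using pt_emult[OF g kG] .
    also have "(rot g)\<^sup>T *\<^sub>v (blk X *\<^sub>v (rot g *\<^sub>v (pt k - x0))) = ((rot g)\<^sup>T * blk X * rot g) *\<^sub>v (pt k - x0)"
      using rg Xc pt_carrier[OF kG] x0_dim by (intro mv3[symmetric]) auto
    finally show "rot k *\<^sub>v w k = four_block_mat Y (0\<^sub>m d1 d2) (0\<^sub>m d2 d1) (0\<^sub>m d2 d2) *\<^sub>v (eact k x0 - x0)"
      unfolding YX unfolding blk_def pt_def .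
  qed
  then have "Erd R u g \<le> sqrt (\<Sum>h\<in>R. sqn (w h - w h))" unfolding Erd_def w_def[symmetric] by (rule rdist_le)
  also have "\<dots> = 0"
  proof -
    have "sqn (w h - w h) = 0" for h by (simp add: sqn_def scalar_prod_def)
    then show ?thesis by simp
  qed
  finally show ?thesis using Erd_nonneg[OF R, of u g] by simp
qed

end


context setting begin
lemma vsolve: assumes "(a::real vec) \<in> carrier_vec n" "c \<in> carrier_vec n" "c - a = b" shows "a + b = c"
  unfolding assms(3)[symmetric] using assms(1,2) by (intro eq_vecI) auto

lemma in_Uiso:
  assumes u: "uG u" and S0: "S0 \<in> skew d1" and F: "\<And>h. h \<in> G \<Longrightarrow> Fv u h = blk S0 *\<^sub>v (pt h - x0)"
  shows "u \<in> U_iso00 d1 d2 x0 G"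
proof -
  have Bc: "blk S0 \<in> carrier_mat d d" using blk_skew_carrier[OF S0] .
  have ue: "u (eid d) \<in> carrier_vec d" using u unfolding uG_def by auto
  define v1 where "v1 x = (if x \<in> G then (rot x)\<^sup>T *\<^sub>v u (eid d) else u x)" for x
  define v2 where "v2 x = (if x \<in> G then (rot x)\<^sup>T *\<^sub>v (blk S0 *\<^sub>v (pt x - x0)) else 0\<^sub>v (dim_vec (u x)))" for x
  have pc: "blk S0 *\<^sub>v (pt x - x0) \<in> carrier_vec d" if x: "x \<in> G" for x
  proof -
    have "pt x - x0 \<in> carrier_vec d" using pt_carrier[OF x] x0_dim by simp
    then show ?thesis using Bc by simp
  qed
  have v1G: "v1 x = (rot x)\<^sup>T *\<^sub>v u (eid d)" if "x \<in> G" for x unfolding v1_def using that by simp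
  have v2G: "v2 x = (rot x)\<^sup>T *\<^sub>v (blk S0 *\<^sub>v (pt x - x0))" if "x \<in> G" for x unfolding v2_def using that by simp
  have uv: "u = (\<lambda>x. v1 x + v2 x)"
  proof (rule ext)
    fix x show "u x = v1 x + v2 x"
    proof (cases "x \<in> G")
      case True
      note rx = rotG[OF True]
      have ux: "u x \<in> carrier_vec d" using u True unfolding uG_def by auto
      have rux: "rot x *\<^sub>v u x \<in> carrier_vec d" using rx(1) ux by simp
      have "v1 x + v2 x = (rot x)\<^sup>T *\<^sub>v (u (eid d) + blk S0 *\<^sub>v (pt x - x0))"
        unfolding v1G[OF True] v2G[OF True] by (rule mult_add_distrib_mat_vec[symmetric, OF rx(4) ue pc[OF True]])
      also have "u (eid d) + blk S0 *\<^sub>v (pt x - x0) = rot x *\<^sub>v u x"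
        by (rule vsolve[OF ue rux]) (use F[OF True] in \<open>simp add: Fv_def\<close>)
      also have "(rot x)\<^sup>T *\<^sub>v (rot x *\<^sub>v u x) = u x" by (rule mat_cancel[OF rx(4) rx(1) rx(3) ux])
      finally show ?thesis by simp
    next
      case False
      have e1: "v1 x = u x" unfolding v1_def by (rule if_not_P[OF False])
      have e2: "v2 x = 0\<^sub>v (dim_vec (u x))" unfolding v2_def by (rule if_not_P[OF False])
      have "u x \<in> carrier_vec (dim_vec (u x))" unfolding carrier_vec_def by (rule CollectI) (rule refl)
      then show ?thesis unfolding e1 e2 by (rule right_zero_vec[symmetric])
    qed
  qed
  have v1U: "v1 \<in> U_trans (d1 + d2) G"
    unfolding U_trans_def d_def[symmetric]
  proof (intro CollectI conjI ballI bexI[OF _ ue])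
    fix x assume x: "x \<in> G"
    show "v1 x \<in> carrier_vec d" unfolding v1G[OF x] using rotG(4)[OF x] ue by simp
  next
    fix x assume x: "x \<in> G"
    show "rot x *\<^sub>v v1 x = u (eid d)" unfolding v1G[OF x] by (rule mat_cancel[OF rotG(1,4,2)[OF x] ue])
  qed
  have v2U: "v2 \<in> U_rot00 d1 d2 x0 G"
    unfolding U_rot00_def d_def[symmetric]
  proof (intro CollectI conjI ballI bexI[OF _ S0])
    fix x assume x: "x \<in> G"
    show "v2 x \<in> carrier_vec d" unfolding v2G[OF x] using rotG(4)[OF x] pc[OF x] by simp
  next
    fix x assume x: "x \<in> G"
    have "rot x *\<^sub>v v2 x = blk S0 *\<^sub>v (pt x - x0)"
      unfolding v2G[OF x] by (rule mat_cancel[OF rotG(1,4,2)[OF x] pc[OF x]])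
    then show "rot x *\<^sub>v v2 x = four_block_mat S0 (0\<^sub>m d1 d2) (0\<^sub>m d2 d1) (0\<^sub>m d2 d2) *\<^sub>v (eact x x0 - x0)"
      unfolding blk_def pt_def .
  qed
  show ?thesis unfolding U_iso00_def uv mem_Collect_eq
    by (intro exI[of _ v1] exI[of _ v2] conjI refl v1U v2U)
qed

end



lemma avg_le:
  assumes K: "0 \<le> (K::real)" and s: "(\<Sum>g\<in>CC. (f g)\<^sup>2) \<le> K * (\<Sum>g\<in>CC. (h g)\<^sup>2)"
  shows "sqrt (1 / real (card CC) * (\<Sum>g\<in>CC. (f g)\<^sup>2)) \<le> sqrt K * sqrt (1 / real (card CC) * (\<Sum>g\<in>CC. (h g)\<^sup>2))"
proof -
  have "1 / real (card CC) * (\<Sum>g\<in>CC. (f g)\<^sup>2) \<le> 1 / real (card CC) * (K * (\<Sum>g\<in>CC. (h g)\<^sup>2))"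
    using s by (intro mult_left_mono) auto
  also have "\<dots> = K * (1 / real (card CC) * (\<Sum>g\<in>CC. (h g)\<^sup>2))" by simp
  finally have "sqrt (1 / real (card CC) * (\<Sum>g\<in>CC. (f g)\<^sup>2)) \<le> sqrt (K * (1 / real (card CC) * (\<Sum>g\<in>CC. (h g)\<^sup>2)))"
    by (rule real_sqrt_le_mono)
  also have "\<dots> = sqrt K * sqrt (1 / real (card CC) * (\<Sum>g\<in>CC. (h g)\<^sup>2))" by (rule real_sqrt_mult)
  finally show ?thesis .
qed

lemma pw_sq:
  assumes "\<And>g. g \<in> CC \<Longrightarrow> 0 \<le> (f g::real) \<and> f g \<le> b * h g"
  shows "(\<Sum>g\<in>CC. (f g)\<^sup>2) \<le> b\<^sup>2 * (\<Sum>g\<in>CC. (h g)\<^sup>2)"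
proof -
  have "(\<Sum>g\<in>CC. (f g)\<^sup>2) \<le> (\<Sum>g\<in>CC. (b * h g)\<^sup>2)"
    using assms by (intro sum_mono power_mono) auto
  also have "\<dots> = b\<^sup>2 * (\<Sum>g\<in>CC. (h g)\<^sup>2)" by (simp add: power_mult_distrib sum_distrib_left)
  finally show ?thesis .
qed

lemma sixteen:
  fixes n1 n2 s1 s2 A B :: real
  assumes nn: "0 \<le> n1" "0 \<le> n2" "0 \<le> s1" "0 \<le> s2" and AB: "1 \<le> A" "1 \<le> B"
    and ns: "n1 \<le> A * s1" "n1 \<le> A * s2" "n2 \<le> A * s1" "n2 \<le> A * s2"
    and sn: "s1 \<le> B * n1" "s2 \<le> B * n2"
  shows "\<forall>p\<in>{n1, n2, s1, s2}. \<forall>q\<in>{n1, n2, s1, s2}. p \<le> A * B * B * q"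
proof -
  have BB: "1 \<le> B * B" using AB by (metis less_1_mult less_eq_real_def mult_cancel_right1)
  have m: "x \<le> A * B * B * y" if "0 \<le> y" "x \<le> A * y" for x y
  proof -
    have "A * y * 1 \<le> A * y * (B * B)" using that AB BB by (intro mult_left_mono) auto
    then show ?thesis using that by (simp add: ac_simps)
  qed
  have m2: "x \<le> A * B * B * y" if "0 \<le> y" "x \<le> A * B * y" for x y
  proof -
    have "A * B * y * 1 \<le> A * B * y * B" using that AB by (intro mult_left_mono) auto
    then show ?thesis using that by (simp add: ac_simps)
  qed
  have ns2: "A * s1 \<le> A * B * n1" "A * s2 \<le> A * B * n2"
    using sn AB by (auto simp: mult.assoc intro: mult_left_mono)
  have sn2: "B * n1 \<le> A * B * s1" "B * n1 \<le> A * B * s2" "B * n2 \<le> A * B * s1" "B * n2 \<le> A * B * s2"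
    using ns AB by (auto simp: mult.commute mult.left_commute intro: mult_left_mono)
  have AB0: "0 \<le> A * B" using AB by simp
  have sn3: "A * B * s1 \<le> A * B * B * n1" "A * B * s2 \<le> A * B * B * n2"
    using mult_left_mono[OF sn(1) AB0] mult_left_mono[OF sn(2) AB0] by (simp_all add: ac_simps)
  have f1: "n1 \<le> A * B * B * s1" "n1 \<le> A * B * B * s2" "n2 \<le> A * B * B * s1" "n2 \<le> A * B * B * s2"
    using m[OF nn(3) ns(1)] m[OF nn(4) ns(2)] m[OF nn(3) ns(3)] m[OF nn(4) ns(4)] by auto
  have f2: "n1 \<le> A * B * B * n1" "n1 \<le> A * B * B * n2" "n2 \<le> A * B * B * n1" "n2 \<le> A * B * B * n2"
    using m2[OF nn(1)] m2[OF nn(2)] ns ns2 by (meson order_trans)+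
  have f3: "s1 \<le> A * B * B * s1" "s1 \<le> A * B * B * s2" "s2 \<le> A * B * B * s1" "s2 \<le> A * B * B * s2"
    using m2[OF nn(3)] m2[OF nn(4)] sn sn2 by (meson order_trans)+
  have f4: "s1 \<le> A * B * B * n1" "s1 \<le> A * B * B * n2" "s2 \<le> A * B * B * n1" "s2 \<le> A * B * B * n2"
    using sn sn2 sn3 by (meson order_trans)+
  show ?thesis using f1 f2 f3 f4 by auto
qed

context setting begin

lemma norm_eq: "norm00 d1 d2 x0 R CC u = sqrt (1 / real (card CC) * (\<Sum>g\<in>CC. (Nrd R u g)\<^sup>2))"
  unfolding norm00_def Nrd_def ..
lemma semi_eq: "semi00 d1 d2 x0 R CC u = sqrt (1 / real (card CC) * (\<Sum>g\<in>CC. (Erd R u g)\<^sup>2))"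
  unfolding semi00_def Erd_def ..

end



context setting begin

lemma final_loc:
  assumes R1_p2: "property2 d G x0 R1" and R2_p2: "property2 d G x0 R2"
  shows "(\<exists>c>0. \<forall>u N. (\<forall>g\<in>G. u g \<in> carrier_vec d) \<and> N \<ge> 1 \<and> m0 dvd N
              \<and> periodic G (Tpow d T N) u \<longrightarrow>
            (\<forall>p\<in>set [norm00 d1 d2 x0 R1 (C N), norm00 d1 d2 x0 R2 (C N),
                      semi00 d1 d2 x0 R1 (C N), semi00 d1 d2 x0 R2 (C N)].
             \<forall>q\<in>set [norm00 d1 d2 x0 R1 (C N), norm00 d1 d2 x0 R2 (C N),
                      semi00 d1 d2 x0 R1 (C N), semi00 d1 d2 x0 R2 (C N)].
               p u \<le> c * q u))
       \<and> (\<forall>u N. (\<forall>g\<in>G. u g \<in> carrier_vec d) \<and> N \<ge> 1 \<and> m0 dvd N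
              \<and> periodic G (Tpow d T N) u \<longrightarrow>
            (\<forall>p\<in>set [norm00 d1 d2 x0 R1 (C N), norm00 d1 d2 x0 R2 (C N),
                      semi00 d1 d2 x0 R1 (C N), semi00 d1 d2 x0 R2 (C N)].
               p u = 0 \<longleftrightarrow> u \<in> U_iso00 d1 d2 x0 G))"
proof -
  note F1 = P2_facts[OF R1_p2] and F2 = P2_facts[OF R2_p2]
  obtain K11 where K11: "0 \<le> K11" "\<And>u N. uG u \<Longrightarrow> goodN N \<Longrightarrow> periodic G (TN N) u \<Longrightarrow>
      (\<Sum>g\<in>C N. (Nrd R1 u g)\<^sup>2) \<le> K11 * (\<Sum>g\<in>C N. (Erd R1 u g)\<^sup>2)"
    using main_ineq[OF R1_p2 F1(1)] by blast
  obtain K12 where K12: "0 \<le> K12" "\<And>u N. uG u \<Longrightarrow> goodN N \<Longrightarrow> periodic G (TN N) u \<Longrightarrow>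
      (\<Sum>g\<in>C N. (Nrd R1 u g)\<^sup>2) \<le> K12 * (\<Sum>g\<in>C N. (Erd R2 u g)\<^sup>2)"
    using main_ineq[OF R2_p2 F1(1)] by blast
  obtain K21 where K21: "0 \<le> K21" "\<And>u N. uG u \<Longrightarrow> goodN N \<Longrightarrow> periodic G (TN N) u \<Longrightarrow>
      (\<Sum>g\<in>C N. (Nrd R2 u g)\<^sup>2) \<le> K21 * (\<Sum>g\<in>C N. (Erd R1 u g)\<^sup>2)"
    using main_ineq[OF R1_p2 F2(1)] by blast
  obtain K22 where K22: "0 \<le> K22" "\<And>u N. uG u \<Longrightarrow> goodN N \<Longrightarrow> periodic G (TN N) u \<Longrightarrow>
      (\<Sum>g\<in>C N. (Nrd R2 u g)\<^sup>2) \<le> K22 * (\<Sum>g\<in>C N. (Erd R2 u g)\<^sup>2)"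
    using main_ineq[OF R2_p2 F2(1)] by blast
  define A where "A = 1 + sqrt K11 + sqrt K12 + sqrt K21 + sqrt K22"
  define b1 where "b1 = sqrt (2 * (1 + real (card R1)))"
  define b2 where "b2 = sqrt (2 * (1 + real (card R2)))"
  define B where "B = 1 + b1 + b2"
  have sq0: "0 \<le> sqrt K11" "0 \<le> sqrt K12" "0 \<le> sqrt K21" "0 \<le> sqrt K22" "0 \<le> b1" "0 \<le> b2"
    using K11 K12 K21 K22 unfolding b1_def b2_def by auto
  have A1: "1 \<le> A" unfolding A_def using sq0 by simp
  have B1: "1 \<le> B" unfolding B_def using sq0 by simp
  have Aj: "sqrt K11 \<le> A" "sqrt K12 \<le> A" "sqrt K21 \<le> A" "sqrt K22 \<le> A" unfolding A_def using sq0 by auto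
  have Bj: "b1 \<le> B" "b2 \<le> B" unfolding B_def using sq0 by auto
  have avg0: "0 \<le> sqrt (1 / real (card CC) * (\<Sum>g\<in>CC. (f g)\<^sup>2))" for CC and f :: "euc \<Rightarrow> real"
    by (simp add: sum_nonneg)
  have ns: "X \<le> M * Y" if "X \<le> sqrt K * Y" "sqrt K \<le> M" "0 \<le> Y" for X Y K M
    using that mult_right_mono[OF that(2) that(3)] by linarith
  have bnd: "\<forall>p\<in>{norm00 d1 d2 x0 R1 (C N) u, norm00 d1 d2 x0 R2 (C N) u, semi00 d1 d2 x0 R1 (C N) u, semi00 d1 d2 x0 R2 (C N) u}.
      \<forall>q\<in>{norm00 d1 d2 x0 R1 (C N) u, norm00 d1 d2 x0 R2 (C N) u, semi00 d1 d2 x0 R1 (C N) u, semi00 d1 d2 x0 R2 (C N) u}.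
      p \<le> A * B * B * q"
    if u: "uG u" and N: "goodN N" and per: "periodic G (TN N) u" for u N
  proof (rule sixteen[OF _ _ _ _ A1 B1])
    have CG: "C N \<subseteq> G" using CN(1)[OF N] .
    show "0 \<le> norm00 d1 d2 x0 R1 (C N) u" "0 \<le> norm00 d1 d2 x0 R2 (C N) u"
      "0 \<le> semi00 d1 d2 x0 R1 (C N) u" "0 \<le> semi00 d1 d2 x0 R2 (C N) u"
      unfolding norm_eq semi_eq by (rule avg0)+
    show "norm00 d1 d2 x0 R1 (C N) u \<le> A * semi00 d1 d2 x0 R1 (C N) u"
      unfolding norm_eq semi_eq by (rule ns[OF avg_le[OF K11(1) K11(2)[OF u N per]] Aj(1) avg0])
    show "norm00 d1 d2 x0 R1 (C N) u \<le> A * semi00 d1 d2 x0 R2 (C N) u"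
      unfolding norm_eq semi_eq by (rule ns[OF avg_le[OF K12(1) K12(2)[OF u N per]] Aj(2) avg0])
    show "norm00 d1 d2 x0 R2 (C N) u \<le> A * semi00 d1 d2 x0 R1 (C N) u"
      unfolding norm_eq semi_eq by (rule ns[OF avg_le[OF K21(1) K21(2)[OF u N per]] Aj(3) avg0])
    show "norm00 d1 d2 x0 R2 (C N) u \<le> A * semi00 d1 d2 x0 R2 (C N) u"
      unfolding norm_eq semi_eq by (rule ns[OF avg_le[OF K22(1) K22(2)[OF u N per]] Aj(4) avg0])
    have s1: "(\<Sum>g\<in>C N. (Erd R1 u g)\<^sup>2) \<le> b1\<^sup>2 * (\<Sum>g\<in>C N. (Nrd R1 u g)\<^sup>2)"
      by (rule pw_sq) (use Erd_nonneg[OF F1(1)] Erd_le_Nrd[OF F1(1) F1(2) u] CG in \<open>auto simp: b1_def\<close>)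
    have s2: "(\<Sum>g\<in>C N. (Erd R2 u g)\<^sup>2) \<le> b2\<^sup>2 * (\<Sum>g\<in>C N. (Nrd R2 u g)\<^sup>2)"
      by (rule pw_sq) (use Erd_nonneg[OF F2(1)] Erd_le_Nrd[OF F2(1) F2(2) u] CG in \<open>auto simp: b2_def\<close>)
    have b1s: "sqrt (b1\<^sup>2) \<le> B" using Bj sq0 by simp
    have b2s: "sqrt (b2\<^sup>2) \<le> B" using Bj sq0 by simp
    show "semi00 d1 d2 x0 R1 (C N) u \<le> B * norm00 d1 d2 x0 R1 (C N) u"
      unfolding norm_eq semi_eq by (rule ns[OF avg_le[OF zero_le_power2 s1] b1s avg0])
    show "semi00 d1 d2 x0 R2 (C N) u \<le> B * norm00 d1 d2 x0 R2 (C N) u"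
      unfolding norm_eq semi_eq by (rule ns[OF avg_le[OF zero_le_power2 s2] b2s avg0])
  qed
  have hyp: "uG u" "goodN N" "periodic G (TN N) u"
    if "(\<forall>g\<in>G. u g \<in> carrier_vec d) \<and> N \<ge> 1 \<and> m0 dvd N \<and> periodic G (Tpow d T N) u" for u N
    using that unfolding uG_def goodN_def TN_def by auto
  have part1: "\<forall>u N. (\<forall>g\<in>G. u g \<in> carrier_vec d) \<and> N \<ge> 1 \<and> m0 dvd N
              \<and> periodic G (Tpow d T N) u \<longrightarrow>
            (\<forall>p\<in>set [norm00 d1 d2 x0 R1 (C N), norm00 d1 d2 x0 R2 (C N),
                      semi00 d1 d2 x0 R1 (C N), semi00 d1 d2 x0 R2 (C N)].
             \<forall>q\<in>set [norm00 d1 d2 x0 R1 (C N), norm00 d1 d2 x0 R2 (C N),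
                      semi00 d1 d2 x0 R1 (C N), semi00 d1 d2 x0 R2 (C N)].
               p u \<le> A * B * B * q u)"
  proof (intro allI impI)
    fix u N assume h: "(\<forall>g\<in>G. u g \<in> carrier_vec d) \<and> N \<ge> 1 \<and> m0 dvd N \<and> periodic G (Tpow d T N) u"
    show "\<forall>p\<in>set [norm00 d1 d2 x0 R1 (C N), norm00 d1 d2 x0 R2 (C N),
                      semi00 d1 d2 x0 R1 (C N), semi00 d1 d2 x0 R2 (C N)].
             \<forall>q\<in>set [norm00 d1 d2 x0 R1 (C N), norm00 d1 d2 x0 R2 (C N),
                      semi00 d1 d2 x0 R1 (C N), semi00 d1 d2 x0 R2 (C N)].
               p u \<le> A * B * B * q u"
    proof (intro ballI)
      fix p q assume p: "p \<in> set [norm00 d1 d2 x0 R1 (C N), norm00 d1 d2 x0 R2 (C N),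
                      semi00 d1 d2 x0 R1 (C N), semi00 d1 d2 x0 R2 (C N)]"
        and q: "q \<in> set [norm00 d1 d2 x0 R1 (C N), norm00 d1 d2 x0 R2 (C N),
                      semi00 d1 d2 x0 R1 (C N), semi00 d1 d2 x0 R2 (C N)]"
      have pu: "p u \<in> {norm00 d1 d2 x0 R1 (C N) u, norm00 d1 d2 x0 R2 (C N) u, semi00 d1 d2 x0 R1 (C N) u, semi00 d1 d2 x0 R2 (C N) u}"
        using p by (simp only: set_simps insert_iff empty_iff) blast
      have qu: "q u \<in> {norm00 d1 d2 x0 R1 (C N) u, norm00 d1 d2 x0 R2 (C N) u, semi00 d1 d2 x0 R1 (C N) u, semi00 d1 d2 x0 R2 (C N) u}"
        using q by (simp only: set_simps insert_iff empty_iff) blast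
      show "p u \<le> A * B * B * q u" using bnd[OF hyp[OF h]] pu qu by blast
    qed
  qed
  have ABB: "0 < A * B * B" using A1 B1 by simp
  have part2: "\<forall>u N. (\<forall>g\<in>G. u g \<in> carrier_vec d) \<and> N \<ge> 1 \<and> m0 dvd N
              \<and> periodic G (Tpow d T N) u \<longrightarrow>
            (\<forall>p\<in>set [norm00 d1 d2 x0 R1 (C N), norm00 d1 d2 x0 R2 (C N),
                      semi00 d1 d2 x0 R1 (C N), semi00 d1 d2 x0 R2 (C N)].
               p u = 0 \<longleftrightarrow> u \<in> U_iso00 d1 d2 x0 G)"
  proof (intro allI impI ballI)
    fix u N p assume h: "(\<forall>g\<in>G. u g \<in> carrier_vec d) \<and> N \<ge> 1 \<and> m0 dvd N \<and> periodic G (Tpow d T N) u"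
      and p: "p \<in> set [norm00 d1 d2 x0 R1 (C N), norm00 d1 d2 x0 R2 (C N),
                      semi00 d1 d2 x0 R1 (C N), semi00 d1 d2 x0 R2 (C N)]"
    note H = hyp[OF h]
    note B16 = bnd[OF H]
    have CG: "C N \<subseteq> G" "finite (C N)" using CN(1,2)[OF H(2)] by auto
    obtain c0 where c0: "c0 \<in> C N" using CN(3)[OF H(2) eid_G] by blast
    have cpos: "0 < real (card (C N))" using CG(2) c0 card_gt_0_iff by fastforce
    have pu0: "p u \<in> {norm00 d1 d2 x0 R1 (C N) u, norm00 d1 d2 x0 R2 (C N) u, semi00 d1 d2 x0 R1 (C N) u, semi00 d1 d2 x0 R2 (C N) u}"
      using p by (simp only: set_simps insert_iff empty_iff) blast
    have nn: "0 \<le> norm00 d1 d2 x0 R1 (C N) u" "0 \<le> norm00 d1 d2 x0 R2 (C N) u"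
      "0 \<le> semi00 d1 d2 x0 R1 (C N) u" "0 \<le> semi00 d1 d2 x0 R2 (C N) u"
      unfolding norm_eq semi_eq by (rule avg0)+
    have nonneg: "0 \<le> p u" using pu0 nn by (simp only: insert_iff empty_iff) (elim disjE; simp)
    show "p u = 0 \<longleftrightarrow> u \<in> U_iso00 d1 d2 x0 G"
    proof
      assume pz: "p u = 0"
      have "semi00 d1 d2 x0 R2 (C N) u \<le> A * B * B * p u" using B16 pu0 by blast
      then have "semi00 d1 d2 x0 R2 (C N) u \<le> 0" using pz by simp
      then have "sqrt (1 / real (card (C N)) * (\<Sum>g\<in>C N. (Erd R2 u g)\<^sup>2)) = 0"
        using avg0[of "C N" "Erd R2 u"] unfolding semi_eq by linarith
      then have "(\<Sum>g\<in>C N. (Erd R2 u g)\<^sup>2) = 0" using cpos by simp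
      then have z: "\<And>c. c \<in> C N \<Longrightarrow> Erd R2 u c = 0"
        using CG(2) by (simp add: sum_nonneg_eq_0_iff)
      have zG: "Erd R2 u g = 0" if g: "g \<in> G" for g
        by (rule sum_rep[OF H(2) _ z g]) (use Erd_per[OF H(2) H(3) F2(1)] in auto)
      obtain S0 where S0: "S0 \<in> skew d1" and F: "\<forall>h\<in>G. Fv u h = blk S0 *\<^sub>v (pt h - x0)"
        using exact_fit[OF R2_p2 H(1) zG] by blast
      show "u \<in> U_iso00 d1 d2 x0 G" using in_Uiso[OF H(1) S0] F by blast
    next
      assume uU: "u \<in> U_iso00 d1 d2 x0 G"
      have "\<forall>g\<in>C N. Erd R1 u g = 0" using Uiso_Erd0[OF uU F1(1)] CG(1) by blast
      then have z1: "semi00 d1 d2 x0 R1 (C N) u = 0" unfolding semi_eq by simp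
      have pu: "p u \<in> {norm00 d1 d2 x0 R1 (C N) u, norm00 d1 d2 x0 R2 (C N) u, semi00 d1 d2 x0 R1 (C N) u, semi00 d1 d2 x0 R2 (C N) u}"
        using p by (simp only: set_simps insert_iff empty_iff) blast
      have "p u \<le> A * B * B * semi00 d1 d2 x0 R1 (C N) u" using B16 pu by blast
      then show "p u = 0" using z1 nonneg by simp
    qed
  qed
  show ?thesis using part1 part2 ABB by blast
qed

end

theorem theorem4p3:
  fixes d1 d2 d daff m0 :: nat and S G T :: "euc set" and x0 :: "real vec"
    and C :: "nat \<Rightarrow> euc set" and R1 R2 :: "euc set"
  assumes d_def: "d = d1 + d2"
    and S_sg: "space_group d2 S"
    and G_sub: "subgroup_E d G" and G_disc: "discrete_E d G"
    and G_form: "G \<subseteq> {osum d1 d2 A s | A s. A \<in> orth_mat d1 \<and> s \<in> S}"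
    and G_onto: "proj2 d1 d2 ` G = S"
    and T_sub: "T \<subseteq> G"
    and T_bij: "bij_betw (proj2 d1 d2) T (transl_sub d2 S)"
    and m0_pos: "m0 \<ge> 1"
    and M_char: "\<forall>N\<ge>1. normal_sub_E d (Tpow d T N) G \<longleftrightarrow> m0 dvd N"
    and C_rep: "\<forall>N\<ge>1. m0 dvd N \<longrightarrow> C N \<subseteq> G \<and> finite (C N)
                  \<and> (\<forall>g\<in>G. \<exists>!c\<in>C N. \<exists>t\<in>Tpow d T N. g = emult c t)"
    and x0_dim: "x0 \<in> carrier_vec d"
    and x0_inj: "inj_on (\<lambda>g. eact g x0) G"
    and daff_le: "daff \<le> d"
    and aff_coord: "aff_hull d ((\<lambda>g. eact g x0) ` G) = {x \<in> carrier_vec d. \<forall>i < d - daff. x $ i = 0}"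
    and triv_act: "\<forall>g\<in>G. \<forall>x\<in>carrier_vec d. (\<forall>i. d - daff \<le> i \<and> i < d \<longrightarrow> x $ i = 0)
                      \<longrightarrow> rot g *\<^sub>v x = x"
    and R1_p2: "property2 d G x0 R1" and R2_p2: "property2 d G x0 R2"
  shows "(\<exists>c>0. \<forall>u N. (\<forall>g\<in>G. u g \<in> carrier_vec d) \<and> N \<ge> 1 \<and> m0 dvd N
              \<and> periodic G (Tpow d T N) u \<longrightarrow>
            (\<forall>p\<in>set [norm00 d1 d2 x0 R1 (C N), norm00 d1 d2 x0 R2 (C N),
                      semi00 d1 d2 x0 R1 (C N), semi00 d1 d2 x0 R2 (C N)].
             \<forall>q\<in>set [norm00 d1 d2 x0 R1 (C N), norm00 d1 d2 x0 R2 (C N),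
                      semi00 d1 d2 x0 R1 (C N), semi00 d1 d2 x0 R2 (C N)].
               p u \<le> c * q u))
       \<and> (\<forall>u N. (\<forall>g\<in>G. u g \<in> carrier_vec d) \<and> N \<ge> 1 \<and> m0 dvd N
              \<and> periodic G (Tpow d T N) u \<longrightarrow>
            (\<forall>p\<in>set [norm00 d1 d2 x0 R1 (C N), norm00 d1 d2 x0 R2 (C N),
                      semi00 d1 d2 x0 R1 (C N), semi00 d1 d2 x0 R2 (C N)].
               p u = 0 \<longleftrightarrow> u \<in> U_iso00 d1 d2 x0 G))"
proof -
  interpret setting d1 d2 d daff m0 S G T x0 C
    using d_def S_sg G_sub G_form M_char C_rep x0_dim x0_inj daff_le aff_coord triv_act
    by (rule setting.intro)
  show ?thesis using final_loc[OF R1_p2 R2_p2] .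
qed

end
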